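(* Let $T$ be a lifted graph, $F\colon T\to T$ a continuous sun-like map of degree 1, ${\cal P}$ a basic partition of $F$ and ${\cal G}$ its covering graph. Then $\mathrm{Rot}_{X^\infty}(F)=\mathrm{Rot}_{\Gamma({\cal G})}$. If $\gamma$ is a loop in ${\cal G}$, then $\rho(\widetilde\gamma)\in\mathbb Q$ and there exists a periodic (mod 1) point $x\in X^\infty$ with $\rho_F(x)=\rho(\widetilde\gamma)$. If $\bar\alpha\in{\cal J}$, then $\rho(\bar\alpha)\in\mathbb Q$ and there exists a periodic (mod 1) point $x\in X^\infty$ with $\rho_F(x)=\rho(\bar\alpha)$.
   Context: A lifted graph is a connected topological space $T$ with a homeomorphism $h\colon\mathbb R\to h(\mathbb R)\subset T$ and a homeomorphism $\tau\colon T\to T$ such that $\tau(h(x))=h(x+1)$, the closure of each connected component of $T\setminus h(\mathbb R)$ is a topological finite graph meeting $h(\mathbb R)$ in exactly one point, and only finitely many such components have closure meeting $h([0,1])$. Identify $h(\mathbb R)$ with $\mathbb R$, write $x+m:=\tau^m(x)$; $r_{\mathbb R}\colon T\to\mathbb R$ is the identity on $\mathbb R$ and maps a component $C$ of $T\setminus\mathbb R$ to the point $\overline C\cap\mathbb R$. $F$ has degree 1 if $F(x+1)=F(x)+1$; $x$ is periodic (mod 1) if $F^n(x)\in x+\mathbb Z$ for some $n\ge1$; $\rho_F(x):=\lim_n\frac{r_{\mathbb R}(F^n(x))-r_{\mathbb R}(x)}{n}$ when it exists; $\mathrm{Rot}_E(F)$ is the set of existing $\rho_F(x)$, $x\in E$.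 Let $T_{\mathbb R}:=\overline{\bigcup_{n\ge0}F^n(\mathbb R)}$, $X:=\overline{T\setminus T_{\mathbb R}}\cap r_{\mathbb R}^{-1}([0,1))$. $F$ is sun-like if $(T\setminus T_{\mathbb R})\cap r_{\mathbb R}^{-1}([0,1))$ consists of finitely many intervals with pairwise disjoint closures $X^i$, $i\in\Lambda$ (branches), each a compact interval meeting $T_{\mathbb R}$ in one endpoint $\min X^i$ (fixing the order of $X^i$). $X^\infty:=\{x\in X:F^n(x)\in X+\mathbb Z\ \forall n\ge0\}$. A basic partition is a finite family ${\cal P}=\{X^i_j\}$ of pairwise disjoint nonempty compact intervals $X^i_1<\dots<X^i_{N_i}$ in $X^i$, with $\ell(X^i_j)\in\Lambda$, $p(X^i_j)\in\mathbb Z$, such that $F(X^i_j)\subset(X^{\ell(X^i_j)}+p(X^i_j))\cup\mathrm{Int}(T_{\mathbb R})$, $F(\min X^i_j)=\min X^{\ell(X^i_j)}+p(X^i_j)$, and $F(X\setminus\bigcup X^i_j)\cap(X+\mathbb Z)=\emptyset$. For $A_0,\dots,A_n\in{\cal P}$, $\langle A_0\dots A_n\rangle:=F^n(\{x\in T: F^i(x)\in A_i+\mathbb Z,\ 0\le i\le n\})\cap X$. $A_0\dots A_n\sim B_0\dots B_m$ iff for some $k\le\min(n,m)$, $A_{n-i}=B_{m-i}$ ($0\le i\le k$) and $\langle A_0\dots A_{n-k}\rangle=A_{n-k}=B_{m-k}=\langle B_0\dots B_{m-k}\rangle$. The covering graph ${\cal G}$: vertices are classes $A_0\dots A_n/\!\sim$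 with $\langle A_0\dots A_n\rangle\ne\emptyset$; arrow $\alpha\to\beta$ iff $\alpha=A_0\dots A_n/\!\sim$, $\beta=A_0\dots A_nA_{n+1}/\!\sim$ for some $A_i\in{\cal P}$. Vertices $A/\!\sim$, $A\in{\cal P}$, are identified with ${\cal P}$. Weight $W(\alpha\beta):=p(A)$, $A\in{\cal P}$ the unique element containing $\langle\alpha\rangle$; weight of a finite path is the sum of the weights of its arrows; loops are paths with equal endpoints; $\widetilde\gamma$ is the infinite repetition of a loop $\gamma$; $\rho(\bar\alpha):=\lim_n\frac1nW(\alpha_0\dots\alpha_n)$ for an infinite path $\bar\alpha=(\alpha_n)$; $\mathrm{Rot}_{\Gamma({\cal G})}$ is the set of existing $\rho(\bar\alpha)$ over infinite paths. ${\cal J}$ is the set of infinite paths $(\alpha_n)_{n\ge0}$ in ${\cal G}$ for which there exists $N\ge0$ such that for all $n\ge N$ there is no arrow $\alpha_n\to B$ with $B\in{\cal P}$. *)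

theory Defs
  imports "HOL-Analysis.Analysis"
begin

definition topological_finite_graph :: "'a topology \<Rightarrow> bool" where
  "topological_finite_graph G \<longleftrightarrow>
     compact_space G \<and> connected_space G \<and> metrizable_space G \<and>
     (\<exists>V E. finite V \<and> V \<subseteq> topspace G \<and> finite E \<and> pairwise disjnt E \<and>
        \<Union>E = topspace G - V \<and>
        (\<forall>e\<in>E. openin G e \<and>
           (subtopology G e) homeomorphic_space (top_of_set {0<..<(1::real)}) \<and>
           G frontier_of e \<subseteq> V))"

definition lifted_graph :: "'a topology \<Rightarrow> (real \<Rightarrow> 'a) \<Rightarrow> ('a \<Rightarrow> 'a) \<Rightarrow> bool" where
  "lifted_graph T h \<tau> \<longleftrightarrow>
     connected_space T \<and>
     range h \<subseteq> topspace T \<and>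
     homeomorphic_map euclideanreal (subtopology T (range h)) h \<and>
     homeomorphic_map T T \<tau> \<and>
     (\<forall>x. \<tau> (h x) = h (x + 1)) \<and>
     (\<forall>C\<in>connected_components_of (subtopology T (topspace T - range h)).
        topological_finite_graph (subtopology T (T closure_of C)) \<and>
        (\<exists>!y. y \<in> T closure_of C \<inter> range h)) \<and>
     finite {C\<in>connected_components_of (subtopology T (topspace T - range h)).
               T closure_of C \<inter> h ` {0..1} \<noteq> {}}"

text \<open>Integer translations x + m := tau^m(x).\<close>
definition zsh :: "'a topology \<Rightarrow> ('a \<Rightarrow> 'a) \<Rightarrow> int \<Rightarrow> 'a \<Rightarrow> 'a" where
  "zsh T \<tau> m = (if 0 \<le> m then \<tau> ^^ nat m else (inv_into (topspace T) \<tau>) ^^ nat (- m))"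

definition zsh_set :: "'a topology \<Rightarrow> ('a \<Rightarrow> 'a) \<Rightarrow> 'a set \<Rightarrow> 'a set" where
  "zsh_set T \<tau> S = {zsh T \<tau> m x | m x. x \<in> S}"

text \<open>The retraction r_R : T \<rightarrow> R (with range h identified with R).\<close>
definition rR :: "'a topology \<Rightarrow> (real \<Rightarrow> 'a) \<Rightarrow> 'a \<Rightarrow> real" where
  "rR T h y = (if y \<in> range h then inv h y
     else (THE x. h x \<in> T closure_of
              (connected_component_of_set (subtopology T (topspace T - range h)) y)))"

definition degree_one :: "'a topology \<Rightarrow> ('a \<Rightarrow> 'a) \<Rightarrow> ('a \<Rightarrow> 'a) \<Rightarrow> bool" where
  "degree_one T \<tau> F \<longleftrightarrow> (\<forall>x\<in>topspace T. F (\<tau> x) = \<tau> (F x))"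

definition periodic_mod1 :: "'a topology \<Rightarrow> ('a \<Rightarrow> 'a) \<Rightarrow> ('a \<Rightarrow> 'a) \<Rightarrow> 'a \<Rightarrow> bool" where
  "periodic_mod1 T \<tau> F x \<longleftrightarrow> (\<exists>n\<ge>1. \<exists>m::int. (F ^^ n) x = zsh T \<tau> m x)"

definition has_rot :: "'a topology \<Rightarrow> (real \<Rightarrow> 'a) \<Rightarrow> ('a \<Rightarrow> 'a) \<Rightarrow> 'a \<Rightarrow> real \<Rightarrow> bool" where
  "has_rot T h F x r \<longleftrightarrow> (\<lambda>n. (rR T h ((F ^^ n) x) - rR T h x) / real n) \<longlonglongrightarrow> r"

definition Rot :: "'a topology \<Rightarrow> (real \<Rightarrow> 'a) \<Rightarrow> ('a \<Rightarrow> 'a) \<Rightarrow> 'a set \<Rightarrow> real set" where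
  "Rot T h F E = {r. \<exists>x\<in>E. has_rot T h F x r}"

definition TR :: "'a topology \<Rightarrow> (real \<Rightarrow> 'a) \<Rightarrow> ('a \<Rightarrow> 'a) \<Rightarrow> 'a set" where
  "TR T h F = T closure_of (\<Union>n. (F ^^ n) ` range h)"

definition Xset :: "'a topology \<Rightarrow> (real \<Rightarrow> 'a) \<Rightarrow> ('a \<Rightarrow> 'a) \<Rightarrow> 'a set" where
  "Xset T h F = T closure_of (topspace T - TR T h F) \<inter> {y. rR T h y \<in> {0..<1}}"

text \<open>Sun-like, with the branches given as X^i = phi i ` [0,1], where phi i is a
homeomorphism of [0,1] onto X^i with phi i 0 = min X^i the point of X^i in T_R; the order on X^i
is the one transported by phi i.\<close>
definition sun_like :: "'a topology \<Rightarrow> (real \<Rightarrow> 'a) \<Rightarrow> ('a \<Rightarrow> 'a) \<Rightarrow> 'i set \<Rightarrow> ('i \<Rightarrow> real \<Rightarrow> 'a) \<Rightarrow> bool" where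
  "sun_like T h F \<Lambda> \<phi> \<longleftrightarrow>
     finite \<Lambda> \<and>
     (\<forall>i\<in>\<Lambda>. homeomorphic_map (top_of_set {0..1}) (subtopology T (\<phi> i ` {0..1})) (\<phi> i) \<and>
              \<phi> i ` {0..1} \<inter> TR T h F = {\<phi> i 0} \<and>
              T closure_of (\<phi> i ` {0<..1}) = \<phi> i ` {0..1}) \<and>
     (\<forall>i\<in>\<Lambda>. \<forall>j\<in>\<Lambda>. i \<noteq> j \<longrightarrow> disjnt (\<phi> i ` {0..1}) (\<phi> j ` {0..1})) \<and>
     (topspace T - TR T h F) \<inter> {y. rR T h y \<in> {0..<1}} = (\<Union>i\<in>\<Lambda>. \<phi> i ` {0<..1})"

definition Xinf :: "'a topology \<Rightarrow> (real \<Rightarrow> 'a) \<Rightarrow> ('a \<Rightarrow> 'a) \<Rightarrow> ('a \<Rightarrow> 'a) \<Rightarrow> 'a set" where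
  "Xinf T h \<tau> F = {x\<in>Xset T h F. \<forall>n. (F ^^ n) x \<in> zsh_set T \<tau> (Xset T h F)}"

definition pmin :: "'i set \<Rightarrow> ('i \<Rightarrow> real \<Rightarrow> 'a) \<Rightarrow> 'a set \<Rightarrow> 'a" where
  "pmin \<Lambda> \<phi> A = (THE y. \<exists>i\<in>\<Lambda>. \<exists>a b. 0 \<le> a \<and> a \<le> b \<and> b \<le> 1 \<and> A = \<phi> i ` {a..b} \<and> y = \<phi> i a)"

definition basic_partition :: "'a topology \<Rightarrow> (real \<Rightarrow> 'a) \<Rightarrow> ('a \<Rightarrow> 'a) \<Rightarrow> ('a \<Rightarrow> 'a) \<Rightarrow>
     'i set \<Rightarrow> ('i \<Rightarrow> real \<Rightarrow> 'a) \<Rightarrow> 'a set set \<Rightarrow> ('a set \<Rightarrow> 'i) \<Rightarrow> ('a set \<Rightarrow> int) \<Rightarrow> bool" where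
  "basic_partition T h \<tau> F \<Lambda> \<phi> P lab p \<longleftrightarrow>
     finite P \<and> pairwise disjnt P \<and>
     (\<forall>A\<in>P. \<exists>i\<in>\<Lambda>. \<exists>a b. 0 \<le> a \<and> a \<le> b \<and> b \<le> 1 \<and> A = \<phi> i ` {a..b}) \<and>
     (\<forall>A\<in>P. lab A \<in> \<Lambda> \<and>
        F ` A \<subseteq> (zsh T \<tau> (p A) ` \<phi> (lab A) ` {0..1}) \<union> T interior_of TR T h F \<and>
        F (pmin \<Lambda> \<phi> A) = zsh T \<tau> (p A) (\<phi> (lab A) 0)) \<and>
     F ` (Xset T h F - \<Union>P) \<inter> zsh_set T \<tau> (Xset T h F) = {}"

definition words :: "'a set set \<Rightarrow> 'a set list set" where
  "words P = {w. w \<noteq> [] \<and> set w \<subseteq> P}"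

definition cyl :: "'a topology \<Rightarrow> (real \<Rightarrow> 'a) \<Rightarrow> ('a \<Rightarrow> 'a) \<Rightarrow> ('a \<Rightarrow> 'a) \<Rightarrow> 'a set list \<Rightarrow> 'a set" where
  "cyl T h \<tau> F w = (F ^^ (length w - 1)) `
       {x\<in>topspace T. \<forall>i<length w. (F ^^ i) x \<in> zsh_set T \<tau> (w ! i)} \<inter> Xset T h F"

text \<open>The defining relation of \<sim> (n = length w - 1, m = length v - 1).\<close>
definition simrel :: "'a topology \<Rightarrow> (real \<Rightarrow> 'a) \<Rightarrow> ('a \<Rightarrow> 'a) \<Rightarrow> ('a \<Rightarrow> 'a) \<Rightarrow> 'a set list \<Rightarrow> 'a set list \<Rightarrow> bool" where
  "simrel T h \<tau> F w v \<longleftrightarrow>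
     (\<exists>k\<le>min (length w - 1) (length v - 1).
        (\<forall>i\<le>k. w ! (length w - 1 - i) = v ! (length v - 1 - i)) \<and>
        cyl T h \<tau> F (take (length w - k) w) = w ! (length w - 1 - k) \<and>
        w ! (length w - 1 - k) = v ! (length v - 1 - k) \<and>
        cyl T h \<tau> F (take (length v - k) v) = v ! (length v - 1 - k))"

definition simeq :: "'a topology \<Rightarrow> (real \<Rightarrow> 'a) \<Rightarrow> ('a \<Rightarrow> 'a) \<Rightarrow> ('a \<Rightarrow> 'a) \<Rightarrow> 'a set set \<Rightarrow> 'a set list \<Rightarrow> 'a set list \<Rightarrow> bool" where
  "simeq T h \<tau> F P = equivclp (\<lambda>w v. w \<in> words P \<and> v \<in> words P \<and> simrel T h \<tau> F w v)"

definition cls :: "'a topology \<Rightarrow> (real \<Rightarrow> 'a) \<Rightarrow> ('a \<Rightarrow> 'a) \<Rightarrow> ('a \<Rightarrow> 'a) \<Rightarrow> 'a set set \<Rightarrow> 'a set list \<Rightarrow> 'a set list set" where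
  "cls T h \<tau> F P w = {v\<in>words P. simeq T h \<tau> F P w v}"

definition vertices :: "'a topology \<Rightarrow> (real \<Rightarrow> 'a) \<Rightarrow> ('a \<Rightarrow> 'a) \<Rightarrow> ('a \<Rightarrow> 'a) \<Rightarrow> 'a set set \<Rightarrow> 'a set list set set" where
  "vertices T h \<tau> F P = {cls T h \<tau> F P w | w. w \<in> words P \<and> cyl T h \<tau> F w \<noteq> {}}"

definition arrow :: "'a topology \<Rightarrow> (real \<Rightarrow> 'a) \<Rightarrow> ('a \<Rightarrow> 'a) \<Rightarrow> ('a \<Rightarrow> 'a) \<Rightarrow> 'a set set \<Rightarrow> 'a set list set \<Rightarrow> 'a set list set \<Rightarrow> bool" where
  "arrow T h \<tau> F P \<alpha> \<beta> \<longleftrightarrow> \<alpha> \<in> vertices T h \<tau> F P \<and> \<beta> \<in> vertices T h \<tau> F P \<and>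
     (\<exists>w A. w \<in> words P \<and> A \<in> P \<and> \<alpha> = cls T h \<tau> F P w \<and> \<beta> = cls T h \<tau> F P (w @ [A]))"

definition vcyl :: "'a topology \<Rightarrow> (real \<Rightarrow> 'a) \<Rightarrow> ('a \<Rightarrow> 'a) \<Rightarrow> ('a \<Rightarrow> 'a) \<Rightarrow> 'a set list set \<Rightarrow> 'a set" where
  "vcyl T h \<tau> F \<alpha> = cyl T h \<tau> F (SOME w. w \<in> \<alpha>)"

text \<open>W(alpha beta) = p(A), A in P the element containing <alpha>.\<close>
definition vweight :: "'a topology \<Rightarrow> (real \<Rightarrow> 'a) \<Rightarrow> ('a \<Rightarrow> 'a) \<Rightarrow> ('a \<Rightarrow> 'a) \<Rightarrow> 'a set set \<Rightarrow> ('a set \<Rightarrow> int) \<Rightarrow> 'a set list set \<Rightarrow> int" where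
  "vweight T h \<tau> F P p \<alpha> = p (THE A. A \<in> P \<and> vcyl T h \<tau> F \<alpha> \<subseteq> A)"

definition inf_path :: "'a topology \<Rightarrow> (real \<Rightarrow> 'a) \<Rightarrow> ('a \<Rightarrow> 'a) \<Rightarrow> ('a \<Rightarrow> 'a) \<Rightarrow> 'a set set \<Rightarrow> (nat \<Rightarrow> 'a set list set) \<Rightarrow> bool" where
  "inf_path T h \<tau> F P \<alpha> \<longleftrightarrow> (\<forall>n. arrow T h \<tau> F P (\<alpha> n) (\<alpha> (Suc n)))"

definition path_rot :: "'a topology \<Rightarrow> (real \<Rightarrow> 'a) \<Rightarrow> ('a \<Rightarrow> 'a) \<Rightarrow> ('a \<Rightarrow> 'a) \<Rightarrow> 'a set set \<Rightarrow> ('a set \<Rightarrow> int) \<Rightarrow> (nat \<Rightarrow> 'a set list set) \<Rightarrow> real \<Rightarrow> bool" where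
  "path_rot T h \<tau> F P p \<alpha> r \<longleftrightarrow>
     (\<lambda>n. real_of_int (\<Sum>k<n. vweight T h \<tau> F P p (\<alpha> k)) / real n) \<longlonglongrightarrow> r"

definition Rot_graph :: "'a topology \<Rightarrow> (real \<Rightarrow> 'a) \<Rightarrow> ('a \<Rightarrow> 'a) \<Rightarrow> ('a \<Rightarrow> 'a) \<Rightarrow> 'a set set \<Rightarrow> ('a set \<Rightarrow> int) \<Rightarrow> real set" where
  "Rot_graph T h \<tau> F P p = {r. \<exists>\<alpha>. inf_path T h \<tau> F P \<alpha> \<and> path_rot T h \<tau> F P p \<alpha> r}"

definition is_loop :: "'a topology \<Rightarrow> (real \<Rightarrow> 'a) \<Rightarrow> ('a \<Rightarrow> 'a) \<Rightarrow> ('a \<Rightarrow> 'a) \<Rightarrow> 'a set set \<Rightarrow> 'a set list set list \<Rightarrow> bool" where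
  "is_loop T h \<tau> F P \<gamma> \<longleftrightarrow> length \<gamma> \<ge> 2 \<and> hd \<gamma> = last \<gamma> \<and>
     (\<forall>i. Suc i < length \<gamma> \<longrightarrow> arrow T h \<tau> F P (\<gamma> ! i) (\<gamma> ! Suc i))"

definition loop_rep :: "'b list \<Rightarrow> nat \<Rightarrow> 'b" where
  "loop_rep \<gamma> n = \<gamma> ! (n mod (length \<gamma> - 1))"

definition Jpaths :: "'a topology \<Rightarrow> (real \<Rightarrow> 'a) \<Rightarrow> ('a \<Rightarrow> 'a) \<Rightarrow> ('a \<Rightarrow> 'a) \<Rightarrow> 'a set set \<Rightarrow> (nat \<Rightarrow> 'a set list set) set" where
  "Jpaths T h \<tau> F P = {\<alpha>. inf_path T h \<tau> F P \<alpha> \<and>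
     (\<exists>N. \<forall>n\<ge>N. \<not> (\<exists>B\<in>P. arrow T h \<tau> F P (\<alpha> n) (cls T h \<tau> F P [B])))}"

end

theory Submission
  imports Defs
begin

locale covsetup =
  fixes a b :: real and f :: "real \<Rightarrow> real" and g :: "real \<Rightarrow> 'b" and \<psi> :: "real \<Rightarrow> 'b" and Br :: "'b set"
  assumes ab: "a \<le> b"
    and fc: "continuous_on {a..b} f"
    and frange: "\<And>t. t \<in> {a..b} \<Longrightarrow> 0 \<le> f t \<and> f t \<le> 1"
    and gB: "\<And>t. t \<in> {a..b} \<Longrightarrow> g t \<in> Br \<Longrightarrow> g t = \<psi> (f t)"
    and gnB: "\<And>t. t \<in> {a..b} \<Longrightarrow> g t \<notin> Br \<Longrightarrow> f t = 0"
    and clB: "closed {t \<in> {a..b}. g t \<in> Br}"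
    and psiB: "\<And>d. d \<in> {0..1} \<Longrightarrow> \<psi> d \<in> Br"
    and psiinj: "inj_on \<psi> {0..1}"
begin

lemma g_eq_psi: "t \<in> {a..b} \<Longrightarrow> d \<in> {0..1} \<Longrightarrow> g t = \<psi> d \<longleftrightarrow> g t \<in> Br \<and> f t = d"
proof
  assume t: "t \<in> {a..b}" and d: "d \<in> {0..1}" and e: "g t = \<psi> d"
  then have gb: "g t \<in> Br" using psiB by simp
  then have "\<psi> (f t) = \<psi> d" using gB t e by simp
  then have "f t = d" using psiinj frange[OF t] d by (auto simp: inj_on_def)
  then show "g t \<in> Br \<and> f t = d" using gb by simp
next
  assume "t \<in> {a..b}" "d \<in> {0..1}" "g t \<in> Br \<and> f t = d"
  then show "g t = \<psi> d" using gB by auto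
qed

lemma pos_B: "t \<in> {a..b} \<Longrightarrow> 0 < f t \<Longrightarrow> g t \<in> Br \<and> g t = \<psi> (f t)"
  using gB gnB by force

lemma fcont_sub: "{c..d} \<subseteq> {a..b} \<Longrightarrow> continuous_on {c..d} f"
  using fc continuous_on_subset by blast

lemma closed_f0: "closed {t \<in> {c..d}. f t = y}" if "{c..d} \<subseteq> {a..b}"
  using continuous_closed_preimage_constant[OF fcont_sub[OF that]] by simp

lemma closed_psi: assumes "{c..d} \<subseteq> {a..b}" "y \<in> {0..1}"
  shows "closed {t \<in> {c..d}. g t = \<psi> y}"
proof -
  have "{t \<in> {c..d}. g t = \<psi> y} = {t \<in> {a..b}. g t \<in> Br} \<inter> {t \<in> {c..d}. f t = y}"
    using g_eq_psi assms by blast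
  then show ?thesis using clB closed_f0[OF assms(1)] by (simp add: closed_Int)
qed

lemma rootlim_r:
  assumes "a \<le> u" "u < v" "v \<le> b" "\<And>t. t \<in> {u<..v} \<Longrightarrow> g t \<in> Br"
  shows "g u \<in> Br"
proof -
  have "{u<..v} \<subseteq> {t \<in> {a..b}. g t \<in> Br}" using assms by auto
  then have "closure {u<..v} \<subseteq> {t \<in> {a..b}. g t \<in> Br}" using closure_minimal clB by blast
  moreover have "u \<in> closure {u<..v}" using assms by simp
  ultimately show ?thesis by blast
qed

lemma rootlim_l:
  assumes "a \<le> u" "u < v" "v \<le> b" "\<And>t. t \<in> {u..<v} \<Longrightarrow> g t \<in> Br"
  shows "g v \<in> Br"
proof -
  have "{u..<v} \<subseteq> {t \<in> {a..b}. g t \<in> Br}" using assms by auto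
  then have "closure {u..<v} \<subseteq> {t \<in> {a..b}. g t \<in> Br}" using closure_minimal clB by blast
  moreover have "v \<in> closure {u..<v}" using assms by simp
  ultimately show ?thesis by blast
qed

lemma cover_up:
  assumes t: "a \<le> t1" "t1 \<le> t2" "t2 \<le> b" and d: "0 \<le> d1" "d1 \<le> d2" "d2 \<le> 1"
    and e1: "g t1 = \<psi> d1" and e2: "g t2 = \<psi> d2"
  shows "\<exists>s1 s2. t1 \<le> s1 \<and> s1 \<le> s2 \<and> s2 \<le> t2 \<and> g ` {s1..s2} = \<psi> ` {d1..d2}"
proof (cases "d1 = d2")
  case True
  then show ?thesis using t e1 by (intro exI[of _ t1]) auto
next
  case False
  then have dd: "d1 < d2" using d by simp
  have sub: "{t1..t2} \<subseteq> {a..b}" using t by auto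
  define Z2 where "Z2 = {t \<in> {t1..t2}. g t = \<psi> d2}"
  have Z2c: "closed Z2" unfolding Z2_def using closed_psi[OF sub] d by simp
  have Z2n: "t2 \<in> Z2" using e2 t by (simp add: Z2_def)
  define s2 where "s2 = Inf Z2"
  have s2Z: "s2 \<in> Z2" unfolding s2_def
    by (rule closed_contains_Inf) (use Z2n Z2c in \<open>auto simp: Z2_def bdd_below_def\<close>)
  have s2lo: "\<And>t. t \<in> Z2 \<Longrightarrow> s2 \<le> t" unfolding s2_def
    by (rule cInf_lower) (auto simp: Z2_def bdd_below_def)
  have ps: "\<psi> d1 \<noteq> \<psi> d2"
  proof
    assume "\<psi> d1 = \<psi> d2"
    moreover have "d1 \<in> {0..1}" "d2 \<in> {0..1}" using d by auto
    ultimately have "d1 = d2" using inj_onD[OF psiinj] by blast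
    then show False using dd by simp
  qed
  have s2r: "t1 < s2" "s2 \<le> t2" "g s2 = \<psi> d2" using s2Z e1 ps by (auto simp: Z2_def order.order_iff_strict)
  define Z1 where "Z1 = {t \<in> {t1..s2}. g t = \<psi> d1}"
  have sub1: "{t1..s2} \<subseteq> {a..b}" using t s2r by auto
  have Z1c: "closed Z1" unfolding Z1_def using closed_psi[OF sub1] d by simp
  have Z1n: "t1 \<in> Z1" using e1 s2r by (simp add: Z1_def)
  define s1 where "s1 = Sup Z1"
  have s1Z: "s1 \<in> Z1" unfolding s1_def
    by (rule closed_contains_Sup) (use Z1n Z1c in \<open>auto simp: Z1_def bdd_above_def\<close>)
  have s1up: "\<And>t. t \<in> Z1 \<Longrightarrow> t \<le> s1" unfolding s1_def
    by (rule cSup_upper) (auto simp: Z1_def bdd_above_def)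
  have s1r: "t1 \<le> s1" "s1 < s2" "g s1 = \<psi> d1" using s1Z s2r ps by (auto simp: Z1_def order.order_iff_strict)
  have inab: "\<And>t. t \<in> {s1..s2} \<Longrightarrow> t \<in> {a..b}" using s1r s2r t by auto
  have A1: "\<And>t. t \<in> {s1<..<s2} \<Longrightarrow> g t \<noteq> \<psi> d1"
  proof
    fix t assume "t \<in> {s1<..<s2}" "g t = \<psi> d1"
    then have "t \<in> Z1" using s1r by (simp add: Z1_def)
    then show False using s1up \<open>t \<in> {s1<..<s2}\<close> by force
  qed
  have A2: "\<And>t. t \<in> {s1<..<s2} \<Longrightarrow> g t \<noteq> \<psi> d2"
  proof
    fix t assume "t \<in> {s1<..<s2}" "g t = \<psi> d2"
    then have "t \<in> Z2" using s1r s2r by (simp add: Z2_def)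
    then show False using s2lo \<open>t \<in> {s1<..<s2}\<close> by force
  qed
  have fs1: "f s1 = d1" using g_eq_psi[of s1 d1] inab s1r s2r d by simp
  have fs2: "f s2 = d2" using g_eq_psi[of s2 d2] inab s1r s2r d by simp
  have B1: "\<And>t. t \<in> {s1<..<s2} \<Longrightarrow> f t < d2"
  proof (rule ccontr)
    fix t assume tt: "t \<in> {s1<..<s2}" and "\<not> f t < d2"
    then have "f s1 \<le> d2" "d2 \<le> f t" using fs1 dd by auto
    moreover have "continuous_on {s1..t} f" using fcont_sub inab tt by (meson atLeastAtMost_iff greaterThanLessThan_iff less_imp_le subsetI order_trans)
    ultimately obtain t' where t': "s1 \<le> t'" "t' \<le> t" "f t' = d2" using IVT'[of f s1 d2 t] tt by auto
    have "t' \<noteq> s1" using t' fs1 dd by auto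
    then have t'i: "t' \<in> {s1<..<s2}" using t' tt by auto
    have "0 < f t'" using t' dd d by simp
    then have "g t' = \<psi> d2" using pos_B[of t'] inab t'i t' by auto
    then show False using A2 t'i by blast
  qed
  have B2: "\<And>t. t \<in> {s1<..<s2} \<Longrightarrow> d1 < f t"
  proof (rule ccontr)
    fix t assume tt: "t \<in> {s1<..<s2}" and "\<not> d1 < f t"
    then have ft: "f t \<le> d1" by simp
    have ct: "continuous_on {t..s2} f" using fcont_sub inab tt by (meson atLeastAtMost_iff greaterThanLessThan_iff less_imp_le subsetI order_trans)
    show False
    proof (cases "0 < d1")
      case True
      obtain t' where t': "t \<le> t'" "t' \<le> s2" "f t' = d1"
        using IVT'[of f t d1 s2] ft fs2 dd ct tt by auto
      have "t' \<noteq> s2" using t' fs2 dd by auto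
      then have t'i: "t' \<in> {s1<..<s2}" using t' tt by auto
      then have "g t' = \<psi> d1" using pos_B[of t'] inab t' True by auto
      then show False using A1 t'i by blast
    next
      case False
      then have d10: "d1 = 0" using d by simp
      have ft0: "f t = 0" using ft d10 frange inab tt by (meson greaterThanLessThan_iff less_imp_le atLeastAtMost_iff order_antisym)
      define Z0 where "Z0 = {u \<in> {t..s2}. f u = 0}"
      have sub0: "{t..s2} \<subseteq> {a..b}" using inab tt by auto
      have Z0c: "closed Z0" unfolding Z0_def using closed_f0[OF sub0] by simp
      have Z0n: "t \<in> Z0" using ft0 tt by (simp add: Z0_def)
      define t2' where "t2' = Sup Z0"
      have tZ: "t2' \<in> Z0" unfolding t2'_def
        by (rule closed_contains_Sup) (use Z0n Z0c in \<open>auto simp: Z0_def bdd_above_def\<close>)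
      have tup: "\<And>u. u \<in> Z0 \<Longrightarrow> u \<le> t2'" unfolding t2'_def
        by (rule cSup_upper) (auto simp: Z0_def bdd_above_def)
      have t2r: "t \<le> t2'" "t2' < s2" "f t2' = 0" using tZ fs2 dd d10 by (auto simp: Z0_def order.order_iff_strict)
      have "\<And>u. u \<in> {t2'<..s2} \<Longrightarrow> g u \<in> Br"
      proof -
        fix u assume u: "u \<in> {t2'<..s2}"
        then have ui: "u \<in> {a..b}" using sub0 t2r by auto
        have "f u \<noteq> 0" using tup[of u] u t2r by (auto simp: Z0_def)
        then have "0 < f u" using frange[OF ui] by simp
        then show "g u \<in> Br" using pos_B ui by blast
      qed
      then have "g t2' \<in> Br" using rootlim_r[of t2' s2] t2r sub0 by auto
      then have "g t2' = \<psi> d1" using gB[of t2'] t2r d10 sub0 by auto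
      moreover have "t2' \<in> {s1<..<s2}" using t2r tt by auto
      ultimately show False using A1 by blast
    qed
  qed
  have "g ` {s1..s2} = \<psi> ` {d1..d2}"
  proof
    show "g ` {s1..s2} \<subseteq> \<psi> ` {d1..d2}"
    proof
      fix y assume "y \<in> g ` {s1..s2}"
      then obtain t where tt: "t \<in> {s1..s2}" "y = g t" by blast
      show "y \<in> \<psi> ` {d1..d2}"
      proof (cases "t = s1 \<or> t = s2")
        case True then show ?thesis using tt s1r s2r dd by auto
      next
        case False
        then have ti: "t \<in> {s1<..<s2}" using tt by auto
        then have "0 < f t" using B2 d by (meson order_le_less_trans)
        then have "g t = \<psi> (f t)" using pos_B inab tt by blast
        then show ?thesis using B1[OF ti] B2[OF ti] tt by auto
      qed
    qed
    show "\<psi> ` {d1..d2} \<subseteq> g ` {s1..s2}"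
    proof
      fix y assume "y \<in> \<psi> ` {d1..d2}"
      then obtain dd' where dd': "dd' \<in> {d1..d2}" "y = \<psi> dd'" by blast
      show "y \<in> g ` {s1..s2}"
      proof (cases "dd' = d1 \<or> dd' = d2")
        case True
        have "s1 \<in> {s1..s2}" "s2 \<in> {s1..s2}" using s1r by auto
        then have "\<psi> d1 \<in> g ` {s1..s2}" "\<psi> d2 \<in> g ` {s1..s2}"
          using s1r(3) s2r(3) by (metis image_eqI)+
        then show ?thesis using True dd' by auto
      next
        case False
        then have "d1 < dd'" "dd' < d2" using dd' by auto
        moreover have "continuous_on {s1..s2} f" using fcont_sub inab by blast
        ultimately obtain t' where t': "s1 \<le> t'" "t' \<le> s2" "f t' = dd'"
          using IVT'[of f s1 dd' s2] fs1 fs2 s1r by auto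
        have "0 < f t'" using t' \<open>d1 < dd'\<close> d by simp
        then have "g t' = y" using pos_B[of t'] inab t' dd' by auto
        then show ?thesis using t' by auto
      qed
    qed
  qed
  then show ?thesis using s1r s2r by (intro exI[of _ s1] exI[of _ s2]) auto
qed


lemma reflect: "covsetup (-b) (-a) (\<lambda>t. f (-t)) (\<lambda>t. g (-t)) \<psi> Br"
proof
  show "- b \<le> - a" using ab by simp
  show "continuous_on {-b..-a} (\<lambda>t. f (-t))"
    by (rule continuous_on_compose2[OF fc]) (auto intro!: continuous_intros)
  fix t assume t: "t \<in> {-b..-a}"
  then have t': "-t \<in> {a..b}" by auto
  show "0 \<le> f (-t) \<and> f (-t) \<le> 1" using frange[OF t'] .
  show "g (-t) \<in> Br \<Longrightarrow> g (-t) = \<psi> (f (-t))" using gB[OF t'] .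
  show "g (-t) \<notin> Br \<Longrightarrow> f (-t) = 0" using gnB[OF t'] .
next
  have "{t \<in> {-b..-a}. g (-t) \<in> Br} = uminus ` {t \<in> {a..b}. g t \<in> Br}"
  proof (rule set_eqI)
    fix x
    show "x \<in> {t \<in> {-b..-a}. g (-t) \<in> Br} \<longleftrightarrow> x \<in> uminus ` {t \<in> {a..b}. g t \<in> Br}"
    proof
      assume "x \<in> {t \<in> {-b..-a}. g (-t) \<in> Br}"
      then have "-x \<in> {t \<in> {a..b}. g t \<in> Br}" by auto
      moreover have "x = - (- x)" by simp
      ultimately show "x \<in> uminus ` {t \<in> {a..b}. g t \<in> Br}" by (rule rev_image_eqI)
    next
      assume "x \<in> uminus ` {t \<in> {a..b}. g t \<in> Br}"
      then show "x \<in> {t \<in> {-b..-a}. g (-t) \<in> Br}" by auto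
    qed
  qed
  then show "closed {t \<in> {-b..-a}. g (-t) \<in> Br}" using closed_negations[OF clB] by simp
qed (use psiB psiinj in auto)

lemma cover_gen:
  assumes t: "t1 \<in> {a..b}" "t2 \<in> {a..b}" and d: "0 \<le> d1" "d1 \<le> d2" "d2 \<le> 1"
    and e1: "g t1 = \<psi> d1" and e2: "g t2 = \<psi> d2"
  shows "\<exists>s1 s2. min t1 t2 \<le> s1 \<and> s1 \<le> s2 \<and> s2 \<le> max t1 t2 \<and> g ` {s1..s2} = \<psi> ` {d1..d2}"
proof (cases "t1 \<le> t2")
  case True
  then show ?thesis using cover_up[of t1 t2 d1 d2] t d e1 e2 by auto
next
  case False
  interpret R: covsetup "-b" "-a" "\<lambda>t. f (-t)" "\<lambda>t. g (-t)" \<psi> Br by (rule reflect)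
  obtain s1 s2 where s: "-t1 \<le> s1" "s1 \<le> s2" "s2 \<le> -t2" "(\<lambda>t. g (-t)) ` {s1..s2} = \<psi> ` {d1..d2}"
    using R.cover_up[of "-t1" "-t2" d1 d2] t d e1 e2 False by auto
  have "g ` {-s2..-s1} = g ` (uminus ` {s1..s2})" by simp
  also have "\<dots> = (\<lambda>t. g (-t)) ` {s1..s2}" by (rule image_image)
  finally have "g ` {-s2..-s1} = \<psi> ` {d1..d2}" using s by simp
  then show ?thesis using s False by (intro exI[of _ "-s2"] exI[of _ "-s1"]) auto
qed

lemma img_interval:
  assumes c: "a \<le> c1" "c1 \<le> c2" "c2 \<le> b"
  shows "\<exists>V. g ` {c1..c2} \<inter> Br = \<psi> ` V \<and> V \<subseteq> {0..1} \<and>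
     (V = {} \<or> (\<exists>u v. u \<le> v \<and> V = {u..v})) \<and> (0 \<in> V \<longrightarrow> (\<exists>v. V = {0..v}))"
proof -
  define V where "V = {f t | t. t \<in> {c1..c2} \<and> g t \<in> Br}"
  have sub: "{c1..c2} \<subseteq> {a..b}" using c by auto
  have img: "g ` {c1..c2} \<inter> Br = \<psi> ` V"
  proof
    show "g ` {c1..c2} \<inter> Br \<subseteq> \<psi> ` V"
    proof
      fix y assume "y \<in> g ` {c1..c2} \<inter> Br"
      then obtain t where "t \<in> {c1..c2}" "y = g t" "g t \<in> Br" by blast
      then show "y \<in> \<psi> ` V" using gB sub unfolding V_def by blast
    qed
    show "\<psi> ` V \<subseteq> g ` {c1..c2} \<inter> Br"
    proof
      fix y assume "y \<in> \<psi> ` V"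
      then obtain t where "t \<in> {c1..c2}" "g t \<in> Br" "y = \<psi> (f t)" unfolding V_def by blast
      then show "y \<in> g ` {c1..c2} \<inter> Br" using gB sub by (metis IntI image_eqI subsetD)
    qed
  qed
  have V01: "V \<subseteq> {0..1}" using frange sub unfolding V_def by force
  obtain m M where mM: "f ` {c1..c2} = {m..M}" "m \<le> M"
    using continuous_image_closed_interval[OF c(2) fcont_sub[OF sub]] by blast
  have "m \<in> f ` {c1..c2}" using mM by simp
  then obtain tm where "tm \<in> {c1..c2}" "m = f tm" by blast
  then have m0: "0 \<le> m" using frange sub by auto
  have VmM: "V \<subseteq> {m..M}" using mM unfolding V_def by blast
  have posV: "\<And>y. y \<in> {m..M} \<Longrightarrow> 0 < y \<Longrightarrow> y \<in> V"
  proof -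
    fix y assume "y \<in> {m..M}" "0 < y"
    then obtain t where t: "t \<in> {c1..c2}" "f t = y" using mM by (metis imageE)
    then have "g t \<in> Br" using pos_B sub \<open>0 < y\<close> by blast
    then show "y \<in> V" using t unfolding V_def by blast
  qed
  show ?thesis
  proof (cases "0 < m")
    case True
    have "{m..M} \<subseteq> V"
    proof
      fix y assume "y \<in> {m..M}"
      moreover then have "0 < y" using True by simp
      ultimately show "y \<in> V" by (rule posV)
    qed
    then have "V = {m..M}" using VmM by blast
    then show ?thesis using img V01 mM True by auto
  next
    case False
    then have m00: "m = 0" using m0 by simp
    show ?thesis
    proof (cases "M = 0")
      case True
      then have "V \<subseteq> {0}" using VmM m00 by auto
      then have "V = {} \<or> V = {0..0}" by auto
      then show ?thesis
      proof
        assume "V = {}" then show ?thesis using img by (intro exI[of _ V]) auto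
      next
        assume V0: "V = {0..0}"
        have c3: "\<exists>u v. u \<le> v \<and> V = {u..v}" using V0 by (intro exI[of _ 0]) auto
        have c4: "0 \<in> V \<longrightarrow> (\<exists>v. V = {0..v})" using V0 by blast
        have c2: "V \<subseteq> {0..1}" using V0 by simp
        show ?thesis using img c2 c3 c4 by blast
      qed
    next
      case False
      then have Mp: "0 < M" using mM m00 by simp
      have "0 \<in> f ` {c1..c2}" "M \<in> f ` {c1..c2}" using mM m00 by auto
      then obtain tz tp where tz: "tz \<in> {c1..c2}" "f tz = 0" and tp: "tp \<in> {c1..c2}" "f tp = M"
        by (metis imageE)
      have "0 \<in> V"
      proof (cases "tz < tp")
        case True
        define Z0 where "Z0 = {u \<in> {tz..tp}. f u = 0}"
        have sub0: "{tz..tp} \<subseteq> {a..b}" using tz tp sub by auto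
        have Z0c: "closed Z0" unfolding Z0_def using closed_f0[OF sub0] by simp
        have Z0n: "tz \<in> Z0" using tz True by (simp add: Z0_def)
        define t' where "t' = Sup Z0"
        have tZ: "t' \<in> Z0" unfolding t'_def
          by (rule closed_contains_Sup) (use Z0n Z0c in \<open>auto simp: Z0_def bdd_above_def\<close>)
        have tup: "\<And>u. u \<in> Z0 \<Longrightarrow> u \<le> t'" unfolding t'_def
          by (rule cSup_upper) (auto simp: Z0_def bdd_above_def)
        have t'r: "tz \<le> t'" "t' < tp" "f t' = 0" using tZ tp Mp by (auto simp: Z0_def order.order_iff_strict)
        have "\<And>u. u \<in> {t'<..tp} \<Longrightarrow> g u \<in> Br"
        proof -
          fix u assume u: "u \<in> {t'<..tp}"
          then have ui: "u \<in> {a..b}" using sub0 t'r by auto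
          have "f u \<noteq> 0" using tup[of u] u t'r by (auto simp: Z0_def)
          then have "0 < f u" using frange[OF ui] by simp
          then show "g u \<in> Br" using pos_B ui by blast
        qed
        then have "g t' \<in> Br" using rootlim_r[of t' tp] t'r sub0 by auto
        moreover have "t' \<in> {c1..c2}" using t'r tz tp by auto
        ultimately show ?thesis using t'r unfolding V_def by force
      next
        case False
        have "tz \<noteq> tp" using tz tp Mp by auto
        then have ft: "tp < tz" using False by simp
        define Z0 where "Z0 = {u \<in> {tp..tz}. f u = 0}"
        have sub0: "{tp..tz} \<subseteq> {a..b}" using tz tp sub by auto
        have Z0c: "closed Z0" unfolding Z0_def using closed_f0[OF sub0] by simp
        have Z0n: "tz \<in> Z0" using tz ft by (simp add: Z0_def)
        define t' where "t' = Inf Z0"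
        have tZ: "t' \<in> Z0" unfolding t'_def
          by (rule closed_contains_Inf) (use Z0n Z0c in \<open>auto simp: Z0_def bdd_below_def\<close>)
        have tlo: "\<And>u. u \<in> Z0 \<Longrightarrow> t' \<le> u" unfolding t'_def
          by (rule cInf_lower) (auto simp: Z0_def bdd_below_def)
        have t'r: "t' \<le> tz" "tp < t'" "f t' = 0" using tZ tp Mp by (auto simp: Z0_def order.order_iff_strict)
        have "\<And>u. u \<in> {tp..<t'} \<Longrightarrow> g u \<in> Br"
        proof -
          fix u assume u: "u \<in> {tp..<t'}"
          then have ui: "u \<in> {a..b}" using sub0 t'r by auto
          have "f u \<noteq> 0" using tlo[of u] u t'r by (auto simp: Z0_def)
          then have "0 < f u" using frange[OF ui] by simp
          then show "g u \<in> Br" using pos_B ui by blast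
        qed
        then have "g t' \<in> Br" using rootlim_l[of tp t'] t'r sub0 by auto
        moreover have "t' \<in> {c1..c2}" using t'r tz tp by auto
        ultimately show ?thesis using t'r unfolding V_def by force
      qed
      have "{0..M} \<subseteq> V"
      proof
        fix y assume y: "y \<in> {0..M}"
        show "y \<in> V"
        proof (cases "y = 0")
          case True then show ?thesis using \<open>0 \<in> V\<close> by simp
        next
          case False then show ?thesis using y posV m00 by simp
        qed
      qed
      then have "V = {0..M}" using VmM m00 by blast
      then show ?thesis using img V01 Mp by auto
    qed
  qed
qed
end


locale LG =
  fixes T :: "'a topology" and h :: "real \<Rightarrow> 'a" and \<tau> F :: "'a \<Rightarrow> 'a"
    and \<Lambda> :: "'i set" and \<phi> :: "'i \<Rightarrow> real \<Rightarrow> 'a"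
    and P :: "'a set set" and lab :: "'a set \<Rightarrow> 'i" and p :: "'a set \<Rightarrow> int"
  assumes lg: "lifted_graph T h \<tau>"
    and cF: "continuous_map T T F"
    and d1: "degree_one T \<tau> F"
    and sl: "sun_like T h F \<Lambda> \<phi>"
    and bp: "basic_partition T h \<tau> F \<Lambda> \<phi> P lab p"
begin

abbreviation "tsp \<equiv> topspace T"
abbreviation "sh \<equiv> zsh T \<tau>"
abbreviation "ti \<equiv> inv_into (topspace T) \<tau>"

lemma tau_hom: "homeomorphic_map T T \<tau>"
  using lg by (simp add: lifted_graph_def)

lemma tau_top: "x \<in> tsp \<Longrightarrow> \<tau> x \<in> tsp"
  using homeomorphic_imp_surjective_map[OF tau_hom] by blast

lemma tau_inj: "inj_on \<tau> tsp"
  using homeomorphic_imp_injective_map[OF tau_hom] .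

lemma tau_surj: "\<tau> ` tsp = tsp"
  using homeomorphic_imp_surjective_map[OF tau_hom] .

lemma ti_top: "y \<in> tsp \<Longrightarrow> ti y \<in> tsp"
  by (metis inv_into_into tau_surj)

lemma tau_ti: "y \<in> tsp \<Longrightarrow> \<tau> (ti y) = y"
  by (simp add: f_inv_into_f tau_surj)

lemma ti_tau: "x \<in> tsp \<Longrightarrow> ti (\<tau> x) = x"
  by (simp add: inv_into_f_f tau_inj)

lemma ti_hom: "homeomorphic_map T T ti"
proof -
  obtain g where g: "homeomorphic_maps T T \<tau> g"
    using tau_hom homeomorphic_map_maps by blast
  then have gh: "homeomorphic_map T T g" and "\<And>y. y \<in> tsp \<Longrightarrow> \<tau> (g y) = y"
    and "\<And>y. y \<in> tsp \<Longrightarrow> g y \<in> tsp"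
    by (auto simp: homeomorphic_maps_map dest: homeomorphic_imp_surjective_map)
  then have "\<And>y. y \<in> tsp \<Longrightarrow> g y = ti y"
    by (metis ti_tau)
  then show ?thesis using homeomorphic_map_eq[OF gh] by blast
qed

lemma tau_pow_top: "x \<in> tsp \<Longrightarrow> (\<tau> ^^ n) x \<in> tsp"
  by (induction n) (auto simp: tau_top)

lemma ti_pow_top: "x \<in> tsp \<Longrightarrow> (ti ^^ n) x \<in> tsp"
  by (induction n) (auto simp: ti_top)

lemma sh_top: "x \<in> tsp \<Longrightarrow> sh m x \<in> tsp"
  by (simp add: zsh_def tau_pow_top ti_pow_top)

lemma sh_0[simp]: "sh 0 x = x"
  by (simp add: zsh_def)

lemma sh_succ: assumes "x \<in> tsp" shows "sh (m + 1) x = \<tau> (sh m x)"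
proof (cases "0 \<le> m")
  case True
  then have "nat (m+1) = Suc (nat m)" by simp
  then show ?thesis using True by (simp add: zsh_def)
next
  case False
  then obtain k where k: "nat (-m) = Suc k" and "m + 1 \<le> 0"
    by (metis add.commute gr0_implies_Suc int_one_le_iff_zero_less le_add_same_cancel1
        less_le not_le zero_less_nat_eq neg_0_less_iff_less zless_imp_add1_zle)
  then have k2: "nat (-(m+1)) = k" by simp
  have "\<tau> ((ti ^^ Suc k) x) = (ti ^^ k) x"
    using tau_ti ti_pow_top[OF \<open>x \<in> tsp\<close>] by simp
  then show ?thesis using False k k2 \<open>m + 1 \<le> 0\<close>
    by (cases "m + 1 = 0") (auto simp: zsh_def)
qed

lemma sh_pred: "x \<in> tsp \<Longrightarrow> sh (m - 1) x = ti (sh m x)"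
  by (metis diff_add_cancel sh_succ sh_top ti_tau)

lemma sh_1: "sh 1 x = \<tau> x"
  by (simp add: zsh_def)

lemma sh_add: "x \<in> tsp \<Longrightarrow> sh m (sh n x) = sh (m + n) x"
proof (induction m rule: int_induct[where k=0])
  case base then show ?case by simp
next
  case (step1 i)
  then show ?case using sh_succ sh_top
    by (metis add.commute add.left_commute)
next
  case (step2 i)
  then show ?case using sh_pred sh_top
    by (metis add.commute add_diff_eq)
qed

lemma sh_inv: "x \<in> tsp \<Longrightarrow> sh (-m) (sh m x) = x"
  by (simp add: sh_add)

lemma sh_inj: "x \<in> tsp \<Longrightarrow> y \<in> tsp \<Longrightarrow> sh m x = sh m y \<Longrightarrow> x = y"
  by (metis sh_inv)

lemma tau_pow_hom: "homeomorphic_map T T (\<tau> ^^ n)"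
proof (induction n)
  case 0 then show ?case by (simp add: id_def[symmetric])
next
  case (Suc n) then show ?case
    using homeomorphic_map_compose[OF Suc tau_hom] by (metis funpow.simps(2) funpow_swap1)
qed

lemma ti_pow_hom: "homeomorphic_map T T (ti ^^ n)"
proof (induction n)
  case 0 then show ?case by (simp add: id_def[symmetric])
next
  case (Suc n) then show ?case
    using homeomorphic_map_compose[OF Suc ti_hom] by (metis funpow.simps(2) funpow_swap1)
qed

lemma sh_hom: "homeomorphic_map T T (sh m)"
proof -
  have "sh m = (if 0 \<le> m then \<tau> ^^ nat m else ti ^^ nat (-m))"
    by (rule ext) (simp add: zsh_def)
  then show ?thesis using tau_pow_hom ti_pow_hom by simp
qed

lemma F_top: "x \<in> tsp \<Longrightarrow> F x \<in> tsp"
  using cF by (auto simp: continuous_map_def)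

lemma Fpow_top: "x \<in> tsp \<Longrightarrow> (F ^^ n) x \<in> tsp"
  by (induction n) (auto simp: F_top)

lemma F_tau: "x \<in> tsp \<Longrightarrow> F (\<tau> x) = \<tau> (F x)"
  using d1 by (simp add: degree_one_def)

lemma F_ti: "x \<in> tsp \<Longrightarrow> F (ti x) = ti (F x)"
  by (metis F_tau F_top ti_tau tau_ti ti_top)

lemma F_sh: "x \<in> tsp \<Longrightarrow> F (sh m x) = sh m (F x)"
proof (induction m rule: int_induct[where k=0])
  case base then show ?case by simp
next
  case (step1 i)
  then show ?case by (simp add: sh_succ F_tau sh_top F_top)
next
  case (step2 i)
  then show ?case by (simp add: sh_pred F_ti sh_top F_top)
qed

lemma Fpow_sh: "x \<in> tsp \<Longrightarrow> (F ^^ n) (sh m x) = sh m ((F ^^ n) x)"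
  by (induction n) (auto simp: F_sh Fpow_top)

end

context LG begin

abbreviation "RH \<equiv> range h"
abbreviation "SR \<equiv> subtopology T (tsp - range h)"
abbreviation "cc y \<equiv> connected_component_of_set SR y"
abbreviation "rr \<equiv> rR T h"

lemma h_top: "h x \<in> tsp"
  using lg by (auto simp: lifted_graph_def)

lemma h_inj: "inj h"
proof -
  have "homeomorphic_map euclideanreal (subtopology T (range h)) h"
    using lg by (simp add: lifted_graph_def)
  then show ?thesis using homeomorphic_imp_injective_map by fastforce
qed

lemma tau_h: "\<tau> (h x) = h (x + 1)"
  using lg by (simp add: lifted_graph_def)

lemma ti_h: "ti (h x) = h (x - 1)"
  by (metis diff_add_cancel h_top tau_h ti_tau)

lemma sh_h: "sh m (h x) = h (x + of_int m)"
proof (induction m rule: int_induct[where k=0])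
  case base then show ?case by simp
next
  case (step1 i) then show ?case by (simp add: sh_succ h_top tau_h add.assoc)
next
  case (step2 i) then show ?case by (simp add: sh_pred h_top ti_h diff_add_eq add_diff_eq)
qed

lemma sh_range: "y \<in> tsp \<Longrightarrow> sh m y \<in> RH \<longleftrightarrow> y \<in> RH"
proof
  assume y: "y \<in> tsp" and "sh m y \<in> RH"
  then obtain x where "sh m y = h x" by auto
  then have "sh (-m) (sh m y) = h (x + of_int (-m))" by (simp add: sh_h)
  then have "y = h (x + of_int (-m))" using sh_inv[OF y] by simp
  then show "y \<in> RH" by simp
next
  assume "y \<in> RH" then show "sh m y \<in> RH" using sh_h by auto
qed

lemma comp_props:
  assumes "y \<in> tsp - RH"
  shows "\<exists>!x. h x \<in> T closure_of (cc y)"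
proof -
  have "cc y \<in> connected_components_of SR"
    using assms by (simp add: connected_component_in_connected_components_of)
  then have "\<exists>!z. z \<in> T closure_of (cc y) \<inter> RH"
    using lg by (simp add: lifted_graph_def)
  then show ?thesis using h_inj unfolding inj_def by blast
qed

lemma rr_off:
  assumes "y \<in> tsp - RH" "h x \<in> T closure_of (cc y)"
  shows "rr y = x"
proof -
  have "rr y = (THE x. h x \<in> T closure_of (cc y))"
    using assms by (simp add: rR_def)
  also have "\<dots> = x" by (rule the1_equality[OF comp_props[OF assms(1)] assms(2)])
  finally show ?thesis .
qed

lemma rr_on: "rr (h x) = x"
  using h_inj by (simp add: rR_def)

lemma tau_RH: "y \<in> tsp \<Longrightarrow> \<tau> y \<in> RH \<longleftrightarrow> y \<in> RH"
  using sh_range[of y 1] by (simp add: sh_1)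

lemma tau_SR: "homeomorphic_map SR SR \<tau>"
proof -
  have "\<tau> ` (tsp \<inter> (tsp - RH)) = tsp \<inter> (tsp - RH)"
  proof
    show "\<tau> ` (tsp \<inter> (tsp - RH)) \<subseteq> tsp \<inter> (tsp - RH)"
    proof
      fix z assume "z \<in> \<tau> ` (tsp \<inter> (tsp - RH))"
      then obtain y where y: "y \<in> tsp" "y \<notin> RH" "z = \<tau> y" by blast
      then show "z \<in> tsp \<inter> (tsp - RH)" using tau_top[OF y(1)] tau_RH[OF y(1)] by simp
    qed
    show "tsp \<inter> (tsp - RH) \<subseteq> \<tau> ` (tsp \<inter> (tsp - RH))"
    proof
      fix z assume z: "z \<in> tsp \<inter> (tsp - RH)"
      then have z1: "z \<in> tsp" "z \<notin> RH" by auto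
      have a: "ti z \<in> tsp" using ti_top z1 by simp
      have b: "\<tau> (ti z) = z" using tau_ti z1 by simp
      have c: "ti z \<notin> RH" using tau_RH[OF a] b z1 by simp
      show "z \<in> \<tau> ` (tsp \<inter> (tsp - RH))"
        using a b c by (intro image_eqI[where x="ti z"]) auto
    qed
  qed
  then show ?thesis
    by (rule homeomorphic_map_subtopologies[OF tau_hom])
qed

lemma rr_tau:
  assumes y: "y \<in> tsp"
  shows "rr (\<tau> y) = rr y + 1"
proof (cases "y \<in> RH")
  case True
  then obtain x where "y = h x" by auto
  then show ?thesis by (simp add: tau_h rr_on)
next
  case False
  then have y': "y \<in> tsp - RH" using y by simp
  then have ty: "\<tau> y \<in> tsp - RH" using tau_RH tau_top y by auto
  obtain x where x: "h x \<in> T closure_of (cc y)" using comp_props[OF y'] by auto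
  have "cc (\<tau> y) = \<tau> ` cc y"
    using homeomorphic_map_connected_component_of[OF tau_SR] y' by simp
  moreover have "cc y \<subseteq> tsp"
    using connected_component_of_subset_topspace[of SR y] by auto
  ultimately have "T closure_of (cc (\<tau> y)) = \<tau> ` (T closure_of (cc y))"
    using homeomorphic_map_closure_of[OF tau_hom] by simp
  then have "h (x + 1) \<in> T closure_of (cc (\<tau> y))"
    using x tau_h by (metis image_eqI)
  then have "rr (\<tau> y) = x + 1" using rr_off[OF ty] by blast
  moreover have "rr y = x" using rr_off[OF y' x] .
  ultimately show ?thesis by simp
qed

lemma rr_sh: "y \<in> tsp \<Longrightarrow> rr (sh m y) = rr y + of_int m"
proof (induction m rule: int_induct[where k=0])
  case base then show ?case by simp
next
  case (step1 i) then show ?case by (simp add: sh_succ sh_top rr_tau)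
next
  case (step2 i)
  then have "rr (\<tau> (sh (i - 1) y)) = rr (sh (i - 1) y) + 1"
    using rr_tau sh_top by blast
  moreover have "\<tau> (sh (i - 1) y) = sh i y"
    by (metis diff_add_cancel sh_succ step2.prems)
  ultimately show ?case using step2 by simp
qed

lemma rr_connected:
  assumes "connectedin T K" "K \<subseteq> tsp - RH" "y \<in> K" "h x \<in> T closure_of K"
  shows "rr y = x"
proof -
  have "connectedin SR K" using assms by (simp add: connectedin_subtopology)
  then have "K \<subseteq> cc y" using connected_component_of_maximal assms(3) by metis
  then have "h x \<in> T closure_of (cc y)" using assms(4) closure_of_mono by blast
  then show ?thesis using rr_off assms by blast
qed

lemma rr_connected2:
  assumes "connectedin T K" "K \<subseteq> tsp - RH" "y \<in> K" "z \<in> K"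
  shows "rr y = rr z"
proof -
  have "connectedin SR K" using assms by (simp add: connectedin_subtopology)
  then have "K \<subseteq> cc y" "K \<subseteq> cc z" using connected_component_of_maximal assms by metis+
  then have e: "cc y = cc z"
    using connected_component_of_eq_overlap[of SR y z] assms by blast
  obtain x where "h x \<in> T closure_of (cc y)" using comp_props assms by blast
  moreover have "y \<in> tsp - RH" "z \<in> tsp - RH" using assms by auto
  ultimately show ?thesis using rr_off[of y] rr_off[of z] e by metis
qed

end

context LG begin

abbreviation "TRs \<equiv> TR T h F"
abbreviation "IT \<equiv> T interior_of TR T h F"
abbreviation "X \<equiv> Xset T h F"
abbreviation "UR \<equiv> (\<Union>n. (F ^^ n) ` RH)"

lemma UR_top: "UR \<subseteq> tsp"
  using Fpow_top h_top by blast

lemma RH_UR: "RH \<subseteq> UR"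
proof
  fix y assume "y \<in> RH" then show "y \<in> UR"
    by (intro UN_I[of 0]) auto
qed

lemma TR_top: "TRs \<subseteq> tsp"
  by (simp add: TR_def closure_of_subset_topspace)

lemma RH_TR: "RH \<subseteq> TRs"
proof -
  have "UR \<subseteq> T closure_of UR" by (rule closure_of_subset[OF UR_top])
  then show ?thesis unfolding TR_def using RH_UR by (rule order_trans[rotated])
qed

lemma sh_UR_sub: "sh m ` UR \<subseteq> UR"
proof
  fix z assume "z \<in> sh m ` UR"
  then obtain n x where z: "z = sh m ((F ^^ n) (h x))" by blast
  then have "z = (F ^^ n) (h (x + of_int m))"
    by (simp add: Fpow_sh[symmetric] h_top sh_h)
  then show "z \<in> UR" by blast
qed

lemma sh_UR: "sh m ` UR = UR"
proof
  show "sh m ` UR \<subseteq> UR" by (rule sh_UR_sub)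
  show "UR \<subseteq> sh m ` UR"
  proof
    fix z assume z: "z \<in> UR"
    have "sh (-m) z \<in> UR" by (rule subsetD[OF sh_UR_sub imageI[OF z]])
    moreover have "z \<in> tsp" using z UR_top by blast
    then have "sh m (sh (-m) z) = z" using sh_add[of z m "-m"] by simp
    ultimately show "z \<in> sh m ` UR" by (intro image_eqI[where x="sh (-m) z"]) auto
  qed
qed

lemma sh_TR_img: "sh m ` TRs = TRs"
  unfolding TR_def
  using homeomorphic_map_closure_of[OF sh_hom UR_top, of m] sh_UR by simp

lemma sh_IT_img: "sh m ` IT = IT"
  using homeomorphic_map_interior_of[OF sh_hom TR_top, of m] sh_TR_img by simp

lemma sh_set_iff:
  assumes "S \<subseteq> tsp" "\<And>m. sh m ` S = S" "y \<in> tsp"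
  shows "sh m y \<in> S \<longleftrightarrow> y \<in> S"
proof
  assume "sh m y \<in> S"
  then have "sh (-m) (sh m y) \<in> S" using assms(2)[of "-m"] by blast
  then show "y \<in> S" using sh_inv[OF assms(3)] by simp
next
  assume "y \<in> S" then show "sh m y \<in> S" using assms(2)[of m] by blast
qed

lemma IT_top: "IT \<subseteq> tsp"
  by (simp add: interior_of_subset_topspace)

lemma sh_TR: "y \<in> tsp \<Longrightarrow> sh m y \<in> TRs \<longleftrightarrow> y \<in> TRs"
  using sh_set_iff[OF TR_top sh_TR_img] .

lemma sh_IT: "y \<in> tsp \<Longrightarrow> sh m y \<in> IT \<longleftrightarrow> y \<in> IT"
  using sh_set_iff[OF IT_top sh_IT_img] .

lemma X_alt: "X = (tsp - IT) \<inter> {y. rr y \<in> {0..<1}}"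
  unfolding Xset_def closure_of_complement ..

lemma X_top: "x \<in> X \<Longrightarrow> x \<in> tsp"
  using X_alt by auto

lemma X_rr: "x \<in> X \<Longrightarrow> 0 \<le> rr x \<and> rr x < 1"
  using X_alt by auto

lemma X_IT: "x \<in> X \<Longrightarrow> x \<notin> IT"
  using X_alt by auto

lemma X_iff: "x \<in> X \<longleftrightarrow> x \<in> tsp \<and> x \<notin> IT \<and> 0 \<le> rr x \<and> rr x < 1"
  using X_alt by auto

lemma shX_IT: "x \<in> X \<Longrightarrow> sh m x \<notin> IT"
  using sh_IT X_top X_IT by blast

lemma shX_unique:
  assumes "x \<in> X" "y \<in> X" "sh m x = sh n y"
  shows "m = n"
proof -
  have "rr (sh m x) = rr x + of_int m" using rr_sh X_top assms(1) by blast
  moreover have "rr (sh n y) = rr y + of_int n" using rr_sh X_top assms(2) by blast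
  ultimately have "rr x + of_int m = rr y + of_int n" using assms(3) by simp
  moreover have "0 \<le> rr x" "rr x < 1" "0 \<le> rr y" "rr y < 1" using X_rr assms by auto
  ultimately have "of_int m < of_int n + (1::real)" "of_int n < of_int m + (1::real)" by linarith+
  then show "m = n" by linarith
qed

lemma shX_unique2:
  assumes "x \<in> X" "y \<in> X" "sh m x = sh n y"
  shows "m = n \<and> x = y"
  using shX_unique[OF assms] assms sh_inj X_top by blast

lemma zsh_set_iff: "z \<in> zsh_set T \<tau> S \<longleftrightarrow> (\<exists>m x. x \<in> S \<and> z = sh m x)"
  by (auto simp: zsh_set_def)

abbreviation "br i \<equiv> \<phi> i ` {0..1}"

lemma sl_fin: "finite \<Lambda>"
  using sl by (simp add: sun_like_def)

lemma phi_hom: "i \<in> \<Lambda> \<Longrightarrow> homeomorphic_map (top_of_set {0..1}) (subtopology T (br i)) (\<phi> i)"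
  using sl by (simp add: sun_like_def)

lemma br_TR: "i \<in> \<Lambda> \<Longrightarrow> br i \<inter> TRs = {\<phi> i 0}"
  using sl by (simp add: sun_like_def)

lemma br_closure: "i \<in> \<Lambda> \<Longrightarrow> T closure_of (\<phi> i ` {0<..1}) = br i"
  using sl by (simp add: sun_like_def)

lemma br_disj: "i \<in> \<Lambda> \<Longrightarrow> j \<in> \<Lambda> \<Longrightarrow> i \<noteq> j \<Longrightarrow> br i \<inter> br j = {}"
  using sl by (auto simp: sun_like_def disjnt_def)

lemma br_cover: "(tsp - TRs) \<inter> {y. rr y \<in> {0..<1}} = (\<Union>i\<in>\<Lambda>. \<phi> i ` {0<..1})"
  using sl by (simp add: sun_like_def)

lemma br_top: "i \<in> \<Lambda> \<Longrightarrow> br i \<subseteq> tsp"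
  using br_closure closure_of_subset_topspace by metis

lemma phi_cont: "i \<in> \<Lambda> \<Longrightarrow> continuous_map (top_of_set {0..1}) T (\<phi> i)"
  using homeomorphic_imp_continuous_map[OF phi_hom] continuous_map_in_subtopology by blast

lemma phi_inj: "i \<in> \<Lambda> \<Longrightarrow> inj_on (\<phi> i) {0..1}"
  using homeomorphic_imp_injective_map[OF phi_hom] by simp

lemma br_closed: "i \<in> \<Lambda> \<Longrightarrow> closedin T (br i)"
  using br_closure by (metis closedin_closure_of)

lemma phi_pos: "i \<in> \<Lambda> \<Longrightarrow> t \<in> {0<..1} \<Longrightarrow> \<phi> i t \<in> tsp \<and> \<phi> i t \<notin> TRs \<and> 0 \<le> rr (\<phi> i t) \<and> rr (\<phi> i t) < 1"
proof -
  assume i: "i \<in> \<Lambda>" and t: "t \<in> {0<..1}"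
  have "\<phi> i t \<in> (\<Union>i\<in>\<Lambda>. \<phi> i ` {0<..1})" using i t by blast
  then have "\<phi> i t \<in> (tsp - TRs) \<inter> {y. rr y \<in> {0..<1}}" using br_cover by simp
  then show ?thesis by simp
qed

lemma connected_phi:
  assumes "i \<in> \<Lambda>" "S \<subseteq> {0..1}" "is_interval S"
  shows "connectedin T (\<phi> i ` S)"
proof -
  have "connectedin (top_of_set {0..1}) S"
    using assms by (simp add: connectedin_subtopology is_interval_connected)
  then show ?thesis using connectedin_continuous_map_image[OF phi_cont[OF assms(1)]] by blast
qed

lemma rr_br:
  assumes i: "i \<in> \<Lambda>" and t: "t \<in> {0..1}"
  shows "rr (\<phi> i t) = rr (\<phi> i 1)"
proof (cases "\<phi> i 0 \<in> RH")
  case True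
  then obtain x0 where x0: "\<phi> i 0 = h x0" by auto
  have K: "connectedin T (\<phi> i ` {0<..1})"
    using connected_phi[OF i, of "{0<..1}"] by (simp add: is_interval_connected_1 subset_iff)
  have K2: "\<phi> i ` {0<..1} \<subseteq> tsp - RH"
  proof
    fix y assume "y \<in> \<phi> i ` {0<..1}"
    then obtain s where s: "s \<in> {0<..1}" "y = \<phi> i s" by blast
    have "\<phi> i s \<in> tsp" "\<phi> i s \<notin> TRs" using phi_pos[OF i s(1)] by auto
    then show "y \<in> tsp - RH" using RH_TR s(2) by auto
  qed
  have "\<phi> i 0 \<in> br i" by simp
  then have "h x0 \<in> T closure_of (\<phi> i ` {0<..1})"
    unfolding br_closure[OF i] x0[symmetric] .
  then have a: "\<And>s. s \<in> {0<..1} \<Longrightarrow> rr (\<phi> i s) = x0"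
    using rr_connected[OF K K2] by blast
  show ?thesis
  proof (cases "t = 0")
    case True then show ?thesis using a[of 1] x0 rr_on by simp
  next
    case False then have "t \<in> {0<..1}" using t by simp
    then show ?thesis using a[of 1] a[of t] by simp
  qed
next
  case False
  have K: "connectedin T (br i)"
    using connected_phi[OF i, of "{0..1}"] by (simp add: is_interval_cc)
  have K2: "br i \<subseteq> tsp - RH"
  proof
    fix y assume "y \<in> br i"
    then obtain s where s: "s \<in> {0..1}" "y = \<phi> i s" by blast
    show "y \<in> tsp - RH"
    proof (cases "s = 0")
      case True then show ?thesis using False s br_top[OF i] by auto
    next
      case False then have "s \<in> {0<..1}" using s by simp
      have "\<phi> i s \<in> tsp" "\<phi> i s \<notin> TRs" using phi_pos[OF i] \<open>s \<in> {0<..1}\<close> by auto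
      then show ?thesis using RH_TR s(2) by auto
    qed
  qed
  have "\<phi> i t \<in> br i" "\<phi> i 1 \<in> br i" using t by auto
  then show ?thesis using rr_connected2[OF K K2] by blast
qed

lemma br_rr: "i \<in> \<Lambda> \<Longrightarrow> t \<in> {0..1} \<Longrightarrow> 0 \<le> rr (\<phi> i t) \<and> rr (\<phi> i t) < 1"
proof -
  assume i: "i \<in> \<Lambda>" and t: "t \<in> {0..1}"
  have "rr (\<phi> i t) = rr (\<phi> i 1)" by (rule rr_br[OF i t])
  moreover have "0 \<le> rr (\<phi> i 1) \<and> rr (\<phi> i 1) < 1" using phi_pos[OF i, of 1] by simp
  ultimately show ?thesis by simp
qed

lemma br_X: assumes i: "i \<in> \<Lambda>" shows "br i \<subseteq> X"
proof
  fix y assume y: "y \<in> br i"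
  then obtain t where t: "t \<in> {0..1}" "y = \<phi> i t" by auto
  have "\<phi> i ` {0<..1} \<subseteq> tsp - TRs" using phi_pos[OF i] by blast
  then have "br i \<subseteq> T closure_of (tsp - TRs)"
    using br_closure[OF i] closure_of_mono by metis
  then show "y \<in> X" unfolding Xset_def using t br_rr[OF i t(1)] y by auto
qed

end

context LG begin

definition seg :: "'a set \<Rightarrow> 'i \<Rightarrow> real \<Rightarrow> real \<Rightarrow> bool" where
  "seg A i a b \<longleftrightarrow> i \<in> \<Lambda> \<and> 0 \<le> a \<and> a \<le> b \<and> b \<le> 1 \<and> A = \<phi> i ` {a..b}"

lemma P_fin: "finite P"
  using bp by (simp add: basic_partition_def)

lemma P_disj: "A \<in> P \<Longrightarrow> B \<in> P \<Longrightarrow> A \<noteq> B \<Longrightarrow> A \<inter> B = {}"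
  using bp by (auto simp: basic_partition_def pairwise_def disjnt_def)

lemma P_seg: assumes "A \<in> P" shows "\<exists>i a b. seg A i a b"
proof -
  have "\<exists>i\<in>\<Lambda>. \<exists>a b. 0 \<le> a \<and> a \<le> b \<and> b \<le> 1 \<and> A = \<phi> i ` {a..b}"
    using bp assms unfolding basic_partition_def by blast
  then show ?thesis unfolding seg_def by blast
qed

lemma P_lab: "A \<in> P \<Longrightarrow> lab A \<in> \<Lambda>"
  using bp by (simp add: basic_partition_def)

lemma P_img: "A \<in> P \<Longrightarrow> F ` A \<subseteq> (sh (p A) ` br (lab A)) \<union> IT"
  using bp by (simp add: basic_partition_def)

lemma P_min: "A \<in> P \<Longrightarrow> F (pmin \<Lambda> \<phi> A) = sh (p A) (\<phi> (lab A) 0)"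
  using bp by (simp add: basic_partition_def)

lemma P_out: "x \<in> X \<Longrightarrow> x \<notin> \<Union>P \<Longrightarrow> F x \<notin> zsh_set T \<tau> X"
  using bp unfolding basic_partition_def by blast

lemma seg_br: "seg A i a b \<Longrightarrow> A \<subseteq> br i"
  by (auto simp: seg_def)

lemma seg_unique:
  assumes s1: "seg A i a b" and s2: "seg A j c d"
  shows "i = j \<and> a = c \<and> b = d"
proof -
  have ij: "i = j"
  proof (rule ccontr)
    assume ne: "i \<noteq> j"
    have "\<phi> i a \<in> A" using s1 by (auto simp: seg_def)
    then have "\<phi> i a \<in> br i \<inter> br j" using seg_br[OF s1] seg_br[OF s2] by blast
    moreover have "i \<in> \<Lambda>" "j \<in> \<Lambda>" using s1 s2 by (auto simp: seg_def)
    ultimately show False using br_disj ne by blast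
  qed
  have "\<phi> i ` {a..b} = \<phi> i ` {c..d}" using s1 s2 ij by (simp add: seg_def)
  moreover have "{a..b} \<subseteq> {0..1}" "{c..d} \<subseteq> {0..1}" using s1 s2 by (auto simp: seg_def)
  ultimately have "{a..b} = {c..d}"
    using inj_on_image_eq_iff[OF phi_inj] s1 by (auto simp: seg_def)
  then have "a = c \<and> b = d" using s1 s2 by (simp add: seg_def)
  then show ?thesis using ij by simp
qed

definition "bi A = (THE i. \<exists>a b. seg A i a b)"
definition "lo A = (THE a. \<exists>i b. seg A i a b)"
definition "hi A = (THE b. \<exists>i a. seg A i a b)"

lemma seg_P: assumes "A \<in> P" shows "seg A (bi A) (lo A) (hi A)"
proof -
  obtain i a b where s: "seg A i a b" using P_seg[OF assms] by blast
  have "bi A = i" unfolding bi_def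
    by (rule the_equality) (use s seg_unique in blast)+
  moreover have "lo A = a" unfolding lo_def
    by (rule the_equality) (use s seg_unique in blast)+
  moreover have "hi A = b" unfolding hi_def
    by (rule the_equality) (use s seg_unique in blast)+
  ultimately show ?thesis using s by simp
qed

lemma seg_P_eq: "A \<in> P \<Longrightarrow> seg A i a b \<Longrightarrow> i = bi A \<and> a = lo A \<and> b = hi A"
  using seg_P seg_unique by blast

lemma P_bi: "A \<in> P \<Longrightarrow> bi A \<in> \<Lambda>"
  using seg_P by (simp add: seg_def)

lemma P_eq: "A \<in> P \<Longrightarrow> A = \<phi> (bi A) ` {lo A..hi A}"
  using seg_P by (simp add: seg_def)

lemma P_lohi: "A \<in> P \<Longrightarrow> 0 \<le> lo A \<and> lo A \<le> hi A \<and> hi A \<le> 1"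
  using seg_P by (simp add: seg_def)

lemma P_br: "A \<in> P \<Longrightarrow> A \<subseteq> br (bi A)"
  using seg_P seg_br by blast

lemma P_X: "A \<in> P \<Longrightarrow> A \<subseteq> X"
  using P_br br_X P_bi by blast

lemma P_top: "A \<in> P \<Longrightarrow> A \<subseteq> tsp"
  using P_X X_top by blast

lemma pmin_P: assumes "A \<in> P" shows "pmin \<Lambda> \<phi> A = \<phi> (bi A) (lo A)"
proof -
  have s: "seg A (bi A) (lo A) (hi A)" using seg_P[OF assms] .
  show ?thesis unfolding pmin_def
  proof (rule the_equality)
    show "\<exists>i\<in>\<Lambda>. \<exists>a b. 0 \<le> a \<and> a \<le> b \<and> b \<le> 1 \<and> A = \<phi> i ` {a..b} \<and> \<phi> (bi A) (lo A) = \<phi> i a"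
      using s by (auto simp: seg_def)
  next
    fix y assume "\<exists>i\<in>\<Lambda>. \<exists>a b. 0 \<le> a \<and> a \<le> b \<and> b \<le> 1 \<and> A = \<phi> i ` {a..b} \<and> y = \<phi> i a"
    then obtain i a b where "seg A i a b" "y = \<phi> i a" by (auto simp: seg_def)
    then show "y = \<phi> (bi A) (lo A)" using seg_P_eq[OF assms] by blast
  qed
qed

definition G :: "'a set \<Rightarrow> 'a \<Rightarrow> 'a" where
  "G A z = sh (- p A) (F z)"

lemma G_top: "z \<in> tsp \<Longrightarrow> G A z \<in> tsp"
  by (simp add: G_def F_top sh_top)

lemma G_cont: "continuous_map T T (G A)"
proof -
  have "continuous_map T T (sh (- p A) \<circ> F)"
    using continuous_map_compose[OF cF homeomorphic_imp_continuous_map[OF sh_hom]] .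
  moreover have "G A = sh (- p A) \<circ> F" by (rule ext) (simp add: G_def)
  ultimately show ?thesis by simp
qed

lemma G_img: assumes "A \<in> P" "z \<in> A" shows "G A z \<in> br (lab A) \<union> IT"
proof -
  have "F z \<in> (sh (p A) ` br (lab A)) \<union> IT" using P_img[OF assms(1)] assms(2) by blast
  then consider "F z \<in> sh (p A) ` br (lab A)" | "F z \<in> IT" by blast
  moreover have zt: "z \<in> tsp" using P_top assms by blast
  ultimately show ?thesis
  proof cases
    assume "F z \<in> sh (p A) ` br (lab A)"
    then obtain y where y: "y \<in> br (lab A)" "F z = sh (p A) y" by blast
    then have "y \<in> tsp" using br_top P_lab assms by blast
    then show ?thesis using y by (simp add: G_def sh_add)
  next
    assume "F z \<in> IT"
    then show ?thesis using sh_IT F_top zt by (simp add: G_def)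
  qed
qed

lemma G_min: assumes "A \<in> P" shows "G A (\<phi> (bi A) (lo A)) = \<phi> (lab A) 0"
proof -
  have "\<phi> (lab A) 0 \<in> br (lab A)" by simp
  then have "\<phi> (lab A) 0 \<in> tsp" using br_top[OF P_lab[OF assms]] by blast
  then show ?thesis using P_min[OF assms] pmin_P[OF assms] by (simp add: G_def sh_add)
qed

lemma G_X:
  assumes "A \<in> P" "z \<in> A" "sh m (F z) \<in> X"
  shows "sh m (F z) = G A z \<and> G A z \<in> br (lab A)"
proof -
  have zt: "z \<in> tsp" using P_top assms by blast
  have "F z \<in> (sh (p A) ` br (lab A)) \<union> IT" using P_img[OF assms(1)] assms(2) by blast
  moreover have "F z \<notin> IT"
  proof
    assume "F z \<in> IT" then have "sh m (F z) \<in> IT" using sh_IT F_top zt by blast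
    then show False using assms(3) X_IT by blast
  qed
  ultimately obtain y where y: "y \<in> br (lab A)" "F z = sh (p A) y" by blast
  then have yX: "y \<in> X" using br_X P_lab assms by blast
  then have yt: "y \<in> tsp" using X_top by blast
  have "sh (m + p A) y \<in> X" using assms(3) y yt by (simp add: sh_add)
  then have "sh (m + p A) y = sh 0 (sh (m + p A) y)" by simp
  then have "m + p A = 0" using shX_unique[OF yX, of "sh (m + p A) y" "m + p A" 0] \<open>sh (m + p A) y \<in> X\<close> by simp
  then have "m = - p A" by simp
  then show ?thesis using y yt by (simp add: G_def sh_add)
qed

lemma zsh_set_sh: assumes "S \<subseteq> tsp" "z \<in> zsh_set T \<tau> S" shows "sh k z \<in> zsh_set T \<tau> S"
proof -
  obtain m a where a: "a \<in> S" "z = sh m a" using assms(2) unfolding zsh_set_def by blast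
  then have "sh k z = sh (k + m) a" using sh_add assms(1) by blast
  then show ?thesis using a(1) unfolding zsh_set_def by blast
qed

lemma zsh_set_X: assumes S: "S \<subseteq> X" shows "zsh_set T \<tau> S \<inter> X = S"
proof
  show "zsh_set T \<tau> S \<inter> X \<subseteq> S"
  proof
    fix z assume z: "z \<in> zsh_set T \<tau> S \<inter> X"
    then obtain m a where a: "a \<in> S" "z = sh m a" unfolding zsh_set_def by blast
    have aX: "a \<in> X" using a(1) S by blast
    have zX: "z \<in> X" using z by blast
    have "sh m a = sh 0 z" using a(2) by simp
    then have "m = 0" by (rule shX_unique[OF aX zX])
    then show "z \<in> S" using a by simp
  qed
  show "S \<subseteq> zsh_set T \<tau> S \<inter> X"
  proof
    fix z assume "z \<in> S"
    moreover have "z = sh 0 z" by simp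
    ultimately have "z \<in> zsh_set T \<tau> S" unfolding zsh_set_def by blast
    then show "z \<in> zsh_set T \<tau> S \<inter> X" using S \<open>z \<in> S\<close> by blast
  qed
qed

definition Sw :: "'a set list \<Rightarrow> 'a set" where
  "Sw w = {x\<in>tsp. \<forall>i<length w. (F ^^ i) x \<in> zsh_set T \<tau> (w ! i)}"

lemma cyl_Sw: "cyl T h \<tau> F w = (F ^^ (length w - 1)) ` Sw w \<inter> X"
  by (simp add: cyl_def Sw_def)

lemma words_P: "w \<in> words P \<Longrightarrow> i < length w \<Longrightarrow> w ! i \<in> P"
  by (auto simp: words_def)

lemma Sw_sh: assumes "w \<in> words P" "x \<in> Sw w" shows "sh k x \<in> Sw w"
proof -
  have xt: "x \<in> tsp" using assms by (simp add: Sw_def)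
  { fix i assume i: "i < length w"
    then have "(F ^^ i) x \<in> zsh_set T \<tau> (w ! i)" using assms by (simp add: Sw_def)
    then have "sh k ((F ^^ i) x) \<in> zsh_set T \<tau> (w ! i)"
      using zsh_set_sh P_top words_P[OF assms(1) i] by blast
    then have "(F ^^ i) (sh k x) \<in> zsh_set T \<tau> (w ! i)" using Fpow_sh xt by simp }
  then show ?thesis using xt sh_top by (simp add: Sw_def)
qed

lemma cyl_sub: assumes "w \<in> words P" shows "cyl T h \<tau> F w \<subseteq> last w"
proof
  fix y assume "y \<in> cyl T h \<tau> F w"
  then obtain x where x: "x \<in> Sw w" "y = (F ^^ (length w - 1)) x" "y \<in> X"
    unfolding cyl_Sw by blast
  have lw: "length w - 1 < length w" "last w = w ! (length w - 1)"
    using assms by (auto simp: words_def last_conv_nth)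
  then have "y \<in> zsh_set T \<tau> (last w)" using x by (simp add: Sw_def)
  moreover have "last w \<in> P" using words_P[OF assms] lw by simp
  ultimately show "y \<in> last w" using zsh_set_X[OF P_X] x by blast
qed

lemma cyl_single: assumes "A \<in> P" shows "cyl T h \<tau> F [A] = A"
proof -
  have "Sw [A] = tsp \<inter> zsh_set T \<tau> A" by (auto simp: Sw_def)
  then have "cyl T h \<tau> F [A] = tsp \<inter> zsh_set T \<tau> A \<inter> X" by (simp add: cyl_Sw)
  also have "\<dots> = A" using zsh_set_X[OF P_X[OF assms]] X_top by blast
  finally show ?thesis .
qed

lemma Sw_img:
  assumes u: "u \<in> words P"
  shows "(F ^^ (length u - 1)) ` Sw u = {sh m y | m y. y \<in> cyl T h \<tau> F u}"
proof
  let ?n = "length u - 1"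
  have lw: "?n < length u" "last u = u ! ?n" using u by (auto simp: words_def last_conv_nth)
  have lP: "last u \<in> P" using words_P[OF u] lw by simp
  show "(F ^^ ?n) ` Sw u \<subseteq> {sh m y | m y. y \<in> cyl T h \<tau> F u}"
  proof
    fix z assume "z \<in> (F ^^ ?n) ` Sw u"
    then obtain x where x: "x \<in> Sw u" "z = (F ^^ ?n) x" by blast
    have xt: "x \<in> tsp" using x by (simp add: Sw_def)
    have "z \<in> zsh_set T \<tau> (last u)" using x lw by (simp add: Sw_def)
    then obtain m a where a: "a \<in> last u" "z = sh m a" unfolding zsh_set_def by blast
    have at: "a \<in> tsp" using P_top lP a by blast
    have "sh (-m) x \<in> Sw u" using Sw_sh[OF u x(1)] .
    moreover have "(F ^^ ?n) (sh (-m) x) = a"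
      using Fpow_sh xt x a at sh_inv by (metis add.inverse_inverse)
    moreover have "a \<in> X" using P_X lP a by blast
    ultimately have "a \<in> cyl T h \<tau> F u" unfolding cyl_Sw by (metis IntI image_eqI)
    then show "z \<in> {sh m y | m y. y \<in> cyl T h \<tau> F u}" using a by blast
  qed
  show "{sh m y | m y. y \<in> cyl T h \<tau> F u} \<subseteq> (F ^^ ?n) ` Sw u"
  proof
    fix z assume "z \<in> {sh m y | m y. y \<in> cyl T h \<tau> F u}"
    then obtain m y where y: "y \<in> cyl T h \<tau> F u" "z = sh m y" by blast
    then obtain x where x: "x \<in> Sw u" "y = (F ^^ ?n) x" unfolding cyl_Sw by blast
    have xt: "x \<in> tsp" using x by (simp add: Sw_def)
    have "z = (F ^^ ?n) (sh m x)" using y x Fpow_sh xt by simp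
    then show "z \<in> (F ^^ ?n) ` Sw u" using Sw_sh[OF u x(1)] by blast
  qed
qed

end

context LG begin

abbreviation "cy \<equiv> cyl T h \<tau> F"

lemma cyl_snoc:
  assumes u: "u \<in> words P" and B: "B \<in> P"
  shows "cy (u @ [B]) = B \<inter> G (last u) ` cy u"
proof
  let ?n = "length u - 1"
  have lu: "?n < length u" "last u = u ! ?n" "length u = Suc ?n" using u by (auto simp: words_def last_conv_nth)
  have A: "last u \<in> P" using words_P[OF u] lu by simp
  have uB: "u @ [B] \<in> words P" using u B by (auto simp: words_def)
  have SwB: "Sw (u @ [B]) = {x \<in> Sw u. (F ^^ Suc ?n) x \<in> zsh_set T \<tau> B}"
  proof -
    have "\<And>x. (\<forall>i<length (u @ [B]). (F ^^ i) x \<in> zsh_set T \<tau> ((u @ [B]) ! i)) \<longleftrightarrow>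
       (\<forall>i<length u. (F ^^ i) x \<in> zsh_set T \<tau> (u ! i)) \<and> (F ^^ Suc ?n) x \<in> zsh_set T \<tau> B"
      using lu by (auto simp: nth_append less_Suc_eq)
    then show ?thesis by (auto simp: Sw_def)
  qed
  have lenB: "length (u @ [B]) - 1 = Suc ?n" using lu by simp
  show "cy (u @ [B]) \<subseteq> B \<inter> G (last u) ` cy u"
  proof
    fix y assume "y \<in> cy (u @ [B])"
    then obtain x where x: "x \<in> Sw u" "(F ^^ Suc ?n) x \<in> zsh_set T \<tau> B" "y = (F ^^ Suc ?n) x" "y \<in> X"
      unfolding cyl_Sw lenB SwB by blast
    have "(F ^^ ?n) x \<in> (F ^^ ?n) ` Sw u" using x by blast
    then obtain m z where z: "z \<in> cy u" "(F ^^ ?n) x = sh m z" using Sw_img[OF u] by blast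
    have zA: "z \<in> last u" using cyl_sub[OF u] z by blast
    have zt: "z \<in> tsp" using P_top A zA by blast
    have y1: "y = sh m (F z)" using x z zt by (simp add: F_sh)
    have "y \<in> B" using zsh_set_X[OF P_X[OF B]] x by blast
    moreover have "y = G (last u) z" using G_X[OF A zA] y1 x(4) by simp
    ultimately show "y \<in> B \<inter> G (last u) ` cy u" using z by blast
  qed
  show "B \<inter> G (last u) ` cy u \<subseteq> cy (u @ [B])"
  proof
    fix y assume y: "y \<in> B \<inter> G (last u) ` cy u"
    then obtain z where z: "z \<in> cy u" "y = G (last u) z" by blast
    then obtain x where x: "x \<in> Sw u" "z = (F ^^ ?n) x" unfolding cyl_Sw by blast
    have xt: "x \<in> tsp" using x by (simp add: Sw_def)
    let ?x = "sh (- p (last u)) x"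
    have x1: "?x \<in> Sw u" using Sw_sh[OF u x(1)] .
    have "(F ^^ Suc ?n) ?x = y"
      using xt z x by (simp add: Fpow_sh F_sh Fpow_top G_def)
    moreover have "y \<in> zsh_set T \<tau> B"
      using y zsh_set_X[OF P_X[OF B]] by blast
    moreover have "y \<in> X" using y P_X[OF B] by blast
    ultimately show "y \<in> cy (u @ [B])"
      unfolding cyl_Sw lenB SwB using x1 by (metis (mono_tags, lifting) IntI image_eqI mem_Collect_eq)
  qed
qed

lemma cyl_append_dep:
  assumes u1: "u1 \<in> words P" and u2: "u2 \<in> words P"
    and c: "cy u1 = cy u2" and l: "last u1 = last u2" and s: "set s \<subseteq> P"
  shows "cy (u1 @ s) = cy (u2 @ s) \<and> last (u1 @ s) = last (u2 @ s)"
  using s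
proof (induction s rule: rev_induct)
  case Nil then show ?case using c l by simp
next
  case (snoc B s)
  then have IH: "cy (u1 @ s) = cy (u2 @ s)" "last (u1 @ s) = last (u2 @ s)" and B: "B \<in> P" by auto
  have w1: "u1 @ s \<in> words P" "u2 @ s \<in> words P" using u1 u2 snoc.prems by (auto simp: words_def)
  have "cy (u1 @ s @ [B]) = cy (u2 @ s @ [B])"
    using cyl_snoc[OF w1(1) B] cyl_snoc[OF w1(2) B] IH by simp
  then show ?case by simp
qed

lemma simrel_cyl:
  assumes w: "w \<in> words P" and v: "v \<in> words P" and r: "simrel T h \<tau> F w v"
  shows "cy w = cy v"
proof -
  obtain k where k: "k \<le> min (length w - 1) (length v - 1)"
    and suf: "\<forall>i\<le>k. w ! (length w - 1 - i) = v ! (length v - 1 - i)"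
    and c1: "cy (take (length w - k) w) = w ! (length w - 1 - k)"
    and e: "w ! (length w - 1 - k) = v ! (length v - 1 - k)"
    and c2: "cy (take (length v - k) v) = v ! (length v - 1 - k)"
    using r by (auto simp: simrel_def)
  have lw: "length w \<ge> 1" "length v \<ge> 1" using w v by (auto simp: words_def Suc_le_eq)
  define j where "j = length w - k"
  define j' where "j' = length v - k"
  have j: "j \<ge> 1" "j' \<ge> 1" "j \<le> length w" "j' \<le> length v" using k lw by (auto simp: j_def j'_def)
  define w1 where "w1 = take j w"
  define v1 where "v1 = take j' v"
  have dw: "drop j w = drop j' v"
  proof (rule nth_equalityI)
    show "length (drop j w) = length (drop j' v)" using j k lw by (simp add: j_def j'_def)
    fix i assume "i < length (drop j w)"
    then have i: "i < k" using j lw k by (simp add: j_def)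
    have "w ! (length w - 1 - (k - 1 - i)) = v ! (length v - 1 - (k - 1 - i))"
      by (rule suf[rule_format]) simp
    moreover have "length w - 1 - (k - 1 - i) = j + i" "length v - 1 - (k - 1 - i) = j' + i"
      using i k lw unfolding j_def j'_def by linarith+
    ultimately show "drop j w ! i = drop j' v ! i" using j by simp
  qed
  have w1w: "w1 \<in> words P" "v1 \<in> words P"
    using w v j by (auto simp: words_def w1_def v1_def dest: in_set_takeD)
  have tn: "take j w \<noteq> []" "take j' v \<noteq> []" using j lw by auto
  have lastw1: "last w1 = w ! (j - 1)" "last v1 = v ! (j' - 1)"
    unfolding w1_def v1_def using last_conv_nth[OF tn(1)] last_conv_nth[OF tn(2)] j
    by (simp_all add: min_def)
  have jj: "length w - 1 - k = j - 1" "length v - 1 - k = j' - 1" by (simp_all add: j_def j'_def)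
  have "cy w1 = cy v1" "last w1 = last v1"
    using c1 c2 e lastw1 jj by (simp_all add: w1_def v1_def j_def j'_def)
  moreover have "set (drop j w) \<subseteq> P" using w by (auto simp: words_def dest: in_set_dropD)
  ultimately have "cy (w1 @ drop j w) = cy (v1 @ drop j w)"
    using cyl_append_dep[OF w1w] by blast
  moreover have "w1 @ drop j w = w" by (simp add: w1_def)
  moreover have "v1 @ drop j w = v" using dw by (simp add: v1_def)
  ultimately show ?thesis by simp
qed

abbreviation "sq \<equiv> simeq T h \<tau> F P"
abbreviation "cl \<equiv> cls T h \<tau> F P"

lemma simeq_cyl:
  assumes "sq w v" and w: "w \<in> words P"
  shows "v \<in> words P \<and> cy v = cy w"
  using assms(1) unfolding simeq_def
proof (induction rule: equivclp_induct)
  case base then show ?case using w by simp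
next
  case (step y z)
  then show ?case using simrel_cyl by metis
qed

lemma cls_mem: "w \<in> words P \<Longrightarrow> w \<in> cl w"
  by (simp add: cls_def simeq_def)

lemma cls_cyl: "w \<in> words P \<Longrightarrow> v \<in> cl w \<Longrightarrow> cy v = cy w"
  using simeq_cyl by (auto simp: cls_def)

lemma cls_eq_cyl: "w \<in> words P \<Longrightarrow> v \<in> words P \<Longrightarrow> cl w = cl v \<Longrightarrow> cy w = cy v"
  using cls_mem cls_cyl by metis

lemma simeq_cls: "sq w v \<Longrightarrow> cl w = cl v"
proof -
  assume a: "sq w v"
  have "\<And>u. sq w u \<longleftrightarrow> sq v u"
    using a unfolding simeq_def by (meson equivclp_sym equivclp_trans)
  then show ?thesis by (simp add: cls_def)
qed

lemma vcyl_cls: assumes "w \<in> words P" shows "vcyl T h \<tau> F (cl w) = cy w"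
proof -
  have "\<exists>v. v \<in> cl w" using cls_mem[OF assms] by blast
  then have "(SOME v. v \<in> cl w) \<in> cl w" by (rule someI_ex)
  then show ?thesis using cls_cyl[OF assms] by (simp add: vcyl_def)
qed

definition velt :: "'a set list set \<Rightarrow> 'a set" where
  "velt \<alpha> = (THE A. A \<in> P \<and> vcyl T h \<tau> F \<alpha> \<subseteq> A)"

lemma velt_cls:
  assumes w: "w \<in> words P" and ne: "cy w \<noteq> {}"
  shows "velt (cl w) = last w"
proof -
  have lP: "last w \<in> P" using w by (auto simp: words_def dest: last_in_set)
  show ?thesis unfolding velt_def vcyl_cls[OF w]
  proof (rule the_equality)
    show "last w \<in> P \<and> cy w \<subseteq> last w" using lP cyl_sub[OF w] by simp
    fix A assume "A \<in> P \<and> cy w \<subseteq> A"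
    then show "A = last w" using P_disj[of A "last w"] lP cyl_sub[OF w] ne by blast
  qed
qed

lemma vweight_velt: "vweight T h \<tau> F P p \<alpha> = p (velt \<alpha>)"
  by (simp add: vweight_def velt_def)

lemma vertex_cls: "\<alpha> \<in> vertices T h \<tau> F P \<Longrightarrow> \<exists>w. w \<in> words P \<and> cy w \<noteq> {} \<and> \<alpha> = cl w"
  by (auto simp: vertices_def)

lemma arrow_rep:
  assumes "arrow T h \<tau> F P \<alpha> \<beta>"
  shows "\<exists>w A. w \<in> words P \<and> A \<in> P \<and> \<alpha> = cl w \<and> \<beta> = cl (w @ [A]) \<and> cy w \<noteq> {} \<and> cy (w @ [A]) \<noteq> {}"
proof -
  obtain w A where wA: "w \<in> words P" "A \<in> P" "\<alpha> = cl w" "\<beta> = cl (w @ [A])"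
    using assms by (auto simp: arrow_def)
  have wA': "w @ [A] \<in> words P" using wA by (auto simp: words_def)
  have vv: "\<alpha> \<in> vertices T h \<tau> F P" "\<beta> \<in> vertices T h \<tau> F P"
    using assms by (simp_all add: arrow_def)
  obtain w0 where w0: "w0 \<in> words P" "cy w0 \<noteq> {}" "\<alpha> = cl w0"
    using vertex_cls[OF vv(1)] by blast
  obtain w1 where w1: "w1 \<in> words P" "cy w1 \<noteq> {}" "\<beta> = cl w1"
    using vertex_cls[OF vv(2)] by blast
  have "cy w = cy w0" using cls_eq_cyl[OF wA(1) w0(1)] wA w0 by simp
  moreover have "cy (w @ [A]) = cy w1" using cls_eq_cyl[OF wA' w1(1)] wA w1 by simp
  ultimately show ?thesis using wA w0 w1 by (intro exI[of _ w] exI[of _ A]) auto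
qed

lemma arrow_props:
  assumes "arrow T h \<tau> F P \<alpha> \<beta>"
  shows "velt \<alpha> \<in> P \<and> velt \<beta> \<in> P \<and> vcyl T h \<tau> F \<alpha> \<noteq> {} \<and> vcyl T h \<tau> F \<beta> \<noteq> {}
    \<and> vcyl T h \<tau> F \<alpha> \<subseteq> velt \<alpha> \<and> vcyl T h \<tau> F \<beta> \<subseteq> velt \<beta>
    \<and> vcyl T h \<tau> F \<beta> = velt \<beta> \<inter> G (velt \<alpha>) ` vcyl T h \<tau> F \<alpha>"
proof -
  obtain w A where wA: "w \<in> words P" "A \<in> P" "\<alpha> = cl w" "\<beta> = cl (w @ [A])" "cy w \<noteq> {}" "cy (w @ [A]) \<noteq> {}"
    using arrow_rep[OF assms] by blast
  have wA': "w @ [A] \<in> words P" using wA by (auto simp: words_def)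
  have lP: "last w \<in> P" using wA by (auto simp: words_def dest: last_in_set)
  have e1: "velt \<alpha> = last w" "velt \<beta> = A"
    using velt_cls[OF wA(1) wA(5)] velt_cls[OF wA' wA(6)] wA by auto
  have e2: "vcyl T h \<tau> F \<alpha> = cy w" "vcyl T h \<tau> F \<beta> = cy (w @ [A])"
    using vcyl_cls wA wA' by auto
  show ?thesis unfolding e1 e2
    using cyl_snoc[OF wA(1) wA(2)] lP wA cyl_sub[OF wA(1)] by auto
qed

end

lemma bounded_div_n:
  fixes c :: "nat \<Rightarrow> real"
  assumes "\<And>n. \<bar>c n\<bar> \<le> B"
  shows "(\<lambda>n. c n / real n) \<longlonglongrightarrow> 0"
proof (rule tendsto_sandwich[where f="\<lambda>n. - B / real n" and h="\<lambda>n. B / real n"])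
  have lim: "(\<lambda>n. B / real n) \<longlonglongrightarrow> 0"
    by (rule tendsto_divide_0[OF tendsto_const])
       (rule filterlim_at_top_imp_at_infinity[OF filterlim_real_sequentially])
  show "(\<lambda>n. B / real n) \<longlonglongrightarrow> 0" by (rule lim)
  show "(\<lambda>n. - B / real n) \<longlonglongrightarrow> 0" using tendsto_minus[OF lim] by simp
  show "\<forall>\<^sub>F n in sequentially. - B / real n \<le> c n / real n"
    using eventually_gt_at_top[of 0]
  proof (rule eventually_mono)
    fix n :: nat assume "0 < n"
    then show "- B / real n \<le> c n / real n" using assms[of n]
      by (simp add: field_simps abs_le_iff)
  qed
  show "\<forall>\<^sub>F n in sequentially. c n / real n \<le> B / real n"
    using eventually_gt_at_top[of 0]
  proof (rule eventually_mono)
    fix n :: nat assume "0 < n"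
    then show "c n / real n \<le> B / real n" using assms[of n]
      by (simp add: field_simps abs_le_iff)
  qed
qed

lemma tendsto_diff_cancel:
  fixes a b :: "nat \<Rightarrow> real"
  assumes "(\<lambda>n. a n - b n) \<longlonglongrightarrow> 0" "a \<longlonglongrightarrow> r"
  shows "b \<longlonglongrightarrow> r"
proof -
  have "(\<lambda>n. a n - (a n - b n)) \<longlonglongrightarrow> r - 0" using tendsto_diff[OF assms(2) assms(1)] .
  then show ?thesis by simp
qed

context LG begin

lemma G_X2:
  assumes A: "A \<in> P" and z: "z \<in> A" and k: "sh k (F z) \<in> X"
  shows "k = - p A"
proof -
  have g: "sh k (F z) = G A z" "G A z \<in> br (lab A)" using G_X[OF A z k] by auto
  have gX: "G A z \<in> X" using g br_X P_lab A by blast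
  have zt: "z \<in> tsp" using P_top A z by blast
  have Ft: "F z \<in> tsp" using F_top zt by blast
  have e1: "F z = sh (-k) (G A z)" using g(1) Ft sh_inv by (metis add.inverse_inverse)
  have e2: "F z = sh (p A) (G A z)" using Ft sh_add by (simp add: G_def)
  have "sh (-k) (G A z) = sh (p A) (G A z)" using e1 e2 by simp
  then have "-k = p A" by (rule shX_unique[OF gX gX])
  then show ?thesis by simp
qed

abbreviation "XI \<equiv> Xinf T h \<tau> F"

lemma Xinf_X: "x \<in> XI \<Longrightarrow> x \<in> X"
  by (simp add: Xinf_def)

lemma Xinf_step:
  assumes x: "x \<in> XI"
  shows "\<exists>A m y. A \<in> P \<and> y \<in> A \<and> (F ^^ n) x = sh m y"
proof -
  have xt: "x \<in> tsp" using x Xinf_X X_top by blast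
  have "(F ^^ n) x \<in> zsh_set T \<tau> X" using x by (simp add: Xinf_def)
  then obtain m y where y: "y \<in> X" "(F ^^ n) x = sh m y" unfolding zsh_set_def by blast
  have "(F ^^ Suc n) x \<in> zsh_set T \<tau> X" using x unfolding Xinf_def by blast
  then have "sh (-m) ((F ^^ Suc n) x) \<in> zsh_set T \<tau> X"
    using zsh_set_sh X_top by blast
  moreover have "sh (-m) ((F ^^ Suc n) x) = F y"
    using y X_top F_sh by (simp add: sh_add F_top)
  ultimately have "F y \<in> zsh_set T \<tau> X" by simp
  then have "y \<in> \<Union>P" using P_out y by blast
  then show ?thesis using y by blast
qed

lemma rot_Xinf_sub:
  assumes x: "x \<in> XI" and r: "has_rot T h F x r"
  shows "r \<in> Rot_graph T h \<tau> F P p"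
proof -
  have "\<forall>n. \<exists>A m y. A \<in> P \<and> y \<in> A \<and> (F ^^ n) x = sh m y" using Xinf_step[OF x] by blast
  then obtain A m y where Amy: "\<And>n. A n \<in> P" "\<And>n. y n \<in> A n" "\<And>n. (F ^^ n) x = sh (m n) (y n)"
    by metis
  have xX: "x \<in> X" using Xinf_X x by blast
  have xt: "x \<in> tsp" using xX X_top by blast
  have yX: "\<And>n. y n \<in> X" using Amy P_X by blast
  have yt: "\<And>n. y n \<in> tsp" using yX X_top by blast
  have m0: "m 0 = 0"
  proof -
    have "sh (m 0) (y 0) = sh 0 x" using Amy(3)[of 0] by simp
    then show ?thesis using shX_unique[OF yX xX] by blast
  qed
  have y0: "y 0 = x" using Amy(3)[of 0] m0 by simp
  have step: "\<And>n. m (Suc n) = m n + p (A n) \<and> y (Suc n) = G (A n) (y n)"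
  proof -
    fix n
    have "sh (m (Suc n)) (y (Suc n)) = sh (m n) (F (y n))"
      using Amy(3)[of "Suc n"] Amy(3)[of n] yt by (simp add: F_sh)
    then have "y (Suc n) = sh (- m (Suc n)) (sh (m n) (F (y n)))"
      using sh_inv yt by metis
    also have "\<dots> = sh (m n - m (Suc n)) (F (y n))" using yt F_top sh_add by simp
    finally have e: "y (Suc n) = sh (m n - m (Suc n)) (F (y n))" .
    then have "sh (m n - m (Suc n)) (F (y n)) \<in> X" using yX by metis
    then have "m n - m (Suc n) = - p (A n)" "sh (m n - m (Suc n)) (F (y n)) = G (A n) (y n)"
      using G_X2[OF Amy(1) Amy(2)] G_X[OF Amy(1) Amy(2)] by auto
    then show "m (Suc n) = m n + p (A n) \<and> y (Suc n) = G (A n) (y n)" using e by simp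
  qed
  have msum: "\<And>n. m n = (\<Sum>k<n. p (A k))"
  proof -
    fix n show "m n = (\<Sum>k<n. p (A k))"
      by (induction n) (simp_all add: m0 step)
  qed
  define w where "w n = map A [0..<Suc n]" for n
  have ww: "\<And>n. w n \<in> words P" using Amy(1) by (auto simp: w_def words_def)
  have wsnoc: "\<And>n. w (Suc n) = w n @ [A (Suc n)]" by (simp add: w_def)
  have wlast: "\<And>n. last (w n) = A n" by (simp add: w_def)
  have wlen: "\<And>n. length (w n) = Suc n" by (simp add: w_def)
  have wnth: "\<And>n i. i < Suc n \<Longrightarrow> w n ! i = A i" by (simp add: w_def del: upt_Suc)
  have ycyl: "\<And>n. y n \<in> cy (w n)"
  proof -
    fix n
    let ?x = "sh (- m n) x"
    have "?x \<in> Sw (w n)"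
    proof -
      have "?x \<in> tsp" using xt sh_top by blast
      moreover have "\<forall>i<length (w n). (F ^^ i) ?x \<in> zsh_set T \<tau> (w n ! i)"
      proof (intro allI impI)
        fix i assume i: "i < length (w n)"
        have "(F ^^ i) ?x = sh (- m n + m i) (y i)" using Fpow_sh xt Amy(3) yt sh_add by simp
        then show "(F ^^ i) ?x \<in> zsh_set T \<tau> (w n ! i)"
          using wnth[of i n] i wlen Amy(2)[of i] unfolding zsh_set_def by auto
      qed
      ultimately show ?thesis by (simp add: Sw_def)
    qed
    moreover have "(F ^^ (length (w n) - 1)) ?x = y n"
      using wlen Fpow_sh xt Amy(3) yt sh_inv by (simp add: sh_add)
    ultimately show "y n \<in> cy (w n)" unfolding cyl_Sw using yX by (metis IntI image_eqI)
  qed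
  define \<alpha> where "\<alpha> n = cl (w n)" for n
  have vert: "\<And>n. \<alpha> n \<in> vertices T h \<tau> F P"
    using ww ycyl unfolding vertices_def \<alpha>_def by blast
  have path: "inf_path T h \<tau> F P \<alpha>"
    unfolding inf_path_def arrow_def
  proof
    fix n show "\<alpha> n \<in> vertices T h \<tau> F P \<and> \<alpha> (Suc n) \<in> vertices T h \<tau> F P \<and>
         (\<exists>wa Aa. wa \<in> words P \<and> Aa \<in> P \<and> \<alpha> n = cl wa \<and> \<alpha> (Suc n) = cl (wa @ [Aa]))"
      using vert ww Amy(1) wsnoc unfolding \<alpha>_def by metis
  qed
  have wt: "\<And>n. vweight T h \<tau> F P p (\<alpha> n) = p (A n)"
  proof -
    fix n have "cy (w n) \<noteq> {}" using ycyl by blast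
    then show "vweight T h \<tau> F P p (\<alpha> n) = p (A n)"
      using velt_cls[OF ww] wlast by (simp add: vweight_velt \<alpha>_def)
  qed
  have rrF: "\<And>n. rr ((F ^^ n) x) = rr (y n) + of_int (m n)"
    using Amy(3) rr_sh yt by simp
  have "(\<lambda>n. (rr ((F ^^ n) x) - rr x) / real n - real_of_int (\<Sum>k<n. vweight T h \<tau> F P p (\<alpha> k)) / real n)
        \<longlonglongrightarrow> 0"
  proof -
    have "\<And>n. (rr ((F ^^ n) x) - rr x) / real n - real_of_int (\<Sum>k<n. vweight T h \<tau> F P p (\<alpha> k)) / real n
       = (rr (y n) - rr (y 0)) / real n"
    proof -
      fix n
      have e: "rr ((F ^^ n) x) - rr x - real_of_int (\<Sum>k<n. vweight T h \<tau> F P p (\<alpha> k)) = rr (y n) - rr (y 0)"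
        using rrF[of n] wt msum[of n] y0 by simp
      show "(rr ((F ^^ n) x) - rr x) / real n - real_of_int (\<Sum>k<n. vweight T h \<tau> F P p (\<alpha> k)) / real n
       = (rr (y n) - rr (y 0)) / real n"
        unfolding diff_divide_distrib[symmetric] e ..
    qed
    moreover have "\<And>n. \<bar>rr (y n) - rr (y 0)\<bar> \<le> 1" using X_rr yX
      by (smt (verit))
    ultimately show ?thesis using bounded_div_n[of "\<lambda>n. rr (y n) - rr (y 0)" 1] by simp
  qed
  then have "path_rot T h \<tau> F P p \<alpha> r"
    using r unfolding has_rot_def path_rot_def by (rule tendsto_diff_cancel)
  then show ?thesis using path unfolding Rot_graph_def by blast
qed

end

context LG begin

lemma br_Hausdorff: assumes "i \<in> \<Lambda>" shows "Hausdorff_space (subtopology T (br i))"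
proof -
  have "top_of_set {0..(1::real)} homeomorphic_space subtopology T (br i)"
    using phi_hom[OF assms] homeomorphic_map_imp_homeomorphic_space by blast
  moreover have "Hausdorff_space (top_of_set {0..(1::real)})"
    by (simp add: Hausdorff_space_subtopology)
  ultimately show ?thesis using homeomorphic_Hausdorff_space by blast
qed

lemma compact_br_closed:
  assumes i: "i \<in> \<Lambda>" and K: "compactin T K" "K \<subseteq> br i"
  shows "closedin T K"
proof -
  have "compactin (subtopology T (br i)) K" using K by (simp add: compactin_subtopology)
  then have "closedin (subtopology T (br i)) K"
    using compactin_imp_closedin[OF br_Hausdorff[OF i]] by blast
  then show ?thesis using closedin_trans_full br_closed[OF i] by blast
qed

lemma seg_compact:
  assumes i: "i \<in> \<Lambda>" and "0 \<le> c" "d \<le> 1"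
  shows "compactin T (\<phi> i ` {c..d})"
proof -
  have "compactin (top_of_set {0..1}) {c..d}"
    using assms by (auto simp: compactin_subtopology)
  then show ?thesis using image_compactin phi_cont[OF i] by blast
qed

lemma seg_closed:
  assumes i: "i \<in> \<Lambda>" and "0 \<le> c" "d \<le> 1"
  shows "closedin T (\<phi> i ` {c..d})"
proof (rule compact_br_closed[OF i seg_compact[OF assms]])
  show "\<phi> i ` {c..d} \<subseteq> br i" using assms by auto
qed

lemma P_compact: "A \<in> P \<Longrightarrow> compactin T A"
  using seg_compact P_bi P_lohi P_eq by metis

lemma P_closed: "A \<in> P \<Longrightarrow> closedin T A"
  using seg_closed P_bi P_lohi P_eq by metis

lemma cyl_compact:
  assumes "w \<in> words P"
  shows "compactin T (cy w)"
proof -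
  have "set w \<subseteq> P" "w \<noteq> []" using assms by (auto simp: words_def)
  then show ?thesis
  proof (induction w rule: rev_induct)
    case Nil then show ?case by simp
  next
    case (snoc B u)
    show ?case
    proof (cases "u = []")
      case True
      then show ?thesis using cyl_single P_compact snoc by simp
    next
      case False
      then have u: "u \<in> words P" using snoc by (auto simp: words_def)
      have B: "B \<in> P" using snoc by simp
      have "compactin T (cy u)" using snoc.IH snoc.prems False by simp
      then have "compactin T (G (last u) ` cy u)" using image_compactin G_cont by blast
      then have "compactin T (B \<inter> G (last u) ` cy u)"
        using closed_Int_compactin P_closed[OF B] by blast
      then show ?thesis using cyl_snoc[OF u B] by simp
    qed
  qed
qed

lemma cyl_closed:
  assumes "w \<in> words P"
  shows "closedin T (cy w)"
proof -
  have "last w \<in> P" using assms by (auto simp: words_def dest: last_in_set)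
  then show ?thesis
    using compact_br_closed[OF P_bi] cyl_compact[OF assms] cyl_sub[OF assms] P_br by blast
qed

abbreviation "vc \<equiv> vcyl T h \<tau> F"

lemma vertex_compact: "\<alpha> \<in> vertices T h \<tau> F P \<Longrightarrow> compactin T (vc \<alpha>) \<and> closedin T (vc \<alpha>)"
  using vertex_cls vcyl_cls cyl_compact cyl_closed by metis

lemma G_F: "z \<in> tsp \<Longrightarrow> F z = sh (p A) (G A z)"
  by (simp add: G_def sh_add F_top)

lemma Fpow_cont: "continuous_map T T (F ^^ n)"
proof (induction n)
  case 0 then show ?case by (simp add: id_def[symmetric])
next
  case (Suc n) then show ?case
    using continuous_map_compose[OF Suc cF] by (simp only: funpow.simps(2))
qed

lemma realize_path:
  assumes path: "inf_path T h \<tau> F P \<alpha>"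
  defines "M \<equiv> \<lambda>n. (\<Sum>k<n. p (velt (\<alpha> k)))"
  shows "\<exists>x\<in>vc (\<alpha> 0). \<forall>n. (F ^^ n) x \<in> sh (M n) ` vc (\<alpha> n)"
proof -
  have ar: "\<And>n. arrow T h \<tau> F P (\<alpha> n) (\<alpha> (Suc n))" using path by (simp add: inf_path_def)
  note AP = arrow_props[OF ar]
  have vert: "\<And>n. \<alpha> n \<in> vertices T h \<tau> F P" using ar by (simp add: arrow_def)
  have ctop: "\<And>n. vc (\<alpha> n) \<subseteq> tsp" using AP P_top by blast
  have bk: "\<And>n y. y \<in> vc (\<alpha> n) \<Longrightarrow> \<exists>x\<in>vc (\<alpha> 0). (\<forall>k\<le>n. (F ^^ k) x \<in> sh (M k) ` vc (\<alpha> k)) \<and> (F ^^ n) x = sh (M n) y"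
  proof -
    fix n show "\<And>y. y \<in> vc (\<alpha> n) \<Longrightarrow> \<exists>x\<in>vc (\<alpha> 0). (\<forall>k\<le>n. (F ^^ k) x \<in> sh (M k) ` vc (\<alpha> k)) \<and> (F ^^ n) x = sh (M n) y"
    proof (induction n)
      case 0 then show ?case by (intro bexI[of _ y]) (auto simp: M_def)
    next
      case (Suc n)
      have "y \<in> G (velt (\<alpha> n)) ` vc (\<alpha> n)" using Suc.prems AP[of n] by blast
      then obtain z where z: "z \<in> vc (\<alpha> n)" "y = G (velt (\<alpha> n)) z" by blast
      obtain x where x: "x \<in> vc (\<alpha> 0)" "\<forall>k\<le>n. (F ^^ k) x \<in> sh (M k) ` vc (\<alpha> k)" "(F ^^ n) x = sh (M n) z"
        using Suc.IH[OF z(1)] by blast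
      have zt: "z \<in> tsp" using z ctop by blast
      have yt: "y \<in> tsp" using z G_top zt by simp
      have "(F ^^ Suc n) x = sh (M n) (F z)" using x zt by (simp add: F_sh)
      also have "\<dots> = sh (M n) (sh (p (velt (\<alpha> n))) y)" using G_F[OF zt] z by simp
      also have "\<dots> = sh (M (Suc n)) y" using yt sh_add by (simp add: M_def add.commute)
      finally have e: "(F ^^ Suc n) x = sh (M (Suc n)) y" .
      then have "\<forall>k\<le>Suc n. (F ^^ k) x \<in> sh (M k) ` vc (\<alpha> k)"
        using x(2) Suc.prems by (auto simp: le_Suc_eq)
      then show ?case using x(1) e by blast
    qed
  qed
  define K where "K n = {x \<in> tsp. \<forall>k\<le>n. (F ^^ k) x \<in> sh (M k) ` vc (\<alpha> k)}" for n
  have Kcl: "\<And>n. closedin T (K n)"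
  proof -
    fix n
    have "\<And>k. closedin T {x \<in> tsp. (F ^^ k) x \<in> sh (M k) ` vc (\<alpha> k)}"
    proof -
      fix k
      have "closedin T (sh (M k) ` vc (\<alpha> k))"
        using homeomorphic_map_closedness[OF sh_hom ctop] vertex_compact[OF vert] by blast
      then show "closedin T {x \<in> tsp. (F ^^ k) x \<in> sh (M k) ` vc (\<alpha> k)}"
        using closedin_continuous_map_preimage[OF Fpow_cont] by blast
    qed
    moreover have "K n = tsp \<inter> (\<Inter>k\<in>{..n}. {x \<in> tsp. (F ^^ k) x \<in> sh (M k) ` vc (\<alpha> k)})"
      by (auto simp: K_def)
    ultimately show "closedin T (K n)" by (auto intro!: closedin_Inter closedin_Int)
  qed
  have Kmono: "\<And>m n. m \<le> n \<Longrightarrow> K n \<subseteq> K m" by (auto simp: K_def)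
  have Kne: "\<And>n. vc (\<alpha> 0) \<inter> K n \<noteq> {}"
  proof -
    fix n
    obtain y where "y \<in> vc (\<alpha> n)" using AP[of n] by blast
    then obtain x where "x \<in> vc (\<alpha> 0)" "\<forall>k\<le>n. (F ^^ k) x \<in> sh (M k) ` vc (\<alpha> k)"
      using bk by blast
    then show "vc (\<alpha> 0) \<inter> K n \<noteq> {}" using ctop by (auto simp: K_def)
  qed
  have "vc (\<alpha> 0) \<inter> \<Inter>(range K) \<noteq> {}"
  proof -
    have cpt: "compactin T (vc (\<alpha> 0))" using vertex_compact[OF vert] by blast
    have "\<forall>\<F>. finite \<F> \<and> \<F> \<subseteq> range K \<longrightarrow> vc (\<alpha> 0) \<inter> \<Inter>\<F> \<noteq> {}"
    proof (intro allI impI)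
      fix \<F> assume "finite \<F> \<and> \<F> \<subseteq> range K"
      then obtain N where N: "finite N" "\<F> = K ` N" by (meson finite_subset_image)
      define n where "n = Max (insert 0 N)"
      have "\<And>m. m \<in> N \<Longrightarrow> m \<le> n" using N by (simp add: n_def)
      then have "K n \<subseteq> \<Inter>\<F>" using N Kmono by blast
      then show "vc (\<alpha> 0) \<inter> \<Inter>\<F> \<noteq> {}" using Kne[of n] by blast
    qed
    moreover have "\<forall>C\<in>range K. closedin T C" using Kcl by blast
    ultimately show ?thesis using cpt unfolding compactin_fip by blast
  qed
  then obtain x where "x \<in> vc (\<alpha> 0)" "\<And>n. x \<in> K n" by blast
  then show ?thesis by (auto simp: K_def)
qed

lemma rot_graph_sub:
  assumes path: "inf_path T h \<tau> F P \<alpha>" and r: "path_rot T h \<tau> F P p \<alpha> r"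
  shows "r \<in> Rot T h F XI"
proof -
  define M where "M = (\<lambda>n. (\<Sum>k<n. p (velt (\<alpha> k))))"
  obtain x where x: "x \<in> vc (\<alpha> 0)" "\<And>n. (F ^^ n) x \<in> sh (M n) ` vc (\<alpha> n)"
    using realize_path[OF path] unfolding M_def by blast
  have ar: "\<And>n. arrow T h \<tau> F P (\<alpha> n) (\<alpha> (Suc n))" using path by (simp add: inf_path_def)
  note AP = arrow_props[OF ar]
  have cX: "\<And>n. vc (\<alpha> n) \<subseteq> X" using AP P_X by blast
  have "\<forall>n. \<exists>zn. zn \<in> vc (\<alpha> n) \<and> (F ^^ n) x = sh (M n) zn" using x(2) by blast
  then obtain z where z: "\<And>n. z n \<in> vc (\<alpha> n)" "\<And>n. (F ^^ n) x = sh (M n) (z n)"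
    by metis
  have zX: "\<And>n. z n \<in> X" using z cX by blast
  have xX: "x \<in> X" using x cX by blast
  have z0: "z 0 = x" using z(2)[of 0] by (simp add: M_def)
  have xI: "x \<in> XI"
    unfolding Xinf_def zsh_set_def using xX z zX by blast
  have rrF: "\<And>n. rr ((F ^^ n) x) = rr (z n) + of_int (M n)"
    using z rr_sh zX X_top by simp
  have "(\<lambda>n. real_of_int (\<Sum>k<n. vweight T h \<tau> F P p (\<alpha> k)) / real n - (rr ((F ^^ n) x) - rr x) / real n)
        \<longlonglongrightarrow> 0"
  proof -
    have "\<And>n. real_of_int (\<Sum>k<n. vweight T h \<tau> F P p (\<alpha> k)) / real n - (rr ((F ^^ n) x) - rr x) / real n
       = (rr (z 0) - rr (z n)) / real n"
    proof -
      fix n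
      have e: "real_of_int (\<Sum>k<n. vweight T h \<tau> F P p (\<alpha> k)) - (rr ((F ^^ n) x) - rr x) = rr (z 0) - rr (z n)"
        using rrF[of n] z0 by (simp add: M_def vweight_velt)
      show "real_of_int (\<Sum>k<n. vweight T h \<tau> F P p (\<alpha> k)) / real n - (rr ((F ^^ n) x) - rr x) / real n
       = (rr (z 0) - rr (z n)) / real n"
        unfolding diff_divide_distrib[symmetric] e ..
    qed
    moreover have "\<And>n. \<bar>rr (z 0) - rr (z n)\<bar> \<le> 1" using X_rr zX by (smt (verit))
    ultimately show ?thesis using bounded_div_n[of "\<lambda>n. rr (z 0) - rr (z n)" 1] by simp
  qed
  then have "has_rot T h F x r"
    using r unfolding has_rot_def path_rot_def by (rule tendsto_diff_cancel)
  then show ?thesis using xI unfolding Rot_def by blast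
qed

end

context LG begin

definition "psi l = inv_into {0..1} (\<phi> l)"
definition "rho l y = (if y \<in> br l then y else \<phi> l 0)"
definition "gA A t = G A (\<phi> (bi A) t)"
definition "fA A t = psi (lab A) (rho (lab A) (gA A t))"

lemma root_closed: "l \<in> \<Lambda> \<Longrightarrow> closedin T {\<phi> l 0}"
  using seg_closed[of l 0 0] by simp

lemma TR_closed: "closedin T TRs"
  by (simp add: TR_def)

lemma IT_sub: "IT \<subseteq> TRs"
  by (rule interior_of_subset)

lemma br_IT: "l \<in> \<Lambda> \<Longrightarrow> br l \<inter> IT = {}"
  using br_X X_IT by blast

lemma rho_cont:
  assumes l: "l \<in> \<Lambda>"
  shows "continuous_map (subtopology T (br l \<union> IT)) (subtopology T (br l)) (rho l)"
proof -
  let ?S = "br l \<union> IT"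
  let ?X = "subtopology T ?S"
  let ?r = "\<phi> l 0"
  define Ts where "Ts b = (if b then br l else IT \<union> {?r})" for b
  define fs where "fs b = (if b then (\<lambda>x. x) else (\<lambda>x. ?r))" for b
  have rt: "?r \<in> tsp" using br_top[OF l] by force
  have "continuous_map ?X T (rho l)"
  proof (rule pasting_lemma_closed[where I="{True,False}" and T=Ts and f=fs])
    show "finite {True, False}" by simp
  next
    fix b assume "b \<in> {True, False}"
    show "closedin ?X (Ts b)"
    proof (cases b)
      case True
      then show ?thesis using closedin_subset_topspace[OF br_closed[OF l]] by (simp add: Ts_def)
    next
      case False
      have "closedin T (T closure_of IT \<union> {?r})"
        by (rule closedin_Un[OF closedin_closure_of root_closed[OF l]])
      moreover have "(T closure_of IT \<union> {?r}) \<inter> ?S = IT \<union> {?r}"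
      proof
        have "T closure_of IT \<subseteq> TRs" using closure_of_minimal[OF IT_sub TR_closed] .
        then show "(T closure_of IT \<union> {?r}) \<inter> ?S \<subseteq> IT \<union> {?r}" using br_TR[OF l] by auto
        show "IT \<union> {?r} \<subseteq> (T closure_of IT \<union> {?r}) \<inter> ?S"
          using closure_of_subset[OF IT_top] by auto
      qed
      ultimately have "closedin ?X (IT \<union> {?r})" unfolding closedin_subtopology by metis
      then show ?thesis using False by (simp add: Ts_def)
    qed
  next
    fix b assume "b \<in> {True, False}"
    show "continuous_map (subtopology ?X (Ts b)) T (fs b)"
      by (cases b) (auto simp: fs_def rt continuous_map_from_subtopology)
  next
    fix b b' x assume "b \<in> {True, False}" "b' \<in> {True, False}" "x \<in> topspace ?X \<inter> Ts b \<inter> Ts b'"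
    then show "fs b x = fs b' x" using br_IT[OF l] by (auto simp: fs_def Ts_def)
  next
    fix x assume "x \<in> topspace ?X"
    then show "\<exists>j. j \<in> {True, False} \<and> x \<in> Ts j \<and> rho l x = fs j x"
      by (cases "x \<in> br l") (auto simp: Ts_def fs_def rho_def)
  qed
  moreover have "rho l \<in> topspace ?X \<rightarrow> br l" by (auto simp: rho_def)
  ultimately show ?thesis by (simp add: continuous_map_in_subtopology)
qed

lemma psi_cont:
  assumes l: "l \<in> \<Lambda>"
  shows "continuous_map (subtopology T (br l)) euclideanreal (psi l)"
proof -
  obtain g where g: "homeomorphic_maps (top_of_set {0..1}) (subtopology T (br l)) (\<phi> l) g"
    using phi_hom[OF l] homeomorphic_map_maps by blast
  then have gc: "continuous_map (subtopology T (br l)) (top_of_set {0..1}) g"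
    and ginv: "\<And>y. y \<in> topspace (subtopology T (br l)) \<Longrightarrow> \<phi> l (g y) = y"
    and gr: "\<And>y. y \<in> topspace (subtopology T (br l)) \<Longrightarrow> g y \<in> {0..1}"
    by (auto simp: homeomorphic_maps_def continuous_map_def)
  have "\<And>y. y \<in> topspace (subtopology T (br l)) \<Longrightarrow> g y = psi l y"
  proof -
    fix y assume y: "y \<in> topspace (subtopology T (br l))"
    then have "\<phi> l (g y) = y" "g y \<in> {0..1}" using ginv gr by auto
    then show "g y = psi l y" unfolding psi_def using phi_inj[OF l]
      by (metis inv_into_f_f)
  qed
  then have "continuous_map (subtopology T (br l)) (top_of_set {0..1}) (psi l)"
    using continuous_map_eq[OF gc] by blast
  then show ?thesis using continuous_map_into_fulltopology by blast
qed

lemma psi_phi: "l \<in> \<Lambda> \<Longrightarrow> d \<in> {0..1} \<Longrightarrow> psi l (\<phi> l d) = d"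
  unfolding psi_def using phi_inj by (simp add: inv_into_f_f)

lemma phi_psi: "y \<in> br l \<Longrightarrow> \<phi> l (psi l y) = y \<and> psi l y \<in> {0..1}"
  unfolding psi_def using inv_into_into[of y "\<phi> l" "{0..1}"] f_inv_into_f[of y "\<phi> l" "{0..1}"]
  by blast

lemma gA_cont:
  assumes A: "A \<in> P"
  shows "continuous_map (top_of_set {lo A..hi A}) T (gA A)"
proof -
  have "continuous_map (top_of_set {lo A..hi A}) T (\<phi> (bi A))"
  proof -
    have "{lo A..hi A} \<subseteq> {0..1}" using P_lohi[OF A] by auto
    then have "continuous_map (subtopology (top_of_set {0..1}) {lo A..hi A}) T (\<phi> (bi A))"
      using continuous_map_from_subtopology[OF phi_cont[OF P_bi[OF A]]] by blast
    moreover have "max 0 (lo A) = lo A" "min 1 (hi A) = hi A" using P_lohi[OF A] by auto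
    ultimately show ?thesis by (simp add: subtopology_subtopology Int_absorb1)
  qed
  then have "continuous_map (top_of_set {lo A..hi A}) T (G A \<circ> \<phi> (bi A))"
    using continuous_map_compose G_cont by blast
  moreover have "G A \<circ> \<phi> (bi A) = gA A" by (rule ext) (simp add: gA_def)
  ultimately show ?thesis by simp
qed

lemma gA_img: "A \<in> P \<Longrightarrow> t \<in> {lo A..hi A} \<Longrightarrow> gA A t \<in> br (lab A) \<union> IT"
  using G_img P_eq by (metis gA_def image_eqI)

lemma fA_cont:
  assumes A: "A \<in> P"
  shows "continuous_on {lo A..hi A} (fA A)"
proof -
  let ?l = "lab A"
  have l: "?l \<in> \<Lambda>" using P_lab[OF A] .
  have "continuous_map (top_of_set {lo A..hi A}) (subtopology T (br ?l \<union> IT)) (gA A)"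
    using gA_cont[OF A] gA_img[OF A] by (auto simp: continuous_map_in_subtopology)
  then have "continuous_map (top_of_set {lo A..hi A}) (subtopology T (br ?l)) (rho ?l \<circ> gA A)"
    using continuous_map_compose rho_cont[OF l] by blast
  then have "continuous_map (top_of_set {lo A..hi A}) euclideanreal (psi ?l \<circ> (rho ?l \<circ> gA A))"
    using continuous_map_compose psi_cont[OF l] by blast
  moreover have "psi ?l \<circ> (rho ?l \<circ> gA A) = fA A" by (rule ext) (simp add: fA_def)
  ultimately show ?thesis by (simp add: continuous_map_iff_continuous)
qed

lemma covP:
  assumes A: "A \<in> P"
  shows "covsetup (lo A) (hi A) (fA A) (gA A) (\<phi> (lab A)) (br (lab A))"
proof
  let ?l = "lab A"
  have l: "?l \<in> \<Lambda>" using P_lab[OF A] .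
  show "lo A \<le> hi A" using P_lohi[OF A] by simp
  show "continuous_on {lo A..hi A} (fA A)" by (rule fA_cont[OF A])
  fix t assume t: "t \<in> {lo A..hi A}"
  have "rho ?l (gA A t) \<in> br ?l" by (auto simp: rho_def)
  then show "0 \<le> fA A t \<and> fA A t \<le> 1" using phi_psi by (simp add: fA_def)
  show "gA A t \<in> br ?l \<Longrightarrow> gA A t = \<phi> ?l (fA A t)"
    using phi_psi by (simp add: fA_def rho_def)
  show "gA A t \<notin> br ?l \<Longrightarrow> fA A t = 0"
    using psi_phi[OF l, of 0] by (simp add: fA_def rho_def)
next
  let ?l = "lab A"
  have l: "?l \<in> \<Lambda>" using P_lab[OF A] .
  have "closedin (top_of_set {lo A..hi A}) {t \<in> topspace (top_of_set {lo A..hi A}). gA A t \<in> br ?l}"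
    using closedin_continuous_map_preimage[OF gA_cont[OF A] br_closed[OF l]] .
  then have "closedin (top_of_set {lo A..hi A}) {t \<in> {lo A..hi A}. gA A t \<in> br ?l}" by simp
  then show "closed {t \<in> {lo A..hi A}. gA A t \<in> br ?l}"
    using closedin_closed_trans by blast
next
  fix d :: real assume "d \<in> {0..1}" then show "\<phi> (lab A) d \<in> br (lab A)" by simp
next
  show "inj_on (\<phi> (lab A)) {0..1}" using phi_inj P_lab[OF A] by blast
qed

end

context LG begin

lemma G_seg_img: "A \<in> P \<Longrightarrow> G A ` \<phi> (bi A) ` S = gA A ` S"
  by (auto simp: gA_def image_image)

lemma gA_lo: assumes A: "A \<in> P" shows "gA A (lo A) = \<phi> (lab A) 0"
  using G_min[OF A] by (simp add: gA_def)

lemma img_seg: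
  assumes A: "A \<in> P" and e: "lo A \<le> e" "e \<le> hi A"
  shows "\<exists>M. 0 \<le> M \<and> M \<le> 1 \<and> G A ` \<phi> (bi A) ` {lo A..e} \<inter> br (lab A) = \<phi> (lab A) ` {0..M}"
proof -
  interpret C: covsetup "lo A" "hi A" "fA A" "gA A" "\<phi> (lab A)" "br (lab A)" by (rule covP[OF A])
  obtain V where V: "gA A ` {lo A..e} \<inter> br (lab A) = \<phi> (lab A) ` V" "V \<subseteq> {0..1}"
    "V = {} \<or> (\<exists>u v. u \<le> v \<and> V = {u..v})" "0 \<in> V \<longrightarrow> (\<exists>v. V = {0..v})"
    using C.img_interval[of "lo A" e] e by auto
  have l: "lab A \<in> \<Lambda>" using P_lab[OF A] .
  have g0: "gA A (lo A) = \<phi> (lab A) 0" by (rule gA_lo[OF A])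
  have "\<phi> (lab A) 0 \<in> gA A ` {lo A..e} \<inter> br (lab A)" using g0 e by force
  then obtain d where d: "d \<in> V" "\<phi> (lab A) d = \<phi> (lab A) 0" using V(1) by auto
  have "d = 0" using inj_onD[OF phi_inj[OF l] d(2)] d(1) V(2) by auto
  then have "0 \<in> V" using d by simp
  then obtain v where v: "V = {0..v}" using V(4) by blast
  have "v \<in> V" using v \<open>0 \<in> V\<close> by auto
  then have "0 \<le> v" "v \<le> 1" using V(2) by auto
  then show ?thesis using V(1) v G_seg_img[OF A] by (intro exI[of _ v]) auto
qed

lemma phi_Int:
  assumes l: "l \<in> \<Lambda>" and "S \<subseteq> {0..1}" "S' \<subseteq> {0..1}"
  shows "\<phi> l ` S \<inter> \<phi> l ` S' = \<phi> l ` (S \<inter> S')"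
  using inj_on_image_Int[OF phi_inj[OF l] assms(2,3)] by simp

lemma P_Int_root:
  assumes B: "B \<in> P" and M: "0 \<le> M" "M \<le> 1"
  shows "B \<inter> \<phi> (bi B) ` {0..M} = (if lo B \<le> M then \<phi> (bi B) ` {lo B..min (hi B) M} else {})"
proof -
  have lh: "0 \<le> lo B" "lo B \<le> hi B" "hi B \<le> 1" using P_lohi[OF B] by auto
  have "B \<inter> \<phi> (bi B) ` {0..M} = \<phi> (bi B) ` ({lo B..hi B} \<inter> {0..M})"
    using phi_Int[OF P_bi[OF B]] P_eq[OF B] lh M by (metis atLeastatMost_subset_iff order_refl)
  also have "{lo B..hi B} \<inter> {0..M} = (if lo B \<le> M then {lo B..min (hi B) M} else {})"
    using lh by auto
  finally show ?thesis by simp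
qed

lemma branch_match:
  assumes A: "A \<in> P" and B: "B \<in> P" and ne: "B \<inter> G A ` C \<noteq> {}" and C: "C \<subseteq> A"
  shows "bi B = lab A"
proof (rule ccontr)
  assume ne2: "bi B \<noteq> lab A"
  obtain y where y: "y \<in> B" "y \<in> G A ` C" using ne by blast
  then obtain z where "z \<in> C" "y = G A z" by blast
  then have "y \<in> br (lab A) \<union> IT" using G_img[OF A] C by blast
  moreover have "y \<notin> IT" using y P_X[OF B] X_IT by blast
  moreover have "y \<in> br (bi B)" using y P_br[OF B] by blast
  ultimately show False using br_disj[OF P_bi[OF B] P_lab[OF A] ne2] by blast
qed

lemma snoc_seg:
  assumes A: "A \<in> P" and B: "B \<in> P" and e: "lo A \<le> e" "e \<le> hi A"
    and ne: "B \<inter> G A ` \<phi> (bi A) ` {lo A..e} \<noteq> {}"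
  shows "\<exists>e'. lo B \<le> e' \<and> e' \<le> hi B \<and> B \<inter> G A ` \<phi> (bi A) ` {lo A..e} = \<phi> (bi B) ` {lo B..e'}"
proof -
  have CA: "\<phi> (bi A) ` {lo A..e} \<subseteq> A" using P_eq[OF A] e by auto
  have bB: "bi B = lab A" using branch_match[OF A B ne CA] .
  obtain M where M: "0 \<le> M" "M \<le> 1" "G A ` \<phi> (bi A) ` {lo A..e} \<inter> br (lab A) = \<phi> (lab A) ` {0..M}"
    using img_seg[OF A e] by blast
  have "B \<inter> G A ` \<phi> (bi A) ` {lo A..e} = B \<inter> (G A ` \<phi> (bi A) ` {lo A..e} \<inter> br (lab A))"
  proof -
    have "B \<subseteq> br (lab A)" using P_br[OF B] bB by simp
    then show ?thesis by blast
  qed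
  also have "\<dots> = B \<inter> \<phi> (bi B) ` {0..M}" using M bB by simp
  also have "\<dots> = (if lo B \<le> M then \<phi> (bi B) ` {lo B..min (hi B) M} else {})"
    using P_Int_root[OF B M(1,2)] .
  finally have eq: "B \<inter> G A ` \<phi> (bi A) ` {lo A..e} = (if lo B \<le> M then \<phi> (bi B) ` {lo B..min (hi B) M} else {})" .
  then have "lo B \<le> M" using ne by (auto split: if_splits)
  then show ?thesis using eq P_lohi[OF B] by (intro exI[of _ "min (hi B) M"]) auto
qed

lemma cyl_init:
  assumes w: "w \<in> words P" and ne: "cy w \<noteq> {}"
  shows "\<exists>e. lo (last w) \<le> e \<and> e \<le> hi (last w) \<and> cy w = \<phi> (bi (last w)) ` {lo (last w)..e}"
proof -
  have "set w \<subseteq> P" "w \<noteq> []" using w by (auto simp: words_def)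
  then show ?thesis using ne
  proof (induction w rule: rev_induct)
    case Nil then show ?case by simp
  next
    case (snoc B u)
    have B: "B \<in> P" using snoc by simp
    show ?case
    proof (cases "u = []")
      case True
      then show ?thesis using cyl_single[OF B] P_eq[OF B] P_lohi[OF B] by (intro exI[of _ "hi B"]) auto
    next
      case False
      then have u: "u \<in> words P" using snoc by (auto simp: words_def)
      have A: "last u \<in> P" using u by (auto simp: words_def dest: last_in_set)
      have eq: "cy (u @ [B]) = B \<inter> G (last u) ` cy u" using cyl_snoc[OF u B] .
      then have "cy u \<noteq> {}" using snoc.prems by auto
      then obtain e where e: "lo (last u) \<le> e" "e \<le> hi (last u)" "cy u = \<phi> (bi (last u)) ` {lo (last u)..e}"
        using snoc.IH snoc.prems False by auto
      have "B \<inter> G (last u) ` \<phi> (bi (last u)) ` {lo (last u)..e} \<noteq> {}" using eq e snoc.prems by simp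
      then obtain e' where "lo B \<le> e'" "e' \<le> hi B" "B \<inter> G (last u) ` \<phi> (bi (last u)) ` {lo (last u)..e} = \<phi> (bi B) ` {lo B..e'}"
        using snoc_seg[OF A B e(1,2)] by blast
      then show ?thesis using eq e by (intro exI[of _ e']) auto
    qed
  qed
qed

lemma vertex_init:
  assumes "\<alpha> \<in> vertices T h \<tau> F P"
  shows "velt \<alpha> \<in> P \<and> (\<exists>e. lo (velt \<alpha>) \<le> e \<and> e \<le> hi (velt \<alpha>) \<and> vc \<alpha> = \<phi> (bi (velt \<alpha>)) ` {lo (velt \<alpha>)..e})"
proof -
  obtain w where w: "w \<in> words P" "cy w \<noteq> {}" "\<alpha> = cl w" using vertex_cls[OF assms] by blast
  have "velt \<alpha> = last w" using velt_cls[OF w(1,2)] w(3) by simp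
  moreover have "vc \<alpha> = cy w" using vcyl_cls[OF w(1)] w(3) by simp
  moreover have "last w \<in> P" using w by (auto simp: words_def dest: last_in_set)
  ultimately show ?thesis using cyl_init[OF w(1,2)] by simp
qed

end

context LG begin

primrec Gc :: "(nat \<Rightarrow> 'a set) \<Rightarrow> nat \<Rightarrow> 'a \<Rightarrow> 'a" where
  "Gc E 0 x = x"
| "Gc E (Suc j) x = G (E j) (Gc E j x)"

lemma Gc_top: "x \<in> tsp \<Longrightarrow> Gc E j x \<in> tsp"
  by (induction j) (auto simp: G_top)

lemma Gc_F: "x \<in> tsp \<Longrightarrow> Gc E j x = sh (- (\<Sum>k<j. p (E k))) ((F ^^ j) x)"
proof (induction j)
  case 0 then show ?case by simp
next
  case (Suc j)
  have "Gc E (Suc j) x = sh (- p (E j)) (F (sh (- (\<Sum>k<j. p (E k))) ((F ^^ j) x)))"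
    using Suc by (simp add: G_def)
  also have "\<dots> = sh (- p (E j)) (sh (- (\<Sum>k<j. p (E k))) ((F ^^ Suc j) x))"
    using Suc.prems Fpow_top by (simp add: F_sh)
  also have "\<dots> = sh (- (\<Sum>k<Suc j. p (E k))) ((F ^^ Suc j) x)"
  proof -
    have "(F ^^ Suc j) x \<in> tsp" using Suc.prems Fpow_top by blast
    then have "sh (- p (E j)) (sh (- (\<Sum>k<j. p (E k))) ((F ^^ Suc j) x)) = sh (- p (E j) + - (\<Sum>k<j. p (E k))) ((F ^^ Suc j) x)"
      using sh_add by blast
    moreover have "sh (- (\<Sum>k<Suc j. p (E k))) ((F ^^ Suc j) x) = sh (- p (E j) + - (\<Sum>k<j. p (E k))) ((F ^^ Suc j) x)"
      by (simp add: algebra_simps)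
    ultimately show ?thesis by simp
  qed
  finally show ?case .
qed

lemma Gc_cont: "continuous_map T T (Gc E j)"
proof (induction j)
  case 0
  have "Gc E 0 = id" by (rule ext) simp
  then show ?case by simp
next
  case (Suc j)
  have eq: "Gc E (Suc j) = G (E j) \<circ> Gc E j" by (rule ext) simp
  have "continuous_map T T (G (E j) \<circ> Gc E j)" by (rule continuous_map_compose[OF Suc G_cont])
  then show ?case unfolding eq .
qed

lemma cover_step:
  assumes A: "A \<in> P" and ab: "lo A \<le> a" "a \<le> b" "b \<le> hi A"
    and st: "0 \<le> s'" "s' \<le> t'" "t' \<le> 1"
    and sub: "\<phi> l ` {s'..t'} \<subseteq> G A ` \<phi> (bi A) ` {a..b}" and l: "l = lab A"
  shows "\<exists>s t. a \<le> s \<and> s \<le> t \<and> t \<le> b \<and> G A ` \<phi> (bi A) ` {s..t} = \<phi> l ` {s'..t'}"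
proof -
  interpret C: covsetup "lo A" "hi A" "fA A" "gA A" "\<phi> (lab A)" "br (lab A)" by (rule covP[OF A])
  have "\<phi> l s' \<in> gA A ` {a..b}" "\<phi> l t' \<in> gA A ` {a..b}"
    using sub st G_seg_img[OF A] by auto
  then obtain t1 t2 where t1: "t1 \<in> {a..b}" "gA A t1 = \<phi> l s'" and t2: "t2 \<in> {a..b}" "gA A t2 = \<phi> l t'"
    by (metis imageE)
  obtain s1 s2 where s: "min t1 t2 \<le> s1" "s1 \<le> s2" "s2 \<le> max t1 t2" "gA A ` {s1..s2} = \<phi> (lab A) ` {s'..t'}"
    using C.cover_gen[of t1 t2 s' t'] t1 t2 st ab l by auto
  then show ?thesis using t1 t2 G_seg_img[OF A] l by (intro exI[of _ s1] exI[of _ s2]) auto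
qed

lemma chain_fix:
  fixes E :: "nat \<Rightarrow> 'a set" and a b :: "nat \<Rightarrow> real" and q :: nat
  assumes q: "1 \<le> q" and EP: "\<And>j. j \<le> q \<Longrightarrow> E j \<in> P" and Eq: "E q = E 0"
    and ab: "\<And>j. j \<le> q \<Longrightarrow> lo (E j) \<le> a j \<and> a j \<le> b j \<and> b j \<le> hi (E j)"
    and cov: "\<And>j. j < q \<Longrightarrow> \<phi> (bi (E (Suc j))) ` {a (Suc j)..b (Suc j)} \<subseteq> G (E j) ` \<phi> (bi (E j)) ` {a j..b j}"
    and ret: "a q \<le> a 0" "b 0 \<le> b q"
  shows "\<exists>x. x \<in> \<phi> (bi (E 0)) ` {a 0..b 0} \<and> (\<forall>j\<le>q. Gc E j x \<in> \<phi> (bi (E j)) ` {a j..b j}) \<and> Gc E q x = x"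
proof -
  have lab_bi: "\<And>j. j < q \<Longrightarrow> bi (E (Suc j)) = lab (E j)"
  proof -
    fix j assume j: "j < q"
    have ne: "\<phi> (bi (E (Suc j))) ` {a (Suc j)..b (Suc j)} \<noteq> {}" using ab[of "Suc j"] j by auto
    have "E (Suc j) \<inter> G (E j) ` \<phi> (bi (E j)) ` {a j..b j} \<noteq> {}"
    proof -
      have "\<phi> (bi (E (Suc j))) ` {a (Suc j)..b (Suc j)} \<subseteq> E (Suc j)"
        using P_eq[OF EP[of "Suc j"]] ab[of "Suc j"] j by auto
      then show ?thesis using cov[OF j] ne by blast
    qed
    moreover have "\<phi> (bi (E j)) ` {a j..b j} \<subseteq> E j" using P_eq[OF EP[of j]] ab[of j] j by auto
    ultimately show "bi (E (Suc j)) = lab (E j)" using branch_match EP j by auto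
  qed
  define I where "I = rec_nat (a 0, b 0) (\<lambda>m pr. let j = q - Suc m in
      SOME st. a j \<le> fst st \<and> fst st \<le> snd st \<and> snd st \<le> b j \<and>
        G (E j) ` \<phi> (bi (E j)) ` {fst st..snd st} = \<phi> (bi (E (Suc j))) ` {fst pr..snd pr})"
  have I0: "I 0 = (a 0, b 0)" by (simp add: I_def)
  have IS: "\<And>m. I (Suc m) = (let j = q - Suc m in
      SOME st. a j \<le> fst st \<and> fst st \<le> snd st \<and> snd st \<le> b j \<and>
        G (E j) ` \<phi> (bi (E j)) ` {fst st..snd st} = \<phi> (bi (E (Suc j))) ` {fst (I m)..snd (I m)})"
    by (simp add: I_def)
  have Iprop: "\<And>m. m \<le> q \<Longrightarrow> a (q - m) \<le> fst (I m) \<and> fst (I m) \<le> snd (I m) \<and> snd (I m) \<le> b (q - m) \<and>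
      (0 < m \<longrightarrow> G (E (q - m)) ` \<phi> (bi (E (q - m))) ` {fst (I m)..snd (I m)} = \<phi> (bi (E (Suc (q - m)))) ` {fst (I (m - 1))..snd (I (m - 1))})"
  proof -
    fix m show "m \<le> q \<Longrightarrow> ?thesis m"
    proof (induction m)
      case 0 then show ?case using I0 ret ab[of 0] by simp
    next
      case (Suc m)
      define j where "j = q - Suc m"
      have j: "j < q" "Suc j = q - m" using Suc.prems by (auto simp: j_def)
      have IH: "a (Suc j) \<le> fst (I m)" "fst (I m) \<le> snd (I m)" "snd (I m) \<le> b (Suc j)"
        using Suc.IH Suc.prems j by auto
      have EjP: "E j \<in> P" using EP j by simp
      have abj: "lo (E j) \<le> a j" "a j \<le> b j" "b j \<le> hi (E j)" using ab[of j] j by auto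
      have abS: "lo (E (Suc j)) \<le> a (Suc j)" "b (Suc j) \<le> hi (E (Suc j))" using ab[of "Suc j"] j by auto
      have st01: "0 \<le> fst (I m)" "snd (I m) \<le> 1" using IH abS P_lohi[OF EP[of "Suc j"]] j by auto
      have "\<phi> (bi (E (Suc j))) ` {fst (I m)..snd (I m)} \<subseteq> \<phi> (bi (E (Suc j))) ` {a (Suc j)..b (Suc j)}"
        using IH by auto
      also have "\<dots> \<subseteq> G (E j) ` \<phi> (bi (E j)) ` {a j..b j}" using cov[OF j(1)] .
      finally have sub: "\<phi> (bi (E (Suc j))) ` {fst (I m)..snd (I m)} \<subseteq> G (E j) ` \<phi> (bi (E j)) ` {a j..b j}" .
      have ex: "\<exists>s t. a j \<le> s \<and> s \<le> t \<and> t \<le> b j \<and> G (E j) ` \<phi> (bi (E j)) ` {s..t} = \<phi> (bi (E (Suc j))) ` {fst (I m)..snd (I m)}"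
        using cover_step[OF EjP abj st01(1) IH(2) st01(2) sub lab_bi[OF j(1)]] .
      then obtain s0 t0 where s0t0: "a j \<le> s0 \<and> s0 \<le> t0 \<and> t0 \<le> b j \<and> G (E j) ` \<phi> (bi (E j)) ` {s0..t0} = \<phi> (bi (E (Suc j))) ` {fst (I m)..snd (I m)}"
        by blast
      have ex2: "\<exists>st. a j \<le> fst st \<and> fst st \<le> snd st \<and> snd st \<le> b j \<and>
        G (E j) ` \<phi> (bi (E j)) ` {fst st..snd st} = \<phi> (bi (E (Suc j))) ` {fst (I m)..snd (I m)}"
        using s0t0 by (intro exI[of _ "(s0, t0)"]) simp
      have "I (Suc m) = (SOME st. a j \<le> fst st \<and> fst st \<le> snd st \<and> snd st \<le> b j \<and>
        G (E j) ` \<phi> (bi (E j)) ` {fst st..snd st} = \<phi> (bi (E (Suc j))) ` {fst (I m)..snd (I m)})"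
        using IS[of m] by (simp add: j_def Let_def)
      then have "a j \<le> fst (I (Suc m)) \<and> fst (I (Suc m)) \<le> snd (I (Suc m)) \<and> snd (I (Suc m)) \<le> b j \<and>
        G (E j) ` \<phi> (bi (E j)) ` {fst (I (Suc m))..snd (I (Suc m))} = \<phi> (bi (E (Suc j))) ` {fst (I m)..snd (I m)}"
        using someI_ex[OF ex2] by simp
      then show ?case using j by (simp add: j_def)
    qed
  qed
  define s where "s j = fst (I (q - j))" for j
  define t where "t j = snd (I (q - j))" for j
  have st: "\<And>j. j \<le> q \<Longrightarrow> a j \<le> s j \<and> s j \<le> t j \<and> t j \<le> b j"
  proof -
    fix j assume j: "j \<le> q"
    have "q - j \<le> q" by simp
    then have "a (q - (q - j)) \<le> fst (I (q - j)) \<and> fst (I (q - j)) \<le> snd (I (q - j)) \<and> snd (I (q - j)) \<le> b (q - (q - j))"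
      using Iprop by blast
    moreover have "q - (q - j) = j" using j by simp
    ultimately show "a j \<le> s j \<and> s j \<le> t j \<and> t j \<le> b j" by (simp add: s_def t_def)
  qed
  have stimg: "\<And>j. j < q \<Longrightarrow> G (E j) ` \<phi> (bi (E j)) ` {s j..t j} = \<phi> (bi (E (Suc j))) ` {s (Suc j)..t (Suc j)}"
  proof -
    fix j assume j: "j < q"
    have "q - j \<le> q" "0 < q - j" using j by auto
    then have "G (E (q - (q - j))) ` \<phi> (bi (E (q - (q - j)))) ` {fst (I (q - j))..snd (I (q - j))} =
       \<phi> (bi (E (Suc (q - (q - j))))) ` {fst (I (q - j - 1))..snd (I (q - j - 1))}"
      using Iprop by blast
    moreover have "q - (q - j) = j" "q - j - 1 = q - Suc j" using j by auto
    ultimately show "G (E j) ` \<phi> (bi (E j)) ` {s j..t j} = \<phi> (bi (E (Suc j))) ` {s (Suc j)..t (Suc j)}"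
      by (simp add: s_def t_def)
  qed
  have sq: "s q = a 0" "t q = b 0" using I0 by (simp_all add: s_def t_def)
  let ?i = "bi (E 0)"
  have i: "?i \<in> \<Lambda>" using P_bi EP[of 0] by simp
  have Gcimg: "\<And>j. j \<le> q \<Longrightarrow> Gc E j ` \<phi> ?i ` {s 0..t 0} = \<phi> (bi (E j)) ` {s j..t j}"
  proof -
    fix j show "j \<le> q \<Longrightarrow> Gc E j ` \<phi> ?i ` {s 0..t 0} = \<phi> (bi (E j)) ` {s j..t j}"
    proof (induction j)
      case 0 then show ?case by (simp add: image_image[symmetric])
    next
      case (Suc j)
      have "Gc E (Suc j) ` \<phi> ?i ` {s 0..t 0} = G (E j) ` (Gc E j ` \<phi> ?i ` {s 0..t 0})"
        by (auto simp: image_image)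
      also have "\<dots> = G (E j) ` \<phi> (bi (E j)) ` {s j..t j}" using Suc by simp
      also have "\<dots> = \<phi> (bi (E (Suc j))) ` {s (Suc j)..t (Suc j)}" using stimg Suc.prems by simp
      finally show ?case .
    qed
  qed
  have s0: "a 0 \<le> s 0" "s 0 \<le> t 0" "t 0 \<le> b 0" using st[of 0] by auto
  have ab0: "0 \<le> a 0" "b 0 \<le> 1" using ab[of 0] P_lohi[OF EP[of 0]] by auto
  have Gq: "Gc E q ` \<phi> ?i ` {s 0..t 0} = \<phi> ?i ` {a 0..b 0}"
    using Gcimg[of q] sq Eq by simp
  define hh where "hh u = psi ?i (Gc E q (\<phi> ?i u))" for u
  have hcont: "continuous_on {s 0..t 0} hh"
  proof -
    have sub01: "{s 0..t 0} \<subseteq> {0..1}" using s0 ab0 by auto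
    have "continuous_map (subtopology (top_of_set {0..1}) {s 0..t 0}) T (\<phi> ?i)"
      using continuous_map_from_subtopology[OF phi_cont[OF i]] by blast
    moreover have "max 0 (s 0) = s 0" "min 1 (t 0) = t 0" using s0 ab0 by auto
    ultimately have "continuous_map (top_of_set {s 0..t 0}) T (\<phi> ?i)"
      by (simp add: subtopology_subtopology Int_absorb1)
    then have "continuous_map (top_of_set {s 0..t 0}) T (Gc E q \<circ> \<phi> ?i)"
      using continuous_map_compose Gc_cont by blast
    moreover have "(Gc E q \<circ> \<phi> ?i) ` {s 0..t 0} \<subseteq> br ?i"
    proof -
      have "(Gc E q \<circ> \<phi> ?i) ` {s 0..t 0} = \<phi> ?i ` {a 0..b 0}" using Gq by (simp add: image_comp)
      moreover have "\<phi> ?i ` {a 0..b 0} \<subseteq> br ?i" using ab0 by auto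
      ultimately show ?thesis by simp
    qed
    ultimately have "continuous_map (top_of_set {s 0..t 0}) (subtopology T (br ?i)) (Gc E q \<circ> \<phi> ?i)"
      by (auto simp: continuous_map_in_subtopology)
    then have "continuous_map (top_of_set {s 0..t 0}) euclideanreal (psi ?i \<circ> (Gc E q \<circ> \<phi> ?i))"
      using continuous_map_compose psi_cont[OF i] by blast
    moreover have "psi ?i \<circ> (Gc E q \<circ> \<phi> ?i) = hh" by (rule ext) (simp add: hh_def)
    ultimately show ?thesis by (simp add: continuous_map_iff_continuous)
  qed
  have himg: "hh ` {s 0..t 0} = {a 0..b 0}"
  proof -
    have "hh ` {s 0..t 0} = psi ?i ` (Gc E q ` \<phi> ?i ` {s 0..t 0})" by (auto simp: hh_def image_image)
    also have "\<dots> = psi ?i ` \<phi> ?i ` {a 0..b 0}" using Gq by simp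
    also have "\<dots> = (\<lambda>u. psi ?i (\<phi> ?i u)) ` {a 0..b 0}" by (simp add: image_image)
    also have "\<dots> = (\<lambda>u. u) ` {a 0..b 0}"
      by (rule image_cong) (use psi_phi[OF i] ab0 in auto)
    also have "\<dots> = {a 0..b 0}" by simp
    finally show ?thesis .
  qed
  have "a 0 \<in> hh ` {s 0..t 0}" "b 0 \<in> hh ` {s 0..t 0}" using himg s0 by auto
  then obtain u1 u2 where u1: "u1 \<in> {s 0..t 0}" "hh u1 = a 0" and u2: "u2 \<in> {s 0..t 0}" "hh u2 = b 0"
    by (metis imageE)
  define k where "k u = hh u - u" for u
  have k1: "k u1 \<le> 0" using u1 s0 by (simp add: k_def)
  have k2: "0 \<le> k u2" using u2 s0 by (simp add: k_def)
  have kcont: "\<And>c d. {c..d} \<subseteq> {s 0..t 0} \<Longrightarrow> continuous_on {c..d} k"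
  proof -
    fix c d assume "{c..d} \<subseteq> {s 0..t 0}"
    then have "continuous_on {c..d} hh" using continuous_on_subset[OF hcont] by blast
    then have "continuous_on {c..d} (\<lambda>u. hh u - u)" by (intro continuous_on_diff continuous_on_id)
    then show "continuous_on {c..d} k" by (simp add: k_def[abs_def])
  qed
  obtain w where w: "w \<in> {s 0..t 0}" "k w = 0"
  proof (cases "u1 \<le> u2")
    case True
    obtain w where ww: "u1 \<le> w" "w \<le> u2" "k w = 0" using IVT'[of k u1 0 u2] k1 k2 True kcont u1 u2 by auto
    have "w \<in> {s 0..t 0}" using ww u1 u2 by auto
    then show ?thesis using that ww by blast
  next
    case False
    obtain w where ww: "u2 \<le> w" "w \<le> u1" "k w = 0" using IVT2'[of k u1 0 u2] k1 k2 False kcont u1 u2 by auto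
    have "w \<in> {s 0..t 0}" using ww u1 u2 by auto
    then show ?thesis using that ww by blast
  qed
  let ?x = "\<phi> ?i w"
  have hw: "hh w = w" using w by (simp add: k_def)
  have "Gc E q ?x \<in> \<phi> ?i ` {a 0..b 0}" using Gq w by blast
  then have "Gc E q ?x \<in> br ?i" using ab0 by auto
  then have "Gc E q ?x = \<phi> ?i (psi ?i (Gc E q ?x))" using phi_psi[of "Gc E q ?x" ?i] by simp
  also have "\<dots> = ?x" using hw by (simp add: hh_def)
  finally have fixp: "Gc E q ?x = ?x" .
  have "\<And>j. j \<le> q \<Longrightarrow> Gc E j ?x \<in> \<phi> (bi (E j)) ` {a j..b j}"
  proof -
    fix j assume j: "j \<le> q"
    have "Gc E j ?x \<in> \<phi> (bi (E j)) ` {s j..t j}" using Gcimg[OF j] w by blast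
    then show "Gc E j ?x \<in> \<phi> (bi (E j)) ` {a j..b j}" using st[OF j] by auto
  qed
  moreover have "?x \<in> \<phi> ?i ` {a 0..b 0}" using w s0 by auto
  ultimately show ?thesis using fixp by blast
qed

end

lemma tendsto_from_bounded:
  fixes a :: "nat \<Rightarrow> real"
  assumes "\<And>n. \<bar>a n - real n * L\<bar> \<le> B"
  shows "(\<lambda>n. a n / real n) \<longlonglongrightarrow> L"
proof -
  have "(\<lambda>n. (a n - real n * L) / real n) \<longlonglongrightarrow> 0" using bounded_div_n[of "\<lambda>n. a n - real n * L" B] assms by simp
  then have "(\<lambda>n. L + (a n - real n * L) / real n) \<longlonglongrightarrow> L + 0" by (intro tendsto_add tendsto_const)
  moreover have "\<forall>\<^sub>F n in sequentially. L + (a n - real n * L) / real n = a n / real n"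
    using eventually_gt_at_top[of 0] by eventually_elim (simp add: field_simps)
  ultimately show ?thesis using Lim_transform_eventually by fastforce
qed

lemma periodic_bounded:
  fixes c :: "nat \<Rightarrow> real"
  assumes q: "1 \<le> q" and per: "\<And>n. N \<le> n \<Longrightarrow> c (n + q) = c n"
  shows "\<exists>B. \<forall>n. \<bar>c n\<bar> \<le> B"
proof -
  define B where "B = (\<Sum>m<N + q. \<bar>c m\<bar>)"
  have "\<And>n. \<bar>c n\<bar> \<le> B"
  proof -
    fix n show "\<bar>c n\<bar> \<le> B"
    proof (induction n rule: less_induct)
      case (less n)
      show ?case
      proof (cases "n < N + q")
        case True
        have "\<bar>c n\<bar> \<le> (\<Sum>m<N + q. \<bar>c m\<bar>)"
          by (rule member_le_sum) (use True in auto)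
        then show ?thesis by (simp add: B_def)
      next
        case False
        then have "N \<le> n - q" "n - q < n" "n - q + q = n" using q by auto
        then have "c n = c (n - q)" using per[of "n - q"] by simp
        then show ?thesis using less.IH[of "n - q"] \<open>n - q < n\<close> by simp
      qed
    qed
  qed
  then show ?thesis by blast
qed

lemma avg_periodic:
  fixes w :: "nat \<Rightarrow> int"
  assumes q: "1 \<le> q" and per: "\<And>n. N \<le> n \<Longrightarrow> w (n + q) = w n"
  shows "(\<lambda>n. real_of_int (\<Sum>k<n. w k) / real n) \<longlonglongrightarrow> real_of_int (\<Sum>k<q. w (N + k)) / real q"
proof -
  define W where "W = (\<Sum>k<q. w (N + k))"
  have blk: "\<And>n. N \<le> n \<Longrightarrow> (\<Sum>k<q. w (n + k)) = W"
  proof -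
    fix n assume "N \<le> n"
    then show "(\<Sum>k<q. w (n + k)) = W"
    proof (induction n rule: dec_induct)
      case base then show ?case by (simp add: W_def)
    next
      case (step n)
      obtain q' where q': "q = Suc q'" using q by (cases q) auto
      have "(\<Sum>k<q. w (Suc n + k)) = (\<Sum>k<q'. w (Suc n + k)) + w (n + q)"
        using q' by simp
      also have "(\<Sum>k<q. w (n + k)) = w n + (\<Sum>k<q'. w (Suc n + k))"
        unfolding q' sum.lessThan_Suc_shift by simp
      moreover have "w (n + q) = w n" using per step by simp
      ultimately show ?case using step.IH by simp
    qed
  qed
  define c where "c n = real_of_int (\<Sum>k<n. w k) - real n * (real_of_int W / real q)" for n
  have "\<And>n. N \<le> n \<Longrightarrow> c (n + q) = c n"
  proof -
    fix n assume n: "N \<le> n"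
    have "\<And>q. (\<Sum>k<n + q. w k) = (\<Sum>k<n. w k) + (\<Sum>k<q. w (n + k))"
    proof -
      fix q show "(\<Sum>k<n + q. w k) = (\<Sum>k<n. w k) + (\<Sum>k<q. w (n + k))"
        by (induction q) simp_all
    qed
    then have "(\<Sum>k<n + q. w k) = (\<Sum>k<n. w k) + W" using blk[OF n] by simp
    then show "c (n + q) = c n" using q by (simp add: c_def field_simps)
  qed
  then obtain B where "\<And>n. \<bar>c n\<bar> \<le> B" using periodic_bounded[OF q] by blast
  then show ?thesis using tendsto_from_bounded[of "\<lambda>n. real_of_int (\<Sum>k<n. w k)" "real_of_int W / real q" B]
    by (simp add: c_def W_def)
qed

context LG begin

lemma periodic_point:
  assumes q: "1 \<le> q" and EP: "\<And>j. j < q \<Longrightarrow> E j \<in> P"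
    and xX: "x \<in> X" and GX: "\<And>j. j \<le> q \<Longrightarrow> Gc E j x \<in> X" and fx: "Gc E q x = x"
  shows "x \<in> XI \<and> periodic_mod1 T \<tau> F x \<and> has_rot T h F x (real_of_int (\<Sum>k<q. p (E k)) / real q)"
proof -
  define W where "W = (\<Sum>k<q. p (E k))"
  have xt: "x \<in> tsp" using xX X_top by blast
  have Fq: "(F ^^ q) x = sh W x"
  proof -
    have "x = sh (- W) ((F ^^ q) x)" using Gc_F[OF xt, of E q] fx by (simp add: W_def)
    then have "sh W x = sh W (sh (- W) ((F ^^ q) x))" by simp
    also have "\<dots> = (F ^^ q) x" using Fpow_top[OF xt] sh_add by simp
    finally show ?thesis by simp
  qed
  have Fkq: "\<And>k. (F ^^ (k * q)) x = sh (int k * W) x"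
  proof -
    fix k show "(F ^^ (k * q)) x = sh (int k * W) x"
    proof (induction k)
      case 0 then show ?case by simp
    next
      case (Suc k)
      have "(F ^^ (Suc k * q)) x = (F ^^ q) ((F ^^ (k * q)) x)" by (simp add: funpow_add)
      also have "\<dots> = sh (int k * W) ((F ^^ q) x)" using Suc Fpow_sh xt by simp
      also have "\<dots> = sh (int (Suc k) * W) x" using Fq sh_add xt by (simp add: algebra_simps)
      finally show ?case .
    qed
  qed
  have Fj: "\<And>j. j \<le> q \<Longrightarrow> (F ^^ j) x = sh (\<Sum>k<j. p (E k)) (Gc E j x)"
  proof -
    fix j assume "j \<le> q"
    have "Gc E j x = sh (- (\<Sum>k<j. p (E k))) ((F ^^ j) x)" using Gc_F[OF xt] .
    then show "(F ^^ j) x = sh (\<Sum>k<j. p (E k)) (Gc E j x)" using Fpow_top[OF xt] sh_add by simp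
  qed
  have Fn: "\<And>n. (F ^^ n) x = sh (int (n div q) * W + (\<Sum>k<n mod q. p (E k))) (Gc E (n mod q) x)"
  proof -
    fix n
    have "(F ^^ n) x = (F ^^ (n mod q + (n div q) * q)) x" by simp
    also have "\<dots> = (F ^^ (n mod q)) ((F ^^ ((n div q) * q)) x)" by (simp only: funpow_add comp_apply)
    finally have "(F ^^ n) x = (F ^^ (n mod q)) ((F ^^ ((n div q) * q)) x)" .
    also have "\<dots> = sh (int (n div q) * W) ((F ^^ (n mod q)) x)" using Fkq Fpow_sh xt by simp
    also have "\<dots> = sh (int (n div q) * W) (sh (\<Sum>k<n mod q. p (E k)) (Gc E (n mod q) x))"
      using Fj[of "n mod q"] q by simp
    also have "\<dots> = sh (int (n div q) * W + (\<Sum>k<n mod q. p (E k))) (Gc E (n mod q) x)"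
      using sh_add Gc_top xt by simp
    finally show "(F ^^ n) x = sh (int (n div q) * W + (\<Sum>k<n mod q. p (E k))) (Gc E (n mod q) x)" .
  qed
  have GXm: "\<And>n. Gc E (n mod q) x \<in> X" using GX q by simp
  have XI: "x \<in> XI" unfolding Xinf_def zsh_set_def using xX Fn GXm by blast
  have per: "periodic_mod1 T \<tau> F x" unfolding periodic_mod1_def using q Fq by blast
  define c where "c n = rr ((F ^^ n) x) - rr x - real n * (real_of_int W / real q)" for n
  have "\<And>n. c (n + q) = c n"
  proof -
    fix n
    have "(F ^^ (n + q)) x = sh W ((F ^^ n) x)" using Fq Fpow_sh xt by (simp add: funpow_add)
    then have "rr ((F ^^ (n + q)) x) = rr ((F ^^ n) x) + real_of_int W" using rr_sh Fpow_top xt by simp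
    then show "c (n + q) = c n" using q by (simp add: c_def field_simps)
  qed
  then obtain B where "\<And>n. \<bar>c n\<bar> \<le> B" using periodic_bounded[OF q, of 0 c] by blast
  then have "(\<lambda>n. (rr ((F ^^ n) x) - rr x) / real n) \<longlonglongrightarrow> real_of_int W / real q"
    using tendsto_from_bounded[of "\<lambda>n. rr ((F ^^ n) x) - rr x" "real_of_int W / real q" B]
    by (simp add: c_def)
  then show ?thesis using XI per by (simp add: has_rot_def W_def)
qed

lemma Rats_div: "real_of_int W / real q \<in> \<rat>"
  by (simp add: Rats_divide)

end

context LG begin

definition vend :: "'a set list set \<Rightarrow> real" where
  "vend \<alpha> = (SOME e. lo (velt \<alpha>) \<le> e \<and> e \<le> hi (velt \<alpha>) \<and> vc \<alpha> = \<phi> (bi (velt \<alpha>)) ` {lo (velt \<alpha>)..e})"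

lemma vend_prop:
  assumes "\<alpha> \<in> vertices T h \<tau> F P"
  shows "velt \<alpha> \<in> P \<and> lo (velt \<alpha>) \<le> vend \<alpha> \<and> vend \<alpha> \<le> hi (velt \<alpha>) \<and> vc \<alpha> = \<phi> (bi (velt \<alpha>)) ` {lo (velt \<alpha>)..vend \<alpha>}"
proof -
  have "velt \<alpha> \<in> P" and ex: "\<exists>e. lo (velt \<alpha>) \<le> e \<and> e \<le> hi (velt \<alpha>) \<and> vc \<alpha> = \<phi> (bi (velt \<alpha>)) ` {lo (velt \<alpha>)..e}"
    using vertex_init[OF assms] by auto
  then show ?thesis using someI_ex[OF ex] unfolding vend_def by blast
qed

lemma chain_vertices:
  fixes \<beta> :: "nat \<Rightarrow> 'a set list set" and q :: nat
  assumes q: "1 \<le> q" and ar: "\<And>j. j < q \<Longrightarrow> arrow T h \<tau> F P (\<beta> j) (\<beta> (Suc j))"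
    and ret: "velt (\<beta> q) = velt (\<beta> 0)" "vend (\<beta> 0) \<le> vend (\<beta> q)"
  shows "\<exists>x\<in>XI. periodic_mod1 T \<tau> F x \<and>
           has_rot T h F x (real_of_int (\<Sum>k<q. p (velt (\<beta> k))) / real q)"
proof -
  have vert: "\<And>j. j \<le> q \<Longrightarrow> \<beta> j \<in> vertices T h \<tau> F P"
  proof -
    fix j assume j: "j \<le> q"
    show "\<beta> j \<in> vertices T h \<tau> F P"
    proof (cases "j < q")
      case True then show ?thesis using ar[OF True] by (simp add: arrow_def)
    next
      case False
      then have "j = Suc (q - 1)" "q - 1 < q" using j q by auto
      then show ?thesis using ar[of "q - 1"] by (simp add: arrow_def)
    qed
  qed
  define E where "E j = velt (\<beta> j)" for j
  define a where "a j = lo (E j)" for j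
  define b where "b j = vend (\<beta> j)" for j
  have VP: "\<And>j. j \<le> q \<Longrightarrow> E j \<in> P \<and> lo (E j) \<le> b j \<and> b j \<le> hi (E j) \<and> vc (\<beta> j) = \<phi> (bi (E j)) ` {a j..b j}"
    using vend_prop vert unfolding E_def a_def b_def by blast
  have cov: "\<And>j. j < q \<Longrightarrow> \<phi> (bi (E (Suc j))) ` {a (Suc j)..b (Suc j)} \<subseteq> G (E j) ` \<phi> (bi (E j)) ` {a j..b j}"
  proof -
    fix j assume j: "j < q"
    have "vc (\<beta> (Suc j)) \<subseteq> G (E j) ` vc (\<beta> j)" using arrow_props[OF ar[OF j]] unfolding E_def by blast
    then show "\<phi> (bi (E (Suc j))) ` {a (Suc j)..b (Suc j)} \<subseteq> G (E j) ` \<phi> (bi (E j)) ` {a j..b j}"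
      using VP[of j] VP[of "Suc j"] j by simp
  qed
  have Eq: "E q = E 0" using ret by (simp add: E_def)
  have ret2: "a q \<le> a 0" "b 0 \<le> b q" using ret Eq by (simp_all add: a_def b_def)
  obtain x where x: "x \<in> \<phi> (bi (E 0)) ` {a 0..b 0}" "\<forall>j\<le>q. Gc E j x \<in> \<phi> (bi (E j)) ` {a j..b j}" "Gc E q x = x"
    using chain_fix[of q E a b] q VP Eq cov ret2 by (auto simp: a_def)
  have sub: "\<And>j. j \<le> q \<Longrightarrow> \<phi> (bi (E j)) ` {a j..b j} \<subseteq> X"
  proof -
    fix j assume j: "j \<le> q"
    have "\<phi> (bi (E j)) ` {a j..b j} \<subseteq> \<phi> (bi (E j)) ` {lo (E j)..hi (E j)}"
      using VP[OF j] by (auto simp: a_def)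
    also have "\<dots> = E j" using P_eq VP[OF j] by metis
    also have "\<dots> \<subseteq> X" using P_X VP[OF j] by blast
    finally show "\<phi> (bi (E j)) ` {a j..b j} \<subseteq> X" .
  qed
  have xX: "x \<in> X" using x(1) sub[of 0] by blast
  have GX: "\<And>j. j \<le> q \<Longrightarrow> Gc E j x \<in> X" using x(2) sub by blast
  have "x \<in> XI \<and> periodic_mod1 T \<tau> F x \<and> has_rot T h F x (real_of_int (\<Sum>k<q. p (E k)) / real q)"
    by (rule periodic_point[OF q _ xX GX x(3)]) (use VP in auto)
  then show ?thesis unfolding E_def by blast
qed

lemma loop_case:
  assumes L: "is_loop T h \<tau> F P \<gamma>"
  shows "\<exists>r. path_rot T h \<tau> F P p (loop_rep \<gamma>) r \<and> r \<in> \<rat> \<and>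
           (\<exists>x\<in>XI. periodic_mod1 T \<tau> F x \<and> has_rot T h F x r)"
proof -
  define k where "k = length \<gamma> - 1"
  have len: "2 \<le> length \<gamma>" and hl: "hd \<gamma> = last \<gamma>"
    and ar0: "\<And>i. Suc i < length \<gamma> \<Longrightarrow> arrow T h \<tau> F P (\<gamma> ! i) (\<gamma> ! Suc i)"
    using L by (auto simp: is_loop_def)
  have k: "1 \<le> k" using len by (simp add: k_def)
  have ar: "\<And>j. j < k \<Longrightarrow> arrow T h \<tau> F P ((!) \<gamma> j) ((!) \<gamma> (Suc j))"
    using ar0 by (simp add: k_def)
  have gk: "\<gamma> ! k = \<gamma> ! 0"
  proof -
    have "\<gamma> \<noteq> []" using len by auto
    then have "hd \<gamma> = \<gamma> ! 0" "last \<gamma> = \<gamma> ! k" by (auto simp: hd_conv_nth last_conv_nth k_def)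
    then show ?thesis using hl by simp
  qed
  obtain x where x: "x \<in> XI" "periodic_mod1 T \<tau> F x"
    "has_rot T h F x (real_of_int (\<Sum>j<k. p (velt (\<gamma> ! j))) / real k)"
    using chain_vertices[of k "(!) \<gamma>"] k ar gk by auto
  let ?w = "\<lambda>n. vweight T h \<tau> F P p (loop_rep \<gamma> n)"
  have wper: "\<And>n. 0 \<le> n \<Longrightarrow> ?w (n + k) = ?w n" by (simp add: loop_rep_def k_def)
  have lim: "(\<lambda>n. real_of_int (\<Sum>j<n. ?w j) / real n) \<longlonglongrightarrow> real_of_int (\<Sum>j<k. ?w (0 + j)) / real k"
    by (rule avg_periodic[of k 0 ?w, OF k wper])
  have e: "(\<Sum>j<k. ?w (0 + j)) = (\<Sum>j<k. p (velt (\<gamma> ! j)))"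
    by (rule sum.cong) (auto simp: loop_rep_def k_def vweight_velt)
  have "path_rot T h \<tau> F P p (loop_rep \<gamma>) (real_of_int (\<Sum>j<k. p (velt (\<gamma> ! j))) / real k)"
    unfolding path_rot_def using lim by (simp only: e)
  moreover have "real_of_int (\<Sum>j<k. p (velt (\<gamma> ! j))) / real k \<in> \<rat>" by (rule Rats_div)
  ultimately show ?thesis using x by blast
qed

end

context LG begin

lemma P_order:
  assumes B: "B \<in> P" and B': "B' \<in> P" and bb: "bi B = bi B'" and ne: "B \<noteq> B'"
  shows "hi B < lo B' \<or> hi B' < lo B"
proof (rule ccontr)
  assume "\<not> (hi B < lo B' \<or> hi B' < lo B)"
  then have ov: "lo B' \<le> hi B" "lo B \<le> hi B'" by auto
  define t where "t = max (lo B) (lo B')"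
  have "t \<in> {lo B..hi B}" "t \<in> {lo B'..hi B'}" using ov P_lohi[OF B] P_lohi[OF B'] by (auto simp: t_def)
  then have "\<phi> (bi B) t \<in> B" "\<phi> (bi B) t \<in> B'" using P_eq[OF B] P_eq[OF B'] bb by auto
  then show False using P_disj[OF B B' ne] by blast
qed

definition firstl :: "'i \<Rightarrow> 'a set" where
  "firstl l = (THE B. B \<in> P \<and> bi B = l \<and> (\<forall>B'\<in>P. bi B' = l \<longrightarrow> lo B \<le> lo B'))"

lemma firstl_eq:
  assumes B: "B \<in> P" "bi B = l" and minB: "\<And>B'. B' \<in> P \<Longrightarrow> bi B' = l \<Longrightarrow> lo B \<le> lo B'"
  shows "firstl l = B"
  unfolding firstl_def
proof (rule the_equality)
  show "B \<in> P \<and> bi B = l \<and> (\<forall>B'\<in>P. bi B' = l \<longrightarrow> lo B \<le> lo B')" using B minB by blast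
next
  fix C assume C: "C \<in> P \<and> bi C = l \<and> (\<forall>B'\<in>P. bi B' = l \<longrightarrow> lo C \<le> lo B')"
  have "lo B \<le> lo C" using minB C by blast
  moreover have "lo C \<le> lo B" using C B by blast
  ultimately have "lo C = lo B" by simp
  show "C = B"
  proof (rule ccontr)
    assume "C \<noteq> B"
    then have "hi C < lo B \<or> hi B < lo C" using P_order C B by metis
    then show False using \<open>lo C = lo B\<close> P_lohi C B(1) by fastforce
  qed
qed

lemma arrow_single:
  assumes v: "\<alpha> \<in> vertices T h \<tau> F P" and B: "B \<in> P" and sub: "B \<subseteq> G (velt \<alpha>) ` vc \<alpha>"
  shows "arrow T h \<tau> F P \<alpha> (cl [B])"
proof -
  obtain w where w: "w \<in> words P" "cy w \<noteq> {}" "\<alpha> = cl w" using vertex_cls[OF v] by blast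
  have lw: "velt \<alpha> = last w" using velt_cls[OF w(1,2)] w(3) by simp
  have cw: "vc \<alpha> = cy w" using vcyl_cls[OF w(1)] w(3) by simp
  have wB: "w @ [B] \<in> words P" using w B by (auto simp: words_def)
  have cwB: "cy (w @ [B]) = B" using cyl_snoc[OF w(1) B] sub lw cw by auto
  have Bne: "B \<noteq> {}" using P_eq[OF B] P_lohi[OF B] by auto
  have sB: "[B] \<in> words P" using B by (simp add: words_def)
  have "simrel T h \<tau> F (w @ [B]) [B]"
    unfolding simrel_def using cwB cyl_single[OF B] by (intro exI[of _ 0]) auto
  then have "sq (w @ [B]) [B]" unfolding simeq_def using wB sB by blast
  then have e: "cl (w @ [B]) = cl [B]" by (rule simeq_cls)
  have "cl (w @ [B]) \<in> vertices T h \<tau> F P" using wB cwB Bne unfolding vertices_def by blast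
  then show ?thesis unfolding arrow_def using v w wB B e by (metis words_def)
qed

lemma J_step:
  assumes ar: "arrow T h \<tau> F P \<alpha> \<beta>" and noB: "\<not> (\<exists>B\<in>P. arrow T h \<tau> F P \<alpha> (cl [B]))"
  shows "velt \<beta> = firstl (lab (velt \<alpha>))"
proof -
  have v: "\<alpha> \<in> vertices T h \<tau> F P" using ar by (simp add: arrow_def)
  note AP = arrow_props[OF ar]
  let ?A = "velt \<alpha>" and ?E = "velt \<beta>" and ?l = "lab (velt \<alpha>)"
  have A: "?A \<in> P" and E: "?E \<in> P" using AP by auto
  have vp: "lo ?A \<le> vend \<alpha>" "vend \<alpha> \<le> hi ?A" "vc \<alpha> = \<phi> (bi ?A) ` {lo ?A..vend \<alpha>}"
    using vend_prop[OF v] by auto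
  obtain M where M: "0 \<le> M" "M \<le> 1" "G ?A ` vc \<alpha> \<inter> br ?l = \<phi> ?l ` {0..M}"
    using img_seg[OF A vp(1,2)] vp(3) by auto
  have hiB: "\<And>B. B \<in> P \<Longrightarrow> bi B = ?l \<Longrightarrow> M < hi B"
  proof (rule ccontr)
    fix B assume B: "B \<in> P" "bi B = ?l" and "\<not> M < hi B"
    then have "{lo B..hi B} \<subseteq> {0..M}" using P_lohi[OF B(1)] by auto
    then have "B \<subseteq> \<phi> ?l ` {0..M}" using P_eq[OF B(1)] B(2) by (metis image_mono)
    then have "B \<subseteq> G ?A ` vc \<alpha>" using M by blast
    then have "arrow T h \<tau> F P \<alpha> (cl [B])" using arrow_single[OF v B(1)] by blast
    then show False using noB B by blast
  qed
  have vcE: "vc \<beta> = ?E \<inter> G ?A ` vc \<alpha>" "vc \<beta> \<noteq> {}" using AP by auto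
  have CA: "vc \<alpha> \<subseteq> ?A" using AP by blast
  have bE: "bi ?E = ?l" using branch_match[OF A E _ CA] vcE by auto
  have "?E \<inter> \<phi> ?l ` {0..M} \<noteq> {}"
  proof -
    have "?E \<subseteq> br ?l" using P_br[OF E] bE by simp
    then show ?thesis using vcE M by blast
  qed
  then have loE: "lo ?E \<le> M" using P_Int_root[OF E M(1,2)] bE by (auto split: if_splits)
  have "firstl ?l = ?E"
  proof (rule firstl_eq[OF E bE])
    fix B' assume B': "B' \<in> P" "bi B' = ?l"
    show "lo ?E \<le> lo B'"
    proof (cases "B' = ?E")
      case True then show ?thesis by simp
    next
      case False
      then have "hi B' < lo ?E \<or> hi ?E < lo B'" using P_order[OF B'(1) E] B' bE by metis
      moreover have "M < hi B'" using hiB B' by blast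
      ultimately show ?thesis using loE P_lohi[OF E] by linarith
    qed
  qed
  then show ?thesis by simp
qed

end

context LG begin

lemma J_periodic:
  assumes path: "inf_path T h \<tau> F P \<alpha>"
    and N: "\<And>n. N \<le> n \<Longrightarrow> \<not> (\<exists>B\<in>P. arrow T h \<tau> F P (\<alpha> n) (cl [B]))"
  shows "\<exists>N' q. 1 \<le> q \<and> (\<forall>n\<ge>N'. velt (\<alpha> (n + q)) = velt (\<alpha> n))"
proof -
  define E where "E n = velt (\<alpha> n)" for n
  have ar: "\<And>n. arrow T h \<tau> F P (\<alpha> n) (\<alpha> (Suc n))" using path by (simp add: inf_path_def)
  have EP: "\<And>n. E n \<in> P" using arrow_props[OF ar] by (simp add: E_def)
  have step: "\<And>n. N \<le> n \<Longrightarrow> E (Suc n) = firstl (lab (E n))"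
    using J_step[OF ar N] by (simp add: E_def)
  define f where "f m = E (N + m)" for m
  have "\<not> inj_on f {0..card P}"
  proof
    assume inj: "inj_on f {0..card P}"
    have "f ` {0..card P} \<subseteq> P" using EP by (auto simp: f_def)
    then have "card (f ` {0..card P}) \<le> card P" using card_mono[OF P_fin] by blast
    moreover have "card (f ` {0..card P}) = card {0..card P}" using card_image[OF inj] .
    ultimately show False by simp
  qed
  then obtain m1 m2 where m: "m1 \<in> {0..card P}" "m2 \<in> {0..card P}" "m1 \<noteq> m2" "f m1 = f m2"
    unfolding inj_on_def by blast
  obtain i1 i2 where ii: "i1 < i2" "E (N + i1) = E (N + i2)"
  proof (cases "m1 < m2")
    case True then show ?thesis using that m by (auto simp: f_def)
  next
    case False then have "m2 < m1" using m by simp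
    then show ?thesis using that m by (auto simp: f_def)
  qed
  define q where "q = i2 - i1"
  have q: "1 \<le> q" using ii by (simp add: q_def)
  have per: "\<And>i. E (N + i1 + i + q) = E (N + i1 + i)"
  proof -
    fix i show "E (N + i1 + i + q) = E (N + i1 + i)"
    proof (induction i)
      case 0 then show ?case using ii by (simp add: q_def)
    next
      case (Suc i)
      have "E (N + i1 + Suc i + q) = firstl (lab (E (N + i1 + i + q)))"
        using step[of "N + i1 + i + q"] by simp
      also have "\<dots> = firstl (lab (E (N + i1 + i)))" using Suc by simp
      also have "\<dots> = E (N + i1 + Suc i)" using step[of "N + i1 + i"] by simp
      finally show ?case .
    qed
  qed
  have "\<forall>n\<ge>N + i1. velt (\<alpha> (n + q)) = velt (\<alpha> n)"
  proof (intro allI impI)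
    fix n assume "N + i1 \<le> n"
    then obtain i where "n = N + i1 + i" by (metis le_add_diff_inverse)
    then show "velt (\<alpha> (n + q)) = velt (\<alpha> n)" using per by (simp add: E_def)
  qed
  then show ?thesis using q by blast
qed

lemma J_case:
  assumes J: "\<alpha> \<in> Jpaths T h \<tau> F P"
  shows "\<exists>r. path_rot T h \<tau> F P p \<alpha> r \<and> r \<in> \<rat> \<and>
           (\<exists>x\<in>XI. periodic_mod1 T \<tau> F x \<and> has_rot T h F x r)"
proof -
  have path: "inf_path T h \<tau> F P \<alpha>" using J by (simp add: Jpaths_def)
  obtain N where N: "\<And>n. N \<le> n \<Longrightarrow> \<not> (\<exists>B\<in>P. arrow T h \<tau> F P (\<alpha> n) (cl [B]))"
    using J by (auto simp: Jpaths_def)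
  obtain N' q where q: "1 \<le> q" and per: "\<And>n. N' \<le> n \<Longrightarrow> velt (\<alpha> (n + q)) = velt (\<alpha> n)"
    using J_periodic[OF path N] by blast
  define E where "E n = velt (\<alpha> n)" for n
  have ar: "\<And>n. arrow T h \<tau> F P (\<alpha> n) (\<alpha> (Suc n))" using path by (simp add: inf_path_def)
  have vert: "\<And>n. \<alpha> n \<in> vertices T h \<tau> F P" using ar by (simp add: arrow_def)
  have VP: "\<And>n. E n \<in> P \<and> lo (E n) \<le> vend (\<alpha> n) \<and> vend (\<alpha> n) \<le> hi (E n) \<and> vc (\<alpha> n) = \<phi> (bi (E n)) ` {lo (E n)..vend (\<alpha> n)}"
    using vend_prop[OF vert] by (simp add: E_def)
  have Eper: "\<And>n k. N' \<le> n \<Longrightarrow> E (n + k * q) = E n"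
  proof -
    fix n k assume n: "N' \<le> n"
    show "E (n + k * q) = E n"
    proof (induction k)
      case 0 then show ?case by simp
    next
      case (Suc k)
      have "E (n + Suc k * q) = E (n + k * q + q)" by (simp add: algebra_simps)
      also have "\<dots> = E (n + k * q)" using per[of "n + k * q"] n by (simp add: E_def)
      finally show ?case using Suc by simp
    qed
  qed
  define E' where "E' j = E (N' + j)" for j
  define a where "a j = lo (E' j)" for j
  define ee where "ee j k = vend (\<alpha> (N' + j + k * q))" for j k
  define b where "b j = Inf (range (ee j))" for j
  have EE: "\<And>j k. E (N' + j + k * q) = E' j" using Eper unfolding E'_def by simp
  have eeb: "\<And>j k. lo (E' j) \<le> ee j k \<and> ee j k \<le> hi (E' j)"
    using VP EE unfolding ee_def by metis
  have bdd: "\<And>j. bdd_below (range (ee j))" using eeb by (auto simp: bdd_below_def)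
  have blo: "\<And>j. lo (E' j) \<le> b j" unfolding b_def using eeb by (auto intro: cInf_greatest)
  have ble: "\<And>j k. b j \<le> ee j k" unfolding b_def using bdd by (auto intro: cInf_lower)
  have bhi: "\<And>j. b j \<le> hi (E' j)" using ble[of _ 0] eeb by (meson order_trans)
  have vcE: "\<And>j k. vc (\<alpha> (N' + j + k * q)) = \<phi> (bi (E' j)) ` {lo (E' j)..ee j k}"
    using VP EE unfolding ee_def by metis
  have cov: "\<And>j. j < q \<Longrightarrow> \<phi> (bi (E' (Suc j))) ` {a (Suc j)..b (Suc j)} \<subseteq> G (E' j) ` \<phi> (bi (E' j)) ` {a j..b j}"
  proof
    fix j y assume j: "j < q" and y: "y \<in> \<phi> (bi (E' (Suc j))) ` {a (Suc j)..b (Suc j)}"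
    have A: "E' j \<in> P" using VP by (simp add: E'_def)
    interpret C: covsetup "lo (E' j)" "hi (E' j)" "fA (E' j)" "gA (E' j)" "\<phi> (lab (E' j))" "br (lab (E' j))"
      by (rule covP[OF A])
    have yk: "\<And>k. y \<in> gA (E' j) ` {lo (E' j)..ee j k}"
    proof -
      fix k
      have "y \<in> \<phi> (bi (E' (Suc j))) ` {lo (E' (Suc j))..ee (Suc j) k}"
        using y ble[of "Suc j" k] by (auto simp: a_def)
      moreover have "vc (\<alpha> (N' + Suc j + k * q)) = \<phi> (bi (E' (Suc j))) ` {lo (E' (Suc j))..ee (Suc j) k}"
        by (rule vcE)
      ultimately have "y \<in> vc (\<alpha> (N' + Suc j + k * q))" by simp
      then have "y \<in> vc (\<alpha> (Suc (N' + j + k * q)))" by simp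
      moreover have "vc (\<alpha> (Suc (N' + j + k * q))) \<subseteq> G (E (N' + j + k * q)) ` vc (\<alpha> (N' + j + k * q))"
        using arrow_props[OF ar[of "N' + j + k * q"]] by (auto simp: E_def)
      ultimately have "y \<in> G (E' j) ` vc (\<alpha> (N' + j + k * q))" unfolding EE by blast
      then show "y \<in> gA (E' j) ` {lo (E' j)..ee j k}" using vcE G_seg_img[OF A] by simp
    qed
    have yX: "y \<in> X"
    proof -
      obtain xx where xx: "xx \<in> {a (Suc j)..b (Suc j)}" "y = \<phi> (bi (E' (Suc j))) xx" using y by blast
      then have "xx \<in> {lo (E' (Suc j))..hi (E' (Suc j))}" using bhi[of "Suc j"] by (auto simp: a_def)
      then have "y \<in> \<phi> (bi (E' (Suc j))) ` {lo (E' (Suc j))..hi (E' (Suc j))}"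
        using xx(2) by blast
      also have "\<dots> = E' (Suc j)" using P_eq VP by (metis E'_def)
      finally show ?thesis using P_X VP by (metis E'_def subsetD)
    qed
    obtain t0 where t0: "t0 \<in> {lo (E' j)..ee j 0}" "gA (E' j) t0 = y" using yk[of 0] by blast
    have t0r: "t0 \<in> {lo (E' j)..hi (E' j)}" using t0 eeb by (meson atLeastAtMost_iff order_trans)
    have "y \<in> br (lab (E' j)) \<union> IT" using gA_img[OF A t0r] t0 by simp
    then have ybr: "y \<in> br (lab (E' j))" using yX X_IT by blast
    then obtain d where d: "d \<in> {0..1}" "y = \<phi> (lab (E' j)) d" by blast
    define Z where "Z = {t \<in> {lo (E' j)..hi (E' j)}. gA (E' j) t = y}"
    have Zc: "closed Z" unfolding Z_def d(2) by (rule C.closed_psi) (use d in auto)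
    have Zn: "t0 \<in> Z" using t0 t0r by (simp add: Z_def)
    define ts where "ts = Inf Z"
    have tsZ: "ts \<in> Z" unfolding ts_def
      by (rule closed_contains_Inf) (use Zn Zc in \<open>auto simp: Z_def bdd_below_def\<close>)
    have tslo: "\<And>t. t \<in> Z \<Longrightarrow> ts \<le> t" unfolding ts_def
      by (rule cInf_lower) (auto simp: Z_def bdd_below_def)
    have "\<And>k. ts \<le> ee j k"
    proof -
      fix k
      obtain tk where tk: "tk \<in> {lo (E' j)..ee j k}" "gA (E' j) tk = y" using yk[of k] by blast
      then have "tk \<in> Z" using eeb[of j k] by (auto simp: Z_def)
      then show "ts \<le> ee j k" using tslo tk by (meson atLeastAtMost_iff order_trans)
    qed
    then have "ts \<le> b j" unfolding b_def by (auto intro: cInf_greatest)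
    then have "ts \<in> {a j..b j}" using tsZ by (auto simp: Z_def a_def)
    moreover have "gA (E' j) ts = y" using tsZ by (simp add: Z_def)
    ultimately show "y \<in> G (E' j) ` \<phi> (bi (E' j)) ` {a j..b j}" using G_seg_img[OF A] by blast
  qed
  have Eq: "E' q = E' 0" using EE[of 0 1] by (simp add: E'_def)
  have ret: "a q \<le> a 0" "b 0 \<le> b q"
  proof -
    show "a q \<le> a 0" using Eq by (simp add: a_def)
    have "\<And>k. ee q k = ee 0 (Suc k)" by (simp add: ee_def algebra_simps)
    then have "\<And>k. b 0 \<le> ee q k" using ble by simp
    then show "b 0 \<le> b q" unfolding b_def[of q] by (auto intro: cInf_greatest)
  qed
  have E'P: "\<And>j. E' j \<in> P" using VP by (simp add: E'_def)
  obtain x where x: "x \<in> \<phi> (bi (E' 0)) ` {a 0..b 0}" "\<forall>j\<le>q. Gc E' j x \<in> \<phi> (bi (E' j)) ` {a j..b j}" "Gc E' q x = x"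
    using chain_fix[of q E' a b] q E'P Eq blo bhi cov ret by (auto simp: a_def)
  have sub: "\<And>j. \<phi> (bi (E' j)) ` {a j..b j} \<subseteq> X"
  proof -
    fix j
    have "{a j..b j} \<subseteq> {lo (E' j)..hi (E' j)}" using bhi[of j] by (auto simp: a_def)
    then have "\<phi> (bi (E' j)) ` {a j..b j} \<subseteq> \<phi> (bi (E' j)) ` {lo (E' j)..hi (E' j)}"
      by (rule image_mono)
    also have "\<dots> = E' j" using P_eq E'P by metis
    also have "\<dots> \<subseteq> X" using P_X E'P by blast
    finally show "\<phi> (bi (E' j)) ` {a j..b j} \<subseteq> X" .
  qed
  have xX: "x \<in> X" using x(1) sub[of 0] by blast
  have GX: "\<And>j. j \<le> q \<Longrightarrow> Gc E' j x \<in> X" using x(2) sub by blast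
  have xr: "x \<in> XI \<and> periodic_mod1 T \<tau> F x \<and> has_rot T h F x (real_of_int (\<Sum>k<q. p (E' k)) / real q)"
    by (rule periodic_point[OF q _ xX GX x(3)]) (use E'P in auto)
  let ?w = "\<lambda>n. vweight T h \<tau> F P p (\<alpha> n)"
  have wper: "\<And>n. N' \<le> n \<Longrightarrow> ?w (n + q) = ?w n" using per by (simp add: vweight_velt)
  have lim: "(\<lambda>n. real_of_int (\<Sum>k<n. ?w k) / real n) \<longlonglongrightarrow> real_of_int (\<Sum>k<q. ?w (N' + k)) / real q"
    by (rule avg_periodic[of q N' ?w, OF q wper])
  have e: "(\<Sum>k<q. ?w (N' + k)) = (\<Sum>k<q. p (E' k))"
    by (rule sum.cong) (auto simp: vweight_velt E'_def E_def)
  have "path_rot T h \<tau> F P p \<alpha> (real_of_int (\<Sum>k<q. p (E' k)) / real q)"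
    unfolding path_rot_def using lim by (simp only: e)
  moreover have "real_of_int (\<Sum>k<q. p (E' k)) / real q \<in> \<rat>" by (rule Rats_div)
  ultimately show ?thesis using xr by blast
qed

end

theorem mainTheorem3:
  fixes T :: "'a topology" and h :: "real \<Rightarrow> 'a" and \<tau> F :: "'a \<Rightarrow> 'a"
    and \<Lambda> :: "'i set" and \<phi> :: "'i \<Rightarrow> real \<Rightarrow> 'a"
    and P :: "'a set set" and lab :: "'a set \<Rightarrow> 'i" and p :: "'a set \<Rightarrow> int"
  assumes "lifted_graph T h \<tau>"
    and "continuous_map T T F"
    and "degree_one T \<tau> F"
    and "sun_like T h F \<Lambda> \<phi>"
    and "basic_partition T h \<tau> F \<Lambda> \<phi> P lab p"
  shows "Rot T h F (Xinf T h \<tau> F) = Rot_graph T h \<tau> F P p \<and>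
    (\<forall>\<gamma>. is_loop T h \<tau> F P \<gamma> \<longrightarrow>
           (\<exists>r. path_rot T h \<tau> F P p (loop_rep \<gamma>) r \<and> r \<in> \<rat> \<and>
                (\<exists>x\<in>Xinf T h \<tau> F. periodic_mod1 T \<tau> F x \<and> has_rot T h F x r))) \<and>
    (\<forall>\<alpha>\<in>Jpaths T h \<tau> F P.
           (\<exists>r. path_rot T h \<tau> F P p \<alpha> r \<and> r \<in> \<rat> \<and>
                (\<exists>x\<in>Xinf T h \<tau> F. periodic_mod1 T \<tau> F x \<and> has_rot T h F x r)))"
proof -
  interpret L: LG T h \<tau> F \<Lambda> \<phi> P lab p
    using assms by (rule LG.intro)
  have "Rot T h F (Xinf T h \<tau> F) = Rot_graph T h \<tau> F P p"
  proof
    show "Rot T h F (Xinf T h \<tau> F) \<subseteq> Rot_graph T h \<tau> F P p"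
      using L.rot_Xinf_sub unfolding Rot_def by blast
    show "Rot_graph T h \<tau> F P p \<subseteq> Rot T h F (Xinf T h \<tau> F)"
      using L.rot_graph_sub unfolding Rot_graph_def by blast
  qed
  moreover have "\<forall>\<gamma>. is_loop T h \<tau> F P \<gamma> \<longrightarrow>
           (\<exists>r. path_rot T h \<tau> F P p (loop_rep \<gamma>) r \<and> r \<in> \<rat> \<and>
                (\<exists>x\<in>Xinf T h \<tau> F. periodic_mod1 T \<tau> F x \<and> has_rot T h F x r))"
    using L.loop_case by blast
  moreover have "\<forall>\<alpha>\<in>Jpaths T h \<tau> F P.
           (\<exists>r. path_rot T h \<tau> F P p \<alpha> r \<and> r \<in> \<rat> \<and>
                (\<exists>x\<in>Xinf T h \<tau> F. periodic_mod1 T \<tau> F x \<and> has_rot T h F x r))"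
    using L.J_case by blast
  ultimately show ?thesis by blast
qed

end
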